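(* Let $P:\mathcal C^{op}\to\mathbf{InfSL}$ be an arithmetic doctrine with comprehensive diagonals. Then $P$ satisfies the Countable Axiom of Choice $(\mathrm{AC}_{\mathbf N})$ if and only if its elementary quotient completion $\overline P$ satisfies $(\mathrm{AC}_{\mathbf N})$.
   Context: A doctrine $P$ is arithmetic if it is a weak hyperdoctrine (elementary doctrine over a weakly cartesian closed base, with Heyting fibres, Heyting reindexing, and left and right adjoints to reindexing along product projections satisfying Beck–Chevalley) and $\mathcal C$ has a parameterized natural number object $(\mathbf N,0,s)$ satisfying induction in $P$ (for $\phi\in P(A\times\mathbf N)$, $a\vdash\phi(a,0)$ and $\phi(a,m)\vdash\phi(a,s(m))$ imply $a,n\vdash\phi(a,n)$). Comprehensive diagonals: $f,g:X\to Y$ are equal whenever $\top\vdash f(x)=_Yg(x)$. The Axiom of Choice holds on $A$ if for every $B$ and $R\in P(A\times B)$: $\forall a.\exists b.R(a,b)\vdash\exists f:W.\forall a.R(a,ev(f,a))$ for a weak evaluation $ev:W\times A\to B$; $(\mathrm{AC}_{\mathbf N})$ is the Axiom of Choice on the natural number object (in $\mathcal Q_P$ this is $(\mathbf N,\delta_{\mathbf N})$). The elementary quotient completion $\overline P:\mathcal Q_P^{op}\to\mathbf{InfSL}$ has objects $(A,\rho)$ with $\rho$ a $P$-equivalence relation, arrows equivalence classes of relation-preserving arrows of $\mathcal C$, and $\overline P(A,\rho)=\{\alpha\in P(A)\mid\alpha(a)\wedge\rho(a,a')\vdash\alpha(a')\}$. *)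

theory Defs
  imports Main
begin

section \<open>Doctrines over categories with chosen finite products\<close>

text \<open>A (primary) doctrine P over a base category C with chosen finite products.
  Objects of C have type 'o, arrows type 'm, elements of the fibres type 'p.
  d_cmp g f is the composite g after f; d_pr f g is the pairing of f and g;
  d_rx f is reindexing P(f) along f; d_le A is the order of the fibre P(A);
  d_tp A and d_mt A are top and binary meet of P(A).\<close>

record ('o, 'm, 'p) doctrine =
  d_ob  :: "'o set"
  d_hom :: "'o \<Rightarrow> 'o \<Rightarrow> 'm set"
  d_cmp :: "'m \<Rightarrow> 'm \<Rightarrow> 'm"
  d_idt :: "'o \<Rightarrow> 'm"
  d_trm :: "'o"
  d_prd :: "'o \<Rightarrow> 'o \<Rightarrow> 'o"
  d_pi1 :: "'o \<Rightarrow> 'o \<Rightarrow> 'm"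
  d_pi2 :: "'o \<Rightarrow> 'o \<Rightarrow> 'm"
  d_pr  :: "'m \<Rightarrow> 'm \<Rightarrow> 'm"
  d_fib :: "'o \<Rightarrow> 'p set"
  d_le  :: "'o \<Rightarrow> 'p \<Rightarrow> 'p \<Rightarrow> bool"
  d_tp  :: "'o \<Rightarrow> 'p"
  d_mt  :: "'o \<Rightarrow> 'p \<Rightarrow> 'p \<Rightarrow> 'p"
  d_rx  :: "'m \<Rightarrow> 'p \<Rightarrow> 'p"

definition bang :: "('o,'m,'p) doctrine \<Rightarrow> 'o \<Rightarrow> 'm" where
  "bang D A = (SOME t. t \<in> d_hom D A (d_trm D))"

definition times :: "('o,'m,'p) doctrine \<Rightarrow> 'o \<Rightarrow> 'o \<Rightarrow> 'm \<Rightarrow> 'm \<Rightarrow> 'm" where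
  "times D X Y h k = d_pr D (d_cmp D h (d_pi1 D X Y)) (d_cmp D k (d_pi2 D X Y))"

definition diag :: "('o,'m,'p) doctrine \<Rightarrow> 'o \<Rightarrow> 'm" where
  "diag D A = d_pr D (d_idt D A) (d_idt D A)"

definition category :: "('o,'m,'p) doctrine \<Rightarrow> bool" where
  "category D \<longleftrightarrow>
     (\<forall>A\<in>d_ob D. d_idt D A \<in> d_hom D A A) \<and>
     (\<forall>A\<in>d_ob D. \<forall>B\<in>d_ob D. \<forall>C\<in>d_ob D. \<forall>f\<in>d_hom D A B. \<forall>g\<in>d_hom D B C.
        d_cmp D g f \<in> d_hom D A C) \<and>
     (\<forall>A\<in>d_ob D. \<forall>B\<in>d_ob D. \<forall>f\<in>d_hom D A B.
        d_cmp D f (d_idt D A) = f \<and> d_cmp D (d_idt D B) f = f) \<and>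
     (\<forall>A\<in>d_ob D. \<forall>B\<in>d_ob D. \<forall>C\<in>d_ob D. \<forall>E\<in>d_ob D.
        \<forall>f\<in>d_hom D A B. \<forall>g\<in>d_hom D B C. \<forall>h\<in>d_hom D C E.
        d_cmp D h (d_cmp D g f) = d_cmp D (d_cmp D h g) f)"

definition cartesian :: "('o,'m,'p) doctrine \<Rightarrow> bool" where
  "cartesian D \<longleftrightarrow>
     d_trm D \<in> d_ob D \<and>
     (\<forall>A\<in>d_ob D. \<exists>!t. t \<in> d_hom D A (d_trm D)) \<and>
     (\<forall>A\<in>d_ob D. \<forall>B\<in>d_ob D.
        d_prd D A B \<in> d_ob D \<and>
        d_pi1 D A B \<in> d_hom D (d_prd D A B) A \<and>
        d_pi2 D A B \<in> d_hom D (d_prd D A B) B \<and>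
        (\<forall>X\<in>d_ob D. \<forall>f\<in>d_hom D X A. \<forall>g\<in>d_hom D X B.
           d_pr D f g \<in> d_hom D X (d_prd D A B) \<and>
           d_cmp D (d_pi1 D A B) (d_pr D f g) = f \<and>
           d_cmp D (d_pi2 D A B) (d_pr D f g) = g \<and>
           (\<forall>h\<in>d_hom D X (d_prd D A B).
              d_cmp D (d_pi1 D A B) h = f \<and> d_cmp D (d_pi2 D A B) h = g \<longrightarrow> h = d_pr D f g)))"

definition weak_eval :: "('o,'m,'p) doctrine \<Rightarrow> 'o \<Rightarrow> 'o \<Rightarrow> 'o \<Rightarrow> 'm \<Rightarrow> bool" where
  "weak_eval D W A B ev \<longleftrightarrow>
     W \<in> d_ob D \<and> ev \<in> d_hom D (d_prd D W A) B \<and>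
     (\<forall>X\<in>d_ob D. \<forall>g\<in>d_hom D (d_prd D X A) B.
        \<exists>h\<in>d_hom D X W. d_cmp D ev (times D X A h (d_idt D A)) = g)"

definition weakly_cc :: "('o,'m,'p) doctrine \<Rightarrow> bool" where
  "weakly_cc D \<longleftrightarrow> (\<forall>A\<in>d_ob D. \<forall>B\<in>d_ob D. \<exists>W ev. weak_eval D W A B ev)"

definition is_meet :: "('o,'m,'p) doctrine \<Rightarrow> 'o \<Rightarrow> 'p \<Rightarrow> 'p \<Rightarrow> 'p \<Rightarrow> bool" where
  "is_meet D A x y m \<longleftrightarrow> m \<in> d_fib D A \<and> d_le D A m x \<and> d_le D A m y \<and>
     (\<forall>z\<in>d_fib D A. d_le D A z x \<and> d_le D A z y \<longrightarrow> d_le D A z m)"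

definition is_join :: "('o,'m,'p) doctrine \<Rightarrow> 'o \<Rightarrow> 'p \<Rightarrow> 'p \<Rightarrow> 'p \<Rightarrow> bool" where
  "is_join D A x y j \<longleftrightarrow> j \<in> d_fib D A \<and> d_le D A x j \<and> d_le D A y j \<and>
     (\<forall>z\<in>d_fib D A. d_le D A x z \<and> d_le D A y z \<longrightarrow> d_le D A j z)"

definition is_bot :: "('o,'m,'p) doctrine \<Rightarrow> 'o \<Rightarrow> 'p \<Rightarrow> bool" where
  "is_bot D A b \<longleftrightarrow> b \<in> d_fib D A \<and> (\<forall>z\<in>d_fib D A. d_le D A b z)"

definition is_imp :: "('o,'m,'p) doctrine \<Rightarrow> 'o \<Rightarrow> 'p \<Rightarrow> 'p \<Rightarrow> 'p \<Rightarrow> bool" where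
  "is_imp D A x y i \<longleftrightarrow> i \<in> d_fib D A \<and>
     (\<forall>z\<in>d_fib D A. d_le D A z i \<longleftrightarrow> d_le D A (d_mt D A z x) y)"

definition primary_doctrine :: "('o,'m,'p) doctrine \<Rightarrow> bool" where
  "primary_doctrine D \<longleftrightarrow>
     (\<forall>A\<in>d_ob D.
        (\<forall>x\<in>d_fib D A. d_le D A x x) \<and>
        (\<forall>x\<in>d_fib D A. \<forall>y\<in>d_fib D A. \<forall>z\<in>d_fib D A.
            d_le D A x y \<and> d_le D A y z \<longrightarrow> d_le D A x z) \<and>
        (\<forall>x\<in>d_fib D A. \<forall>y\<in>d_fib D A. d_le D A x y \<and> d_le D A y x \<longrightarrow> x = y) \<and>
        d_tp D A \<in> d_fib D A \<and> (\<forall>x\<in>d_fib D A. d_le D A x (d_tp D A)) \<and>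
        (\<forall>x\<in>d_fib D A. \<forall>y\<in>d_fib D A. is_meet D A x y (d_mt D A x y))) \<and>
     (\<forall>A\<in>d_ob D. \<forall>B\<in>d_ob D. \<forall>f\<in>d_hom D A B.
        (\<forall>\<phi>\<in>d_fib D B. d_rx D f \<phi> \<in> d_fib D A) \<and>
        (\<forall>\<phi>\<in>d_fib D B. \<forall>\<psi>\<in>d_fib D B. d_le D B \<phi> \<psi> \<longrightarrow> d_le D A (d_rx D f \<phi>) (d_rx D f \<psi>)) \<and>
        d_rx D f (d_tp D B) = d_tp D A \<and>
        (\<forall>\<phi>\<in>d_fib D B. \<forall>\<psi>\<in>d_fib D B. d_rx D f (d_mt D B \<phi> \<psi>) = d_mt D A (d_rx D f \<phi>) (d_rx D f \<psi>))) \<and>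
     (\<forall>A\<in>d_ob D. \<forall>\<phi>\<in>d_fib D A. d_rx D (d_idt D A) \<phi> = \<phi>) \<and>
     (\<forall>A\<in>d_ob D. \<forall>B\<in>d_ob D. \<forall>C\<in>d_ob D. \<forall>f\<in>d_hom D A B. \<forall>g\<in>d_hom D B C. \<forall>\<phi>\<in>d_fib D C.
        d_rx D (d_cmp D g f) \<phi> = d_rx D f (d_rx D g \<phi>))"

definition heyting :: "('o,'m,'p) doctrine \<Rightarrow> bool" where
  "heyting D \<longleftrightarrow>
     (\<forall>A\<in>d_ob D. (\<exists>b. is_bot D A b) \<and>
        (\<forall>x\<in>d_fib D A. \<forall>y\<in>d_fib D A. (\<exists>j. is_join D A x y j) \<and> (\<exists>i. is_imp D A x y i))) \<and>
     (\<forall>A\<in>d_ob D. \<forall>B\<in>d_ob D. \<forall>f\<in>d_hom D A B.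
        (\<forall>b. is_bot D B b \<longrightarrow> is_bot D A (d_rx D f b)) \<and>
        (\<forall>x\<in>d_fib D B. \<forall>y\<in>d_fib D B. \<forall>j. is_join D B x y j \<longrightarrow>
            is_join D A (d_rx D f x) (d_rx D f y) (d_rx D f j)) \<and>
        (\<forall>x\<in>d_fib D B. \<forall>y\<in>d_fib D B. \<forall>i. is_imp D B x y i \<longrightarrow>
            is_imp D A (d_rx D f x) (d_rx D f y) (d_rx D f i)))"

definition is_ex :: "('o,'m,'p) doctrine \<Rightarrow> 'o \<Rightarrow> 'o \<Rightarrow> 'm \<Rightarrow> 'p \<Rightarrow> 'p \<Rightarrow> bool" where
  "is_ex D X Y f \<phi> e \<longleftrightarrow> e \<in> d_fib D Y \<and> d_le D X \<phi> (d_rx D f e) \<and>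
     (\<forall>\<psi>\<in>d_fib D Y. d_le D X \<phi> (d_rx D f \<psi>) \<longrightarrow> d_le D Y e \<psi>)"

definition is_all :: "('o,'m,'p) doctrine \<Rightarrow> 'o \<Rightarrow> 'o \<Rightarrow> 'm \<Rightarrow> 'p \<Rightarrow> 'p \<Rightarrow> bool" where
  "is_all D X Y f \<phi> e \<longleftrightarrow> e \<in> d_fib D Y \<and> d_le D X (d_rx D f e) \<phi> \<and>
     (\<forall>\<psi>\<in>d_fib D Y. d_le D X (d_rx D f \<psi>) \<phi> \<longrightarrow> d_le D Y \<psi> e)"

definition quantifiers :: "('o,'m,'p) doctrine \<Rightarrow> bool" where
  "quantifiers D \<longleftrightarrow>
     (\<forall>A\<in>d_ob D. \<forall>B\<in>d_ob D. \<forall>\<phi>\<in>d_fib D (d_prd D A B).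
        (\<exists>e. is_ex D (d_prd D A B) A (d_pi1 D A B) \<phi> e) \<and>
        (\<exists>e. is_all D (d_prd D A B) A (d_pi1 D A B) \<phi> e) \<and>
        (\<exists>e. is_ex D (d_prd D A B) B (d_pi2 D A B) \<phi> e) \<and>
        (\<exists>e. is_all D (d_prd D A B) B (d_pi2 D A B) \<phi> e))"

definition beck_chevalley :: "('o,'m,'p) doctrine \<Rightarrow> bool" where
  "beck_chevalley D \<longleftrightarrow>
     (\<forall>A\<in>d_ob D. \<forall>B\<in>d_ob D. \<forall>X\<in>d_ob D. \<forall>\<phi>\<in>d_fib D (d_prd D A B). \<forall>e.
        (\<forall>f\<in>d_hom D X A.
          (is_ex D (d_prd D A B) A (d_pi1 D A B) \<phi> e \<longrightarrow>
             is_ex D (d_prd D X B) X (d_pi1 D X B) (d_rx D (times D X B f (d_idt D B)) \<phi>) (d_rx D f e)) \<and>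
          (is_all D (d_prd D A B) A (d_pi1 D A B) \<phi> e \<longrightarrow>
             is_all D (d_prd D X B) X (d_pi1 D X B) (d_rx D (times D X B f (d_idt D B)) \<phi>) (d_rx D f e))) \<and>
        (\<forall>g\<in>d_hom D X B.
          (is_ex D (d_prd D A B) B (d_pi2 D A B) \<phi> e \<longrightarrow>
             is_ex D (d_prd D A X) X (d_pi2 D A X) (d_rx D (times D A X (d_idt D A) g) \<phi>) (d_rx D g e)) \<and>
          (is_all D (d_prd D A B) B (d_pi2 D A B) \<phi> e \<longrightarrow>
             is_all D (d_prd D A X) X (d_pi2 D A X) (d_rx D (times D A X (d_idt D A) g) \<phi>) (d_rx D g e))))"

text \<open>For every A, \<delta>_A \<in> P(A\<times>A) such that for every X the reindexing
  P(id_X \<times> \<Delta>_A) : P(X\<times>(A\<times>A)) \<rightarrow> P(X\<times>A) has as left adjoint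
  \<beta> \<mapsto> P(\<langle>p1,p2\<rangle>)(\<beta>) \<and> P(\<langle>p2,p3\<rangle>)(\<delta>_A).\<close>
definition elementary :: "('o,'m,'p) doctrine \<Rightarrow> ('o \<Rightarrow> 'p) \<Rightarrow> bool" where
  "elementary D eq \<longleftrightarrow>
     (\<forall>A\<in>d_ob D. eq A \<in> d_fib D (d_prd D A A) \<and>
       (\<forall>X\<in>d_ob D. \<forall>\<beta>\<in>d_fib D (d_prd D X A). \<forall>\<gamma>\<in>d_fib D (d_prd D X (d_prd D A A)).
          d_le D (d_prd D X (d_prd D A A))
             (d_mt D (d_prd D X (d_prd D A A))
                (d_rx D (d_pr D (d_pi1 D X (d_prd D A A))
                                (d_cmp D (d_pi1 D A A) (d_pi2 D X (d_prd D A A)))) \<beta>)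
                (d_rx D (d_pi2 D X (d_prd D A A)) (eq A)))
             \<gamma>
          \<longleftrightarrow> d_le D (d_prd D X A) \<beta> (d_rx D (times D X A (d_idt D X) (diag D A)) \<gamma>)))"

definition weak_hyperdoctrine :: "('o,'m,'p) doctrine \<Rightarrow> ('o \<Rightarrow> 'p) \<Rightarrow> bool" where
  "weak_hyperdoctrine D eq \<longleftrightarrow> category D \<and> cartesian D \<and> weakly_cc D \<and>
     primary_doctrine D \<and> elementary D eq \<and> heyting D \<and> quantifiers D \<and> beck_chevalley D"

definition pnno :: "('o,'m,'p) doctrine \<Rightarrow> 'o \<Rightarrow> 'm \<Rightarrow> 'm \<Rightarrow> bool" where
  "pnno D N z s \<longleftrightarrow> N \<in> d_ob D \<and> z \<in> d_hom D (d_trm D) N \<and> s \<in> d_hom D N N \<and>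
     (\<forall>A\<in>d_ob D. \<forall>Y\<in>d_ob D. \<forall>f\<in>d_hom D A Y. \<forall>g\<in>d_hom D Y Y.
        \<exists>!h. h \<in> d_hom D (d_prd D A N) Y \<and>
             d_cmp D h (d_pr D (d_idt D A) (d_cmp D z (bang D A))) = f \<and>
             d_cmp D h (times D A N (d_idt D A) s) = d_cmp D g h)"

definition induction :: "('o,'m,'p) doctrine \<Rightarrow> 'o \<Rightarrow> 'm \<Rightarrow> 'm \<Rightarrow> bool" where
  "induction D N z s \<longleftrightarrow>
     (\<forall>A\<in>d_ob D. \<forall>\<phi>\<in>d_fib D (d_prd D A N).
        d_le D A (d_tp D A) (d_rx D (d_pr D (d_idt D A) (d_cmp D z (bang D A))) \<phi>) \<and>
        d_le D (d_prd D A N) \<phi> (d_rx D (times D A N (d_idt D A) s) \<phi>) \<longrightarrow>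
        d_le D (d_prd D A N) (d_tp D (d_prd D A N)) \<phi>)"

definition arithmetic :: "('o,'m,'p) doctrine \<Rightarrow> ('o \<Rightarrow> 'p) \<Rightarrow> 'o \<Rightarrow> 'm \<Rightarrow> 'm \<Rightarrow> bool" where
  "arithmetic D eq N z s \<longleftrightarrow> weak_hyperdoctrine D eq \<and> pnno D N z s \<and> induction D N z s"

definition comprehensive_diagonals :: "('o,'m,'p) doctrine \<Rightarrow> ('o \<Rightarrow> 'p) \<Rightarrow> bool" where
  "comprehensive_diagonals D eq \<longleftrightarrow>
     (\<forall>X\<in>d_ob D. \<forall>Y\<in>d_ob D. \<forall>f\<in>d_hom D X Y. \<forall>g\<in>d_hom D X Y.
        d_le D X (d_tp D X) (d_rx D (d_pr D f g) (eq Y)) \<longrightarrow> f = g)"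

text \<open>For every B, every weak evaluation ev : W\<times>A \<rightarrow> B and every R \<in> P(A\<times>B):
  \<forall>a.\<exists>b.R(a,b) \<turnstile> \<exists>f:W.\<forall>a.R(a,ev(f,a)) in P(1); the quantifiers are the
  adjoints to reindexing along the relevant projections / terminal arrows.\<close>
definition AC_on :: "('o,'m,'p) doctrine \<Rightarrow> 'o \<Rightarrow> bool" where
  "AC_on D A \<longleftrightarrow>
     (\<forall>B\<in>d_ob D. \<forall>W ev. weak_eval D W A B ev \<longrightarrow>
        (\<forall>R\<in>d_fib D (d_prd D A B). \<forall>e1 e2 e3 e4.
           is_ex D (d_prd D A B) A (d_pi1 D A B) R e1 \<longrightarrow>
           is_all D A (d_trm D) (bang D A) e1 e2 \<longrightarrow>
           is_all D (d_prd D W A) W (d_pi1 D W A) (d_rx D (d_pr D (d_pi2 D W A) ev) R) e3 \<longrightarrow>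
           is_ex D W (d_trm D) (bang D W) e3 e4 \<longrightarrow>
           d_le D (d_trm D) e2 e4))"

section \<open>The elementary quotient completion\<close>

definition p_equiv :: "('o,'m,'p) doctrine \<Rightarrow> 'o \<Rightarrow> 'p \<Rightarrow> bool" where
  "p_equiv D A \<rho> \<longleftrightarrow> A \<in> d_ob D \<and> \<rho> \<in> d_fib D (d_prd D A A) \<and>
     d_le D A (d_tp D A) (d_rx D (diag D A) \<rho>) \<and>
     d_le D (d_prd D A A) \<rho> (d_rx D (d_pr D (d_pi2 D A A) (d_pi1 D A A)) \<rho>) \<and>
     (let T = d_prd D A (d_prd D A A);
          a = d_pi1 D A (d_prd D A A);
          a' = d_cmp D (d_pi1 D A A) (d_pi2 D A (d_prd D A A));
          a'' = d_cmp D (d_pi2 D A A) (d_pi2 D A (d_prd D A A))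
      in d_le D T (d_mt D T (d_rx D (d_pr D a a') \<rho>) (d_rx D (d_pr D a' a'') \<rho>))
                  (d_rx D (d_pr D a a'') \<rho>))"

definition q_pres :: "('o,'m,'p) doctrine \<Rightarrow> 'o \<times> 'p \<Rightarrow> 'o \<times> 'p \<Rightarrow> 'm \<Rightarrow> bool" where
  "q_pres D X Y f \<longleftrightarrow> f \<in> d_hom D (fst X) (fst Y) \<and>
     d_le D (d_prd D (fst X) (fst X)) (snd X)
       (d_rx D (times D (fst X) (fst X) f f) (snd Y))"

definition q_cls :: "('o,'m,'p) doctrine \<Rightarrow> 'o \<times> 'p \<Rightarrow> 'o \<times> 'p \<Rightarrow> 'm \<Rightarrow> 'm set" where
  "q_cls D X Y f = {g. q_pres D X Y g \<and>
     d_le D (d_prd D (fst X) (fst X)) (snd X) (d_rx D (times D (fst X) (fst X) f g) (snd Y))}"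

type_synonym ('o,'m,'p) qarr = "('o \<times> 'p) \<times> ('o \<times> 'p) \<times> 'm set"

definition q_rep :: "('o,'m,'p) qarr \<Rightarrow> 'm" where
  "q_rep F = (SOME f. f \<in> snd (snd F))"

definition q_prd :: "('o,'m,'p) doctrine \<Rightarrow> 'o \<times> 'p \<Rightarrow> 'o \<times> 'p \<Rightarrow> 'o \<times> 'p" where
  "q_prd D X Y = (let A = fst X; B = fst Y; AB = d_prd D A B in
     (AB, d_mt D (d_prd D AB AB)
            (d_rx D (times D AB AB (d_pi1 D A B) (d_pi1 D A B)) (snd X))
            (d_rx D (times D AB AB (d_pi2 D A B) (d_pi2 D A B)) (snd Y))))"

definition quotient_completion ::
  "('o,'m,'p) doctrine \<Rightarrow> ('o \<times> 'p, ('o,'m,'p) qarr, 'p) doctrine" where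
  "quotient_completion D = \<lparr>
     d_ob = {X. p_equiv D (fst X) (snd X)},
     d_hom = (\<lambda>X Y. if p_equiv D (fst X) (snd X) \<and> p_equiv D (fst Y) (snd Y)
                     then {(X, Y, q_cls D X Y f) | f. q_pres D X Y f} else {}),
     d_cmp = (\<lambda>G F. (fst F, fst (snd G),
                     q_cls D (fst F) (fst (snd G)) (d_cmp D (q_rep G) (q_rep F)))),
     d_idt = (\<lambda>X. (X, X, q_cls D X X (d_idt D (fst X)))),
     d_trm = (d_trm D, d_tp D (d_prd D (d_trm D) (d_trm D))),
     d_prd = q_prd D,
     d_pi1 = (\<lambda>X Y. (q_prd D X Y, X, q_cls D (q_prd D X Y) X (d_pi1 D (fst X) (fst Y)))),
     d_pi2 = (\<lambda>X Y. (q_prd D X Y, Y, q_cls D (q_prd D X Y) Y (d_pi2 D (fst X) (fst Y)))),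
     d_pr = (\<lambda>F G. (fst F, q_prd D (fst (snd F)) (fst (snd G)),
                    q_cls D (fst F) (q_prd D (fst (snd F)) (fst (snd G)))
                      (d_pr D (q_rep F) (q_rep G)))),
     d_fib = (\<lambda>X. {\<alpha> \<in> d_fib D (fst X).
                    d_le D (d_prd D (fst X) (fst X))
                      (d_mt D (d_prd D (fst X) (fst X)) (d_rx D (d_pi1 D (fst X) (fst X)) \<alpha>) (snd X))
                      (d_rx D (d_pi2 D (fst X) (fst X)) \<alpha>)}),
     d_le = (\<lambda>X. d_le D (fst X)),
     d_tp = (\<lambda>X. d_tp D (fst X)),
     d_mt = (\<lambda>X. d_mt D (fst X)),
     d_rx = (\<lambda>F. d_rx D (q_rep F)) \<rparr>"

end

theory Submission
  imports Defs
begin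

locale actx =
  fixes D :: "('o,'m,'p) doctrine" and eq :: "'o \<Rightarrow> 'p"
  assumes wh: "weak_hyperdoctrine D eq" and cdiag: "comprehensive_diagonals D eq"
begin

abbreviation "ob \<equiv> d_ob D"
abbreviation "hom \<equiv> d_hom D"
abbreviation "cmp \<equiv> d_cmp D"
abbreviation "idt \<equiv> d_idt D"
abbreviation "trm \<equiv> d_trm D"
abbreviation "prd \<equiv> d_prd D"
abbreviation "p1 \<equiv> d_pi1 D"
abbreviation "p2 \<equiv> d_pi2 D"
abbreviation "pr \<equiv> d_pr D"
abbreviation "fib \<equiv> d_fib D"
abbreviation "le \<equiv> d_le D"
abbreviation "tp \<equiv> d_tp D"
abbreviation "mt \<equiv> d_mt D"
abbreviation "rx \<equiv> d_rx D"

lemma cat: "category D" and cart: "cartesian D" and prim: "primary_doctrine D"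
  and elem: "elementary D eq" and quant: "quantifiers D" and bc: "beck_chevalley D"
  and wcc: "weakly_cc D"
  using wh unfolding weak_hyperdoctrine_def by auto

lemma idt_hom[simp]: "A \<in> ob \<Longrightarrow> idt A \<in> hom A A"
  using cat unfolding category_def by auto
lemma cmp_hom: "f \<in> hom A B \<Longrightarrow> g \<in> hom B C \<Longrightarrow> A \<in> ob \<Longrightarrow> B \<in> ob \<Longrightarrow> C \<in> ob \<Longrightarrow> cmp g f \<in> hom A C"
  using cat unfolding category_def by blast
lemma cmp_idr[simp]: "f \<in> hom A B \<Longrightarrow> A \<in> ob \<Longrightarrow> B \<in> ob \<Longrightarrow> cmp f (idt A) = f"
  using cat unfolding category_def by blast
lemma cmp_idl[simp]: "f \<in> hom A B \<Longrightarrow> A \<in> ob \<Longrightarrow> B \<in> ob \<Longrightarrow> cmp (idt B) f = f"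
  using cat unfolding category_def by blast
lemma cmp_assoc: "f \<in> hom A B \<Longrightarrow> g \<in> hom B C \<Longrightarrow> h \<in> hom C E \<Longrightarrow> A \<in> ob \<Longrightarrow> B \<in> ob \<Longrightarrow> C \<in> ob \<Longrightarrow> E \<in> ob
   \<Longrightarrow> cmp h (cmp g f) = cmp (cmp h g) f"
  using cat unfolding category_def by blast

lemma trm_ob[simp]: "trm \<in> ob" using cart unfolding cartesian_def by blast
lemma prd_ob[simp]: "A \<in> ob \<Longrightarrow> B \<in> ob \<Longrightarrow> prd A B \<in> ob" using cart unfolding cartesian_def by blast
lemma p1_hom[simp]: "A \<in> ob \<Longrightarrow> B \<in> ob \<Longrightarrow> p1 A B \<in> hom (prd A B) A" using cart unfolding cartesian_def by blast
lemma p2_hom[simp]: "A \<in> ob \<Longrightarrow> B \<in> ob \<Longrightarrow> p2 A B \<in> hom (prd A B) B" using cart unfolding cartesian_def by blast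
lemma pr_hom: "f \<in> hom X A \<Longrightarrow> g \<in> hom X B \<Longrightarrow> X \<in> ob \<Longrightarrow> A \<in> ob \<Longrightarrow> B \<in> ob \<Longrightarrow> pr f g \<in> hom X (prd A B)"
  using cart unfolding cartesian_def by blast
lemma p1_pr[simp]: "f \<in> hom X A \<Longrightarrow> g \<in> hom X B \<Longrightarrow> X \<in> ob \<Longrightarrow> A \<in> ob \<Longrightarrow> B \<in> ob \<Longrightarrow> cmp (p1 A B) (pr f g) = f"
  using cart unfolding cartesian_def by blast
lemma p2_pr[simp]: "f \<in> hom X A \<Longrightarrow> g \<in> hom X B \<Longrightarrow> X \<in> ob \<Longrightarrow> A \<in> ob \<Longrightarrow> B \<in> ob \<Longrightarrow> cmp (p2 A B) (pr f g) = g"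
  using cart unfolding cartesian_def by blast
lemmas ty0 = idt_hom p1_hom p2_hom prd_ob trm_ob cmp_hom pr_hom

lemma idp1[simp]: "A \<in> ob \<Longrightarrow> B \<in> ob \<Longrightarrow> cmp (idt A) (p1 A B) = p1 A B"
  by (rule cmp_idl[of _ "prd A B"]) auto
lemma idp2[simp]: "A \<in> ob \<Longrightarrow> B \<in> ob \<Longrightarrow> cmp (idt B) (p2 A B) = p2 A B"
  by (rule cmp_idl[of _ "prd A B"]) auto
lemma idp3[simp]: "A \<in> ob \<Longrightarrow> B \<in> ob \<Longrightarrow> cmp (p1 A B) (idt (prd A B)) = p1 A B"
  by (rule cmp_idr[of _ _ A]) auto
lemma idp4[simp]: "A \<in> ob \<Longrightarrow> B \<in> ob \<Longrightarrow> cmp (p2 A B) (idt (prd A B)) = p2 A B"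
  by (rule cmp_idr[of _ _ B]) auto

lemma pr_uniq: "h \<in> hom X (prd A B) \<Longrightarrow> X \<in> ob \<Longrightarrow> A \<in> ob \<Longrightarrow> B \<in> ob \<Longrightarrow> h = pr (cmp (p1 A B) h) (cmp (p2 A B) h)"
proof -
  assume h: "h \<in> hom X (prd A B)" "X \<in> ob" "A \<in> ob" "B \<in> ob"
  have "cmp (p1 A B) h \<in> hom X A" "cmp (p2 A B) h \<in> hom X B" using h by (blast intro: ty0)+
  thus ?thesis using cart h unfolding cartesian_def by metis
qed



lemma pr_cmp: "f \<in> hom X A \<Longrightarrow> g \<in> hom X B \<Longrightarrow> k \<in> hom Y X \<Longrightarrow> Y \<in> ob \<Longrightarrow> X \<in> ob \<Longrightarrow> A \<in> ob \<Longrightarrow> B \<in> ob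
  \<Longrightarrow> cmp (pr f g) k = pr (cmp f k) (cmp g k)"
proof -
  assume a: "f \<in> hom X A" "g \<in> hom X B" "k \<in> hom Y X" "Y \<in> ob" "X \<in> ob" "A \<in> ob" "B \<in> ob"
  have pk: "cmp (pr f g) k \<in> hom Y (prd A B)" using a by (blast intro: ty0)
  have "cmp (p1 A B) (cmp (pr f g) k) = cmp f k" using a by (subst cmp_assoc[of k Y X _ "prd A B" _ A]) (auto intro: ty0)
  moreover have "cmp (p2 A B) (cmp (pr f g) k) = cmp g k" using a by (subst cmp_assoc[of k Y X _ "prd A B" _ B]) (auto intro: ty0)
  ultimately show ?thesis using pr_uniq[OF pk] a by simp
qed

lemma pr_p1p2[simp]: "A \<in> ob \<Longrightarrow> B \<in> ob \<Longrightarrow> pr (p1 A B) (p2 A B) = idt (prd A B)"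
  using pr_uniq[of "idt (prd A B)" "prd A B" A B] cmp_idr[of "p1 A B" "prd A B" A] cmp_idr[of "p2 A B" "prd A B" B] by simp

lemma pr_eqI: "h \<in> hom X (prd A B) \<Longrightarrow> X \<in> ob \<Longrightarrow> A \<in> ob \<Longrightarrow> B \<in> ob \<Longrightarrow> cmp (p1 A B) h = f \<Longrightarrow> cmp (p2 A B) h = g \<Longrightarrow> h = pr f g"
  using pr_uniq by blast

lemma bang_hom[intro,simp]: "A \<in> ob \<Longrightarrow> bang D A \<in> hom A trm"
  using cart unfolding cartesian_def bang_def by (metis (no_types, lifting) someI_ex)
lemma bang_uniq: "A \<in> ob \<Longrightarrow> t \<in> hom A trm \<Longrightarrow> t = bang D A"
  using cart bang_hom unfolding cartesian_def by metis

lemma times_hom[intro]: "h \<in> hom X X' \<Longrightarrow> k \<in> hom Y Y' \<Longrightarrow> X \<in> ob \<Longrightarrow> Y \<in> ob \<Longrightarrow> X' \<in> ob \<Longrightarrow> Y' \<in> ob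
  \<Longrightarrow> times D X Y h k \<in> hom (prd X Y) (prd X' Y')"
  unfolding times_def by (blast intro: ty0)

lemma diag_hom[intro,simp]: "A \<in> ob \<Longrightarrow> diag D A \<in> hom A (prd A A)"
  unfolding diag_def by (blast intro: ty0)

lemma times_pr: "h \<in> hom X X' \<Longrightarrow> k \<in> hom Y Y' \<Longrightarrow> f \<in> hom Z X \<Longrightarrow> g \<in> hom Z Y \<Longrightarrow> X \<in> ob \<Longrightarrow> Y \<in> ob \<Longrightarrow> X' \<in> ob \<Longrightarrow> Y' \<in> ob \<Longrightarrow> Z \<in> ob
  \<Longrightarrow> cmp (times D X Y h k) (pr f g) = pr (cmp h f) (cmp k g)"
  unfolding times_def
  apply (subst pr_cmp[of _ "prd X Y" X'])
  apply (blast intro: ty0)+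
  apply (subst cmp_assoc[of _ Z "prd X Y" _ X _ X', symmetric], (blast intro: ty0)+)
  apply (subst cmp_assoc[of _ Z "prd X Y" _ Y _ Y', symmetric], (blast intro: ty0)+)
  apply (subst p1_pr[of _ Z], (blast intro: ty0)+)
  apply (subst p2_pr[of _ Z], (blast intro: ty0)+)
  done

subsection \<open>Fibres\<close>

lemma fib_facts: "A \<in> ob \<Longrightarrow>
        (\<forall>x\<in>fib A. le A x x) \<and>
        (\<forall>x\<in>fib A. \<forall>y\<in>fib A. \<forall>z\<in>fib A. le A x y \<and> le A y z \<longrightarrow> le A x z) \<and>
        (\<forall>x\<in>fib A. \<forall>y\<in>fib A. le A x y \<and> le A y x \<longrightarrow> x = y) \<and>
        tp A \<in> fib A \<and> (\<forall>x\<in>fib A. le A x (tp A)) \<and>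
        (\<forall>x\<in>fib A. \<forall>y\<in>fib A. is_meet D A x y (mt A x y))"
  by (rule bspec[OF conjunct1[OF prim[unfolded primary_doctrine_def]]])

lemma le_refl[intro,simp]: "A \<in> ob \<Longrightarrow> x \<in> fib A \<Longrightarrow> le A x x" using fib_facts by blast
lemma le_trans: "le A x y \<Longrightarrow> le A y z \<Longrightarrow> A \<in> ob \<Longrightarrow> x \<in> fib A \<Longrightarrow> y \<in> fib A \<Longrightarrow> z \<in> fib A \<Longrightarrow> le A x z" using fib_facts by blast
lemma le_antisym: "le A x y \<Longrightarrow> le A y x \<Longrightarrow> A \<in> ob \<Longrightarrow> x \<in> fib A \<Longrightarrow> y \<in> fib A \<Longrightarrow> x = y" using fib_facts by blast
lemma tp_fib[intro,simp]: "A \<in> ob \<Longrightarrow> tp A \<in> fib A" using fib_facts by blast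
lemma le_tp[intro,simp]: "A \<in> ob \<Longrightarrow> x \<in> fib A \<Longrightarrow> le A x (tp A)" using fib_facts by blast
lemma mt_fib[intro,simp]: "A \<in> ob \<Longrightarrow> x \<in> fib A \<Longrightarrow> y \<in> fib A \<Longrightarrow> mt A x y \<in> fib A" using fib_facts unfolding is_meet_def by blast
lemma mt_le1[intro,simp]: "A \<in> ob \<Longrightarrow> x \<in> fib A \<Longrightarrow> y \<in> fib A \<Longrightarrow> le A (mt A x y) x" using fib_facts unfolding is_meet_def by blast
lemma mt_le2[intro,simp]: "A \<in> ob \<Longrightarrow> x \<in> fib A \<Longrightarrow> y \<in> fib A \<Longrightarrow> le A (mt A x y) y" using fib_facts unfolding is_meet_def by blast
lemma le_mt: "le A z x \<Longrightarrow> le A z y \<Longrightarrow> A \<in> ob \<Longrightarrow> x \<in> fib A \<Longrightarrow> y \<in> fib A \<Longrightarrow> z \<in> fib A \<Longrightarrow> le A z (mt A x y)" using fib_facts unfolding is_meet_def by blast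

lemma rx_facts: "A \<in> ob \<Longrightarrow> B \<in> ob \<Longrightarrow> f \<in> hom A B \<Longrightarrow>
        (\<forall>\<phi>\<in>fib B. rx f \<phi> \<in> fib A) \<and>
        (\<forall>\<phi>\<in>fib B. \<forall>\<psi>\<in>fib B. le B \<phi> \<psi> \<longrightarrow> le A (rx f \<phi>) (rx f \<psi>)) \<and>
        rx f (tp B) = tp A \<and>
        (\<forall>\<phi>\<in>fib B. \<forall>\<psi>\<in>fib B. rx f (mt B \<phi> \<psi>) = mt A (rx f \<phi>) (rx f \<psi>))"
proof -
  assume a: "A \<in> ob" "B \<in> ob" "f \<in> hom A B"
  have "\<forall>A\<in>ob. \<forall>B\<in>ob. \<forall>f\<in>hom A B.
        (\<forall>\<phi>\<in>fib B. rx f \<phi> \<in> fib A) \<and>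
        (\<forall>\<phi>\<in>fib B. \<forall>\<psi>\<in>fib B. le B \<phi> \<psi> \<longrightarrow> le A (rx f \<phi>) (rx f \<psi>)) \<and>
        rx f (tp B) = tp A \<and>
        (\<forall>\<phi>\<in>fib B. \<forall>\<psi>\<in>fib B. rx f (mt B \<phi> \<psi>) = mt A (rx f \<phi>) (rx f \<psi>))"
    by (rule conjunct1[OF conjunct2[OF prim[unfolded primary_doctrine_def]]])
  thus ?thesis using a by blast
qed

lemma rx_fib[intro]: "f \<in> hom A B \<Longrightarrow> \<phi> \<in> fib B \<Longrightarrow> A \<in> ob \<Longrightarrow> B \<in> ob \<Longrightarrow> rx f \<phi> \<in> fib A" using rx_facts by blast
lemma rx_mono: "le B \<phi> \<psi> \<Longrightarrow> f \<in> hom A B \<Longrightarrow> \<phi> \<in> fib B \<Longrightarrow> \<psi> \<in> fib B \<Longrightarrow> A \<in> ob \<Longrightarrow> B \<in> ob \<Longrightarrow> le A (rx f \<phi>) (rx f \<psi>)" using rx_facts by blast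
lemma rx_tp[simp]: "f \<in> hom A B \<Longrightarrow> A \<in> ob \<Longrightarrow> B \<in> ob \<Longrightarrow> rx f (tp B) = tp A" using rx_facts by blast
lemma rx_mt[simp]: "f \<in> hom A B \<Longrightarrow> \<phi> \<in> fib B \<Longrightarrow> \<psi> \<in> fib B \<Longrightarrow> A \<in> ob \<Longrightarrow> B \<in> ob \<Longrightarrow> rx f (mt B \<phi> \<psi>) = mt A (rx f \<phi>) (rx f \<psi>)" using rx_facts by blast
lemma rx_id[simp]: "A \<in> ob \<Longrightarrow> \<phi> \<in> fib A \<Longrightarrow> rx (idt A) \<phi> = \<phi>" using prim unfolding primary_doctrine_def by blast
lemma rx_cmp: "f \<in> hom A B \<Longrightarrow> g \<in> hom B C \<Longrightarrow> \<phi> \<in> fib C \<Longrightarrow> A \<in> ob \<Longrightarrow> B \<in> ob \<Longrightarrow> C \<in> ob \<Longrightarrow> rx (cmp g f) \<phi> = rx f (rx g \<phi>)"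
  using prim unfolding primary_doctrine_def by blast

lemma tp_le_mt: "le A (tp A) (mt A x y) \<longleftrightarrow> le A (tp A) x \<and> le A (tp A) y" if "A \<in> ob" "x \<in> fib A" "y \<in> fib A"
  using that by (meson le_mt le_trans mt_fib mt_le1 mt_le2 tp_fib)


subsection \<open>Equality\<close>

lemma elem_at: "A \<in> ob \<Longrightarrow> eq A \<in> fib (prd A A) \<and>
       (\<forall>X\<in>ob. \<forall>\<beta>\<in>fib (prd X A). \<forall>\<gamma>\<in>fib (prd X (prd A A)).
          le (prd X (prd A A))
             (mt (prd X (prd A A))
                (rx (pr (p1 X (prd A A))
                                (cmp (p1 A A) (p2 X (prd A A)))) \<beta>)
                (rx (p2 X (prd A A)) (eq A)))
             \<gamma>
          \<longleftrightarrow> le (prd X A) \<beta> (rx (times D X A (idt X) (diag D A)) \<gamma>))"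
  by (rule bspec[OF elem[unfolded elementary_def]])

lemma eq_fib[simp,intro]: "A \<in> ob \<Longrightarrow> eq A \<in> fib (prd A A)" using elem_at by blast

lemma eq_subst:
  assumes G: "G \<in> ob" and A: "A \<in> ob" and ph: "\<phi> \<in> fib (prd G A)" and s: "s \<in> hom G A" and t: "t \<in> hom G A"
  shows "le G (mt G (rx (pr (idt G) s) \<phi>) (rx (pr s t) (eq A))) (rx (pr (idt G) t) \<phi>)"
proof -
  define AA where "AA = prd A A"
  define T where "T = prd G AA"
  define q1 where "q1 = p1 G AA"
  define q2 where "q2 = p2 G AA"
  define a1 where "a1 = cmp (p1 A A) q2"
  define a2 where "a2 = cmp (p2 A A) q2"
  define tm where "tm = times D G A (idt G) (diag D A)"
  have ob: "AA \<in> ob" "T \<in> ob" "prd G A \<in> ob" unfolding AA_def T_def using G A by auto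
  have h: "q1 \<in> hom T G" "q2 \<in> hom T AA" "a1 \<in> hom T A" "a2 \<in> hom T A" "tm \<in> hom (prd G A) T"
    "pr q1 a1 \<in> hom T (prd G A)" "pr q1 a2 \<in> hom T (prd G A)"
    unfolding q1_def q2_def a1_def a2_def T_def AA_def tm_def using G A by (blast intro: ty0 times_hom diag_hom)+
  have c1: "cmp q1 tm = p1 G A" unfolding tm_def times_def q1_def T_def AA_def using G A
    by (subst p1_pr[of _ "prd G A"]) (simp | blast intro: ty0 diag_hom)+
  have c2': "cmp q2 tm = cmp (diag D A) (p2 G A)" unfolding tm_def times_def q2_def T_def AA_def using G A
    by (subst p2_pr[of _ "prd G A"]) (blast intro: ty0 diag_hom)+ 
  have dg: "diag D A \<in> hom A AA" "cmp (p2 A A) (diag D A) = idt A" unfolding AA_def diag_def using A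
    by (blast intro: ty0, simp add: p2_pr[of _ A])
  have "cmp a2 tm = cmp (p2 A A) (cmp q2 tm)" unfolding a2_def
    using cmp_assoc[of tm "prd G A" T q2 AA "p2 A A" A] ob h G A unfolding AA_def by simp
  also have "\<dots> = cmp (cmp (p2 A A) (diag D A)) (p2 G A)" unfolding c2'
    using cmp_assoc[of "p2 G A" "prd G A" A "diag D A" AA "p2 A A" A] ob dg G A unfolding AA_def by simp
  also have "\<dots> = p2 G A" using dg G A by simp
  finally have c2: "cmp a2 tm = p2 G A" .
  have "cmp (pr q1 a2) tm = idt (prd G A)"
    using pr_cmp[of q1 T G a2 A tm "prd G A"] c1 c2 h ob G A by simp
  hence "rx tm (rx (pr q1 a2) \<phi>) = \<phi>"
    using rx_cmp[of tm "prd G A" T "pr q1 a2" "prd G A" \<phi>] h ob ph by simp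
  hence "le (prd G A) \<phi> (rx tm (rx (pr q1 a2) \<phi>))" using ob ph by simp
  hence L: "le T (mt T (rx (pr q1 a1) \<phi>) (rx q2 (eq A))) (rx (pr q1 a2) \<phi>)"
    using elem_at[OF A] G ph h ob unfolding tm_def q1_def q2_def a1_def a2_def T_def AA_def
    by (meson rx_fib)
  define u where "u = pr (idt G) (pr s t)"
  have hu: "u \<in> hom G T" "pr s t \<in> hom G AA" unfolding u_def T_def AA_def using G A s t by (blast intro: ty0)+
  have u1: "cmp q1 u = idt G" "cmp q2 u = pr s t" unfolding u_def q1_def q2_def T_def
    using G A s t hu(2) by (simp_all add: p1_pr[of _ G] p2_pr[of _ G] AA_def)
  have u2: "cmp a1 u = s" "cmp a2 u = t" unfolding a1_def a2_def using hu h ob u1 G A s t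
    cmp_assoc[of u G T q2 AA "p1 A A" A] cmp_assoc[of u G T q2 AA "p2 A A" A] unfolding AA_def
    by (simp_all add: p1_pr[of _ G] p2_pr[of _ G])
  have u3: "cmp (pr q1 a1) u = pr (idt G) s" "cmp (pr q1 a2) u = pr (idt G) t"
    using pr_cmp[of q1 T G a1 A u G] pr_cmp[of q1 T G a2 A u G] h hu ob G A u1 u2 by simp_all
  have F: "rx (pr q1 a1) \<phi> \<in> fib T" "rx q2 (eq A) \<in> fib T" "rx (pr q1 a2) \<phi> \<in> fib T"
    using h ob ph A by (auto intro!: rx_fib simp: AA_def)
  have "le G (rx u (mt T (rx (pr q1 a1) \<phi>) (rx q2 (eq A)))) (rx u (rx (pr q1 a2) \<phi>))"
    using rx_mono[OF L hu(1)] F ob G by auto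
  moreover have "rx u (mt T (rx (pr q1 a1) \<phi>) (rx q2 (eq A))) = mt G (rx (pr (idt G) s) \<phi>) (rx (pr s t) (eq A))"
    using h hu ob G A ph u1 u3 rx_cmp[of u G T "pr q1 a1" "prd G A" \<phi>] rx_cmp[of u G T q2 AA "eq A"]
    by (subst rx_mt) (auto simp: AA_def intro!: rx_fib)
  moreover have "rx u (rx (pr q1 a2) \<phi>) = rx (pr (idt G) t) \<phi>"
    using h hu ob G A ph u3 rx_cmp[of u G T "pr q1 a2" "prd G A" \<phi>] by simp
  ultimately show ?thesis by simp
qed

end

context actx begin

lemma rx_rx: "k \<in> hom Y X \<Longrightarrow> f \<in> hom X A \<Longrightarrow> \<phi> \<in> fib A \<Longrightarrow> Y \<in> ob \<Longrightarrow> X \<in> ob \<Longrightarrow> A \<in> ob \<Longrightarrow> rx k (rx f \<phi>) = rx (cmp f k) \<phi>"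
  using rx_cmp by metis

lemma rx_rx_pr: "f \<in> hom X A \<Longrightarrow> g \<in> hom X B \<Longrightarrow> k \<in> hom Y X \<Longrightarrow> \<phi> \<in> fib (prd A B) \<Longrightarrow> Y \<in> ob \<Longrightarrow> X \<in> ob \<Longrightarrow> A \<in> ob \<Longrightarrow> B \<in> ob
  \<Longrightarrow> rx k (rx (pr f g) \<phi>) = rx (pr (cmp f k) (cmp g k)) \<phi>"
  by (subst rx_rx[of k Y X _ "prd A B"]) (auto intro: pr_hom simp: pr_cmp)

lemma c_p1: "u \<in> hom X A \<Longrightarrow> v \<in> hom X B \<Longrightarrow> w \<in> hom A C \<Longrightarrow> X \<in> ob \<Longrightarrow> A \<in> ob \<Longrightarrow> B \<in> ob \<Longrightarrow> C \<in> ob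
  \<Longrightarrow> cmp (cmp w (p1 A B)) (pr u v) = cmp w u"
  by (subst cmp_assoc[of _ X "prd A B" _ A _ C, symmetric]) (auto intro: pr_hom)
lemma c_p2: "u \<in> hom X A \<Longrightarrow> v \<in> hom X B \<Longrightarrow> w \<in> hom B C \<Longrightarrow> X \<in> ob \<Longrightarrow> A \<in> ob \<Longrightarrow> B \<in> ob \<Longrightarrow> C \<in> ob
  \<Longrightarrow> cmp (cmp w (p2 A B)) (pr u v) = cmp w v"
  by (subst cmp_assoc[of _ X "prd A B" _ B _ C, symmetric]) (auto intro: pr_hom)

lemma mt_tp_le: "A \<in> ob \<Longrightarrow> x \<in> fib A \<Longrightarrow> le A x (mt A (tp A) x)"
  by (rule le_mt) auto

lemma le_tp_iff: "A \<in> ob \<Longrightarrow> x \<in> fib A \<Longrightarrow> le A (tp A) x \<longleftrightarrow> x = tp A"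
  using le_antisym by auto

lemma eq_refl:
  assumes G: "G \<in> ob" and A: "A \<in> ob" and a: "a \<in> hom G A"
  shows "rx (pr a a) (eq A) = tp G"
proof -
  define AA where "AA = prd A A"
  define T where "T = prd G AA"
  define q2 where "q2 = p2 G AA"
  define tm where "tm = times D G A (idt G) (diag D A)"
  have ob: "AA \<in> ob" "T \<in> ob" "prd G A \<in> ob" unfolding AA_def T_def using G A by auto
  have h: "q2 \<in> hom T AA" "tm \<in> hom (prd G A) T" "rx q2 (eq A) \<in> fib T"
    unfolding q2_def T_def AA_def tm_def using G A by (blast intro: ty0 times_hom diag_hom rx_fib eq_fib)+
  have "le T (mt T (rx (pr (p1 G AA) (cmp (p1 A A) (p2 G AA))) (tp (prd G A))) (rx q2 (eq A))) (rx q2 (eq A))"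
    using h ob G A unfolding AA_def T_def q2_def by (intro mt_le2) (blast intro: ty0 rx_fib tp_fib)+
  hence L: "le (prd G A) (tp (prd G A)) (rx tm (rx q2 (eq A)))"
    using elem_at[OF A] G h ob unfolding tm_def q2_def T_def AA_def by (meson tp_fib)
  have c2': "cmp q2 tm = cmp (diag D A) (p2 G A)" unfolding tm_def times_def q2_def T_def AA_def using G A
    by (subst p2_pr[of _ "prd G A"]) (blast intro: ty0 diag_hom)+
  have j: "pr (idt G) a \<in> hom G (prd G A)" using G A a by (blast intro: ty0)
  have dA: "diag D A \<in> hom A AA" using A unfolding AA_def by simp
  have "rx tm (rx q2 (eq A)) = rx (cmp (diag D A) (p2 G A)) (eq A)"
    using rx_rx[OF h(2) h(1)] c2' ob G A by (simp add: AA_def)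
  hence "rx (pr (idt G) a) (rx tm (rx q2 (eq A))) = rx (cmp (cmp (diag D A) (p2 G A)) (pr (idt G) a)) (eq A)"
    using rx_rx[of "pr (idt G) a" G "prd G A" "cmp (diag D A) (p2 G A)" AA] j ob G A dA
    by (simp add: AA_def cmp_hom[of _ _ A])
  also have "cmp (cmp (diag D A) (p2 G A)) (pr (idt G) a) = cmp (diag D A) a"
    using c_p2[of "idt G" G G a A "diag D A" AA] G A a dA ob by simp
  also have "\<dots> = pr a a" unfolding diag_def using pr_cmp[of "idt A" A A "idt A" A a G] G A a by simp
  finally have "le G (tp G) (rx (pr a a) (eq A))"
    using rx_mono[OF L j] G A ob h j rx_fib[OF h(2) h(3)] by auto
  moreover have "rx (pr a a) (eq A) \<in> fib G" using rx_fib[OF pr_hom[OF a a G A A] eq_fib] G A by simp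
  ultimately show ?thesis using le_tp_iff G by blast
qed


lemma subst_at: "x \<in> hom G A \<Longrightarrow> u \<in> hom (prd G A) C \<Longrightarrow> v \<in> hom (prd G A) E \<Longrightarrow> \<psi> \<in> fib (prd C E)
  \<Longrightarrow> G \<in> ob \<Longrightarrow> A \<in> ob \<Longrightarrow> C \<in> ob \<Longrightarrow> E \<in> ob
  \<Longrightarrow> rx (pr (idt G) x) (rx (pr u v) \<psi>) = rx (pr (cmp u (pr (idt G) x)) (cmp v (pr (idt G) x))) \<psi>"
  by (rule rx_rx_pr[of u "prd G A" C v E "pr (idt G) x" G \<psi>]) (blast intro: ty0)+

lemma sp1: "x \<in> hom G A \<Longrightarrow> w \<in> hom G C \<Longrightarrow> G \<in> ob \<Longrightarrow> A \<in> ob \<Longrightarrow> C \<in> ob \<Longrightarrow> cmp (cmp w (p1 G A)) (pr (idt G) x) = w"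
  using c_p1[of "idt G" G G x A w C] by simp
lemma sp2: "x \<in> hom G A \<Longrightarrow> w \<in> hom A C \<Longrightarrow> G \<in> ob \<Longrightarrow> A \<in> ob \<Longrightarrow> C \<in> ob \<Longrightarrow> cmp (cmp w (p2 G A)) (pr (idt G) x) = cmp w x"
  using c_p2[of "idt G" G G x A w C] by simp
lemma sp2': "x \<in> hom G A \<Longrightarrow> G \<in> ob \<Longrightarrow> A \<in> ob \<Longrightarrow> cmp (p2 G A) (pr (idt G) x) = x"
  by (rule p2_pr[of _ G]) auto
lemma sp1': "x \<in> hom G A \<Longrightarrow> G \<in> ob \<Longrightarrow> A \<in> ob \<Longrightarrow> cmp (p1 G A) (pr (idt G) x) = idt G"
  by (rule p1_pr[of _ G]) auto

lemma eq_sym: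
  assumes G: "G \<in> ob" and A: "A \<in> ob" and s: "s \<in> hom G A" and t: "t \<in> hom G A"
  shows "le G (rx (pr s t) (eq A)) (rx (pr t s) (eq A))"
proof -
  have u: "p2 G A \<in> hom (prd G A) A" "cmp s (p1 G A) \<in> hom (prd G A) A" using G A s by (blast intro: ty0)+
  define \<phi> where "\<phi> = rx (pr (p2 G A) (cmp s (p1 G A))) (eq A)"
  have ph: "\<phi> \<in> fib (prd G A)" unfolding \<phi>_def using u G A by (blast intro: ty0 rx_fib eq_fib)
  have 1: "rx (pr (idt G) s) \<phi> = tp G" unfolding \<phi>_def
    using subst_at[OF s u] G A s sp1[OF s s] sp2'[OF s] eq_refl[OF G A s] by simp
  have 2: "rx (pr (idt G) t) \<phi> = rx (pr t s) (eq A)" unfolding \<phi>_def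
    using subst_at[OF t u] G A s t sp1[OF t s] sp2'[OF t] by simp
  have e: "rx (pr s t) (eq A) \<in> fib G" "rx (pr t s) (eq A) \<in> fib G" using G A s t by (blast intro: ty0 rx_fib eq_fib)+
  show ?thesis using eq_subst[OF G A ph s t] 1 2 mt_tp_le[OF G e(1)] le_trans G e
    by (metis mt_fib tp_fib)
qed

lemma eq_trans:
  assumes G: "G \<in> ob" and A: "A \<in> ob" and r: "r \<in> hom G A" and s: "s \<in> hom G A" and t: "t \<in> hom G A"
  shows "le G (mt G (rx (pr r s) (eq A)) (rx (pr s t) (eq A))) (rx (pr r t) (eq A))"
proof -
  have u: "cmp r (p1 G A) \<in> hom (prd G A) A" "p2 G A \<in> hom (prd G A) A" using G A r by (blast intro: ty0)+
  define \<phi> where "\<phi> = rx (pr (cmp r (p1 G A)) (p2 G A)) (eq A)"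
  have ph: "\<phi> \<in> fib (prd G A)" unfolding \<phi>_def using u G A by (blast intro: ty0 rx_fib eq_fib)
  have 1: "rx (pr (idt G) s) \<phi> = rx (pr r s) (eq A)" unfolding \<phi>_def
    using subst_at[OF s u] G A s sp1[OF s r] sp2'[OF s] by simp
  have 2: "rx (pr (idt G) t) \<phi> = rx (pr r t) (eq A)" unfolding \<phi>_def
    using subst_at[OF t u] G A t sp1[OF t r] sp2'[OF t] by simp
  show ?thesis using eq_subst[OF G A ph s t] 1 2 by simp
qed

lemma eq_cong:
  assumes G: "G \<in> ob" and A: "A \<in> ob" and B: "B \<in> ob" and s: "s \<in> hom G A" and t: "t \<in> hom G A" and f: "f \<in> hom A B"
  shows "le G (rx (pr s t) (eq A)) (rx (pr (cmp f s) (cmp f t)) (eq B))"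
proof -
  have fs: "cmp f s \<in> hom G B" "cmp f t \<in> hom G B" using G A B s t f by (blast intro: ty0)+
  have u: "cmp (cmp f s) (p1 G A) \<in> hom (prd G A) B" "cmp f (p2 G A) \<in> hom (prd G A) B" using G A B fs f by (blast intro: ty0)+
  define \<phi> where "\<phi> = rx (pr (cmp (cmp f s) (p1 G A)) (cmp f (p2 G A))) (eq B)"
  have ph: "\<phi> \<in> fib (prd G A)" unfolding \<phi>_def using u G A B by (blast intro: ty0 rx_fib eq_fib)
  have 1: "rx (pr (idt G) s) \<phi> = tp G" unfolding \<phi>_def
    using subst_at[OF s u] G A B s sp1[OF s fs(1)] sp2[OF s f] eq_refl[OF G B fs(1)] by simp
  have 2: "rx (pr (idt G) t) \<phi> = rx (pr (cmp f s) (cmp f t)) (eq B)" unfolding \<phi>_def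
    using subst_at[OF t u] G A B t sp1[OF t fs(1)] sp2[OF t f] by simp
  have e: "rx (pr s t) (eq A) \<in> fib G" "rx (pr (cmp f s) (cmp f t)) (eq B) \<in> fib G" using G A B s t fs by (blast intro: ty0 rx_fib eq_fib)+
  show ?thesis using eq_subst[OF G A ph s t] 1 2 mt_tp_le[OF G e(1)] le_trans G e
    by (metis mt_fib tp_fib)
qed

lemma eq_closed:
  assumes G: "G \<in> ob" and A: "A \<in> ob" and a: "a \<in> hom G A" and b: "b \<in> hom G A" and al: "\<alpha> \<in> fib A"
  shows "le G (mt G (rx a \<alpha>) (rx (pr a b) (eq A))) (rx b \<alpha>)"
proof -
  have ph: "rx (p2 G A) \<alpha> \<in> fib (prd G A)" using G A al by (blast intro: ty0 rx_fib)
  have 1: "rx (pr (idt G) a) (rx (p2 G A) \<alpha>) = rx a \<alpha>" "rx (pr (idt G) b) (rx (p2 G A) \<alpha>) = rx b \<alpha>"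
    using rx_rx[of "pr (idt G) a" G "prd G A" "p2 G A" A] rx_rx[of "pr (idt G) b" G "prd G A" "p2 G A" A] G A a b al sp2'
      pr_hom[of "idt G" G G a A] pr_hom[of "idt G" G G b A] by auto
  show ?thesis using eq_subst[OF G A ph a b] 1 by simp
qed

end

context actx begin

definition teq :: "'o \<Rightarrow> 'p \<Rightarrow> bool" where
  "teq A \<rho> \<longleftrightarrow> A \<in> ob \<and> \<rho> \<in> fib (prd A A) \<and> (\<forall>G\<in>ob. \<forall>a\<in>hom G A. \<forall>b\<in>hom G A. \<forall>c \<in> hom G A.
     le G (tp G) (rx (pr a a) \<rho>) \<and> le G (rx (pr a b) \<rho>) (rx (pr b a) \<rho>) \<and>
     le G (mt G (rx (pr a b) \<rho>) (rx (pr b c) \<rho>)) (rx (pr a c) \<rho>))"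

lemma pequiv_teq1:
  assumes pe: "p_equiv D A \<rho>"
  shows "teq A \<rho>"
proof -
  have A: "A \<in> ob" and r: "\<rho> \<in> fib (prd A A)" using pe unfolding p_equiv_def by auto
  define AA where "AA = prd A A"
  define T where "T = prd A AA"
  define x where "x = p1 A AA"
  define y where "y = cmp (p1 A A) (p2 A AA)"
  define z where "z = cmp (p2 A A) (p2 A AA)"
  have ob: "AA \<in> ob" "T \<in> ob" unfolding AA_def T_def using A by auto
  have xyz: "x \<in> hom T A" "y \<in> hom T A" "z \<in> hom T A" unfolding x_def y_def z_def T_def AA_def using A by (blast intro: ty0)+
  have refl: "le A (tp A) (rx (diag D A) \<rho>)" and sym: "le AA \<rho> (rx (pr (p2 A A) (p1 A A)) \<rho>)"
    and tr: "le T (mt T (rx (pr x y) \<rho>) (rx (pr y z) \<rho>)) (rx (pr x z) \<rho>)"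
    using pe unfolding p_equiv_def Let_def AA_def T_def x_def y_def z_def by auto
  have "le G (tp G) (rx (pr a a) \<rho>) \<and> le G (rx (pr a b) \<rho>) (rx (pr b a) \<rho>) \<and>
     le G (mt G (rx (pr a b) \<rho>) (rx (pr b c) \<rho>)) (rx (pr a c) \<rho>)"
    if G: "G \<in> ob" and a: "a \<in> hom G A" and b: "b \<in> hom G A" and c: "c \<in> hom G A" for G a b c
  proof (intro conjI)
    have "rx a (rx (diag D A) \<rho>) = rx (pr a a) \<rho>" unfolding diag_def
      using rx_rx_pr[of "idt A" A A "idt A" A a G \<rho>] G A a r by simp
    thus "le G (tp G) (rx (pr a a) \<rho>)" using rx_mono[OF refl a] G A a r rx_fib[OF diag_hom[OF A] r] by auto
  next
    have ab: "pr a b \<in> hom G AA" unfolding AA_def using G A a b by (blast intro: ty0)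
    have "rx (pr a b) (rx (pr (p2 A A) (p1 A A)) \<rho>) = rx (pr b a) \<rho>"
      using rx_rx_pr[of "p2 A A" AA A "p1 A A" A "pr a b" G \<rho>] G A a b r ab unfolding AA_def by simp
    moreover have "rx (pr (p2 A A) (p1 A A)) \<rho> \<in> fib (prd A A)" using A r by (blast intro: ty0 rx_fib)
    ultimately show "le G (rx (pr a b) \<rho>) (rx (pr b a) \<rho>)" using rx_mono[OF sym ab] G A ob a b r ab unfolding AA_def
      by auto
  next
    have bc: "pr b c \<in> hom G AA" unfolding AA_def using G A b c by (blast intro: ty0)
    define k where "k = pr a (pr b c)"
    have k: "k \<in> hom G T" unfolding T_def k_def using bc a G A ob unfolding AA_def by (blast intro: ty0)
    have ck: "cmp x k = a" "cmp y k = b" "cmp z k = c" unfolding x_def y_def z_def k_def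
      using G A a b c bc c_p2[of a G A "pr b c" AA "p1 A A" A] c_p2[of a G A "pr b c" AA "p2 A A" A] unfolding AA_def
      by (simp_all add: p1_pr[of _ G] p2_pr[of _ G])
    have f: "rx (pr x y) \<rho> \<in> fib T" "rx (pr y z) \<rho> \<in> fib T" "rx (pr x z) \<rho> \<in> fib T"
      using xyz ob A r by (blast intro: ty0 rx_fib)+
    have "rx k (mt T (rx (pr x y) \<rho>) (rx (pr y z) \<rho>)) = mt G (rx (pr a b) \<rho>) (rx (pr b c) \<rho>)"
      using f k G ob A r xyz rx_rx_pr[of x T A y A k G \<rho>] rx_rx_pr[of y T A z A k G \<rho>] ck by simp
    moreover have "rx k (rx (pr x z) \<rho>) = rx (pr a c) \<rho>"
      using f k G ob A r xyz rx_rx_pr[of x T A z A k G \<rho>] ck by simp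
    ultimately show "le G (mt G (rx (pr a b) \<rho>) (rx (pr b c) \<rho>)) (rx (pr a c) \<rho>)"
      using rx_mono[OF tr k] f G ob by (auto intro: mt_fib)
  qed
  thus ?thesis unfolding teq_def using A r by blast
qed


lemma teq_pequiv:
  assumes t: "teq A \<rho>"
  shows "p_equiv D A \<rho>"
proof -
  have A: "A \<in> ob" and r: "\<rho> \<in> fib (prd A A)" using t unfolding teq_def by auto
  have T: "\<And>G a b c. G \<in> ob \<Longrightarrow> a \<in> hom G A \<Longrightarrow> b \<in> hom G A \<Longrightarrow> c \<in> hom G A \<Longrightarrow>
     le G (tp G) (rx (pr a a) \<rho>) \<and> le G (rx (pr a b) \<rho>) (rx (pr b a) \<rho>) \<and>
     le G (mt G (rx (pr a b) \<rho>) (rx (pr b c) \<rho>)) (rx (pr a c) \<rho>)"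
    using t unfolding teq_def by blast
  have 1: "le A (tp A) (rx (diag D A) \<rho>)" unfolding diag_def using T[of A "idt A" "idt A" "idt A"] A by simp
  have 2: "le (prd A A) \<rho> (rx (pr (p2 A A) (p1 A A)) \<rho>)"
    using T[of "prd A A" "p1 A A" "p2 A A" "p2 A A"] A r by simp
  define AA where "AA = prd A A"
  have 3: "le (prd A AA) (mt (prd A AA) (rx (pr (p1 A AA) (cmp (p1 A A) (p2 A AA))) \<rho>) (rx (pr (cmp (p1 A A) (p2 A AA)) (cmp (p2 A A) (p2 A AA))) \<rho>))
                  (rx (pr (p1 A AA) (cmp (p2 A A) (p2 A AA))) \<rho>)"
    using T[of "prd A AA" "p1 A AA" "cmp (p1 A A) (p2 A AA)" "cmp (p2 A A) (p2 A AA)"] A unfolding AA_def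
    by (meson cmp_hom p1_hom p2_hom prd_ob)
  show ?thesis unfolding p_equiv_def Let_def using A r 1 2 3 unfolding AA_def by auto
qed

lemma pequiv_iff: "p_equiv D A \<rho> \<longleftrightarrow> teq A \<rho>" using pequiv_teq1 teq_pequiv by blast

lemma teq_refl: "teq A \<rho> \<Longrightarrow> G \<in> ob \<Longrightarrow> a \<in> hom G A \<Longrightarrow> le G (tp G) (rx (pr a a) \<rho>)"
  unfolding teq_def by blast
lemma teq_sym: "teq A \<rho> \<Longrightarrow> G \<in> ob \<Longrightarrow> a \<in> hom G A \<Longrightarrow> b \<in> hom G A \<Longrightarrow> le G (rx (pr a b) \<rho>) (rx (pr b a) \<rho>)"
  unfolding teq_def by blast
lemma teq_trans: "teq A \<rho> \<Longrightarrow> G \<in> ob \<Longrightarrow> a \<in> hom G A \<Longrightarrow> b \<in> hom G A \<Longrightarrow> c \<in> hom G A \<Longrightarrow>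
   le G (mt G (rx (pr a b) \<rho>) (rx (pr b c) \<rho>)) (rx (pr a c) \<rho>)"
  unfolding teq_def by blast
lemma teq_ob: "teq A \<rho> \<Longrightarrow> A \<in> ob" and teq_fib: "teq A \<rho> \<Longrightarrow> \<rho> \<in> fib (prd A A)"
  unfolding teq_def by auto

lemma teq_eq: "A \<in> ob \<Longrightarrow> teq A (eq A)"
  unfolding teq_def using eq_refl eq_sym eq_trans by (auto intro: pr_hom)

definition req :: "'o \<Rightarrow> 'o \<Rightarrow> 'p \<Rightarrow> 'm \<Rightarrow> 'm \<Rightarrow> bool" where
  "req G A \<rho> f g \<longleftrightarrow> f \<in> hom G A \<and> g \<in> hom G A \<and> le G (tp G) (rx (pr f g) \<rho>)"

lemma req_refl: "teq A \<rho> \<Longrightarrow> G \<in> ob \<Longrightarrow> f \<in> hom G A \<Longrightarrow> req G A \<rho> f f"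
  unfolding req_def using teq_refl by blast

lemma req_sym: "teq A \<rho> \<Longrightarrow> G \<in> ob \<Longrightarrow> req G A \<rho> f g \<Longrightarrow> req G A \<rho> g f"
proof -
  assume t: "teq A \<rho>" and G: "G \<in> ob" and fg: "req G A \<rho> f g"
  have A: "A \<in> ob" and r: "\<rho> \<in> fib (prd A A)" using t teq_ob teq_fib by auto
  have h: "f \<in> hom G A" "g \<in> hom G A" using fg unfolding req_def by auto
  have fs: "rx (pr f g) \<rho> \<in> fib G" "rx (pr g f) \<rho> \<in> fib G"
    using rx_fib[OF pr_hom[OF h(1) h(2) G A A] r] rx_fib[OF pr_hom[OF h(2) h(1) G A A] r] G A by auto
  show ?thesis using le_trans[OF _ teq_sym[OF t G h] G _ fs] fg fs G h unfolding req_def by auto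
qed

lemma req_trans: "teq A \<rho> \<Longrightarrow> G \<in> ob \<Longrightarrow> req G A \<rho> f g \<Longrightarrow> req G A \<rho> g h \<Longrightarrow> req G A \<rho> f h"
proof -
  assume t: "teq A \<rho>" and G: "G \<in> ob" and fg: "req G A \<rho> f g" and gh: "req G A \<rho> g h"
  have A: "A \<in> ob" and r: "\<rho> \<in> fib (prd A A)" using t teq_ob teq_fib by auto
  have h: "f \<in> hom G A" "g \<in> hom G A" "h \<in> hom G A" using fg gh unfolding req_def by auto
  have fs: "rx (pr f g) \<rho> \<in> fib G" "rx (pr g h) \<rho> \<in> fib G" "rx (pr f h) \<rho> \<in> fib G"
    using h G A r by (blast intro: ty0 rx_fib)+
  have "le G (tp G) (mt G (rx (pr f g) \<rho>) (rx (pr g h) \<rho>))"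
    using fg gh fs G unfolding req_def by (intro le_mt) auto
  thus ?thesis using teq_trans[OF t G h] fs G le_trans h unfolding req_def by (meson mt_fib tp_fib)
qed

lemma req_pre: "teq A \<rho> \<Longrightarrow> G \<in> ob \<Longrightarrow> G' \<in> ob \<Longrightarrow> req G A \<rho> f g \<Longrightarrow> k \<in> hom G' G \<Longrightarrow> req G' A \<rho> (cmp f k) (cmp g k)"
proof -
  assume t: "teq A \<rho>" and G: "G \<in> ob" "G' \<in> ob" and fg: "req G A \<rho> f g" and k: "k \<in> hom G' G"
  have A: "A \<in> ob" and r: "\<rho> \<in> fib (prd A A)" using t teq_ob teq_fib by auto
  have h: "f \<in> hom G A" "g \<in> hom G A" using fg unfolding req_def by auto
  have "le G' (rx k (tp G)) (rx k (rx (pr f g) \<rho>))" using fg k G h A r unfolding req_def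
    by (intro rx_mono) (blast intro: ty0 rx_fib tp_fib)+
  thus ?thesis unfolding req_def using rx_rx_pr[of f G A g A k G' \<rho>] h k G A r by (auto intro: cmp_hom)
qed

end

context actx begin

lemma qpres_hom: "q_pres D X Y m \<Longrightarrow> m \<in> hom (fst X) (fst Y)" unfolding q_pres_def by auto

lemma qpres_term:
  assumes m: "q_pres D X Y m" and X: "fst X \<in> ob" and Y: "fst Y \<in> ob" and sY: "snd Y \<in> fib (prd (fst Y) (fst Y))"
    and sX: "snd X \<in> fib (prd (fst X) (fst X))" and G: "G \<in> ob" and a: "a \<in> hom G (fst X)" and b: "b \<in> hom G (fst X)"
  shows "le G (rx (pr a b) (snd X)) (rx (pr (cmp m a) (cmp m b)) (snd Y))"
proof -
  have mh: "m \<in> hom (fst X) (fst Y)" using m unfolding q_pres_def by auto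
  have le: "le (prd (fst X) (fst X)) (snd X) (rx (times D (fst X) (fst X) m m) (snd Y))" using m unfolding q_pres_def by auto
  have ab: "pr a b \<in> hom G (prd (fst X) (fst X))" using a b G X by (blast intro: ty0)
  have tm: "times D (fst X) (fst X) m m \<in> hom (prd (fst X) (fst X)) (prd (fst Y) (fst Y))" using mh X Y by (blast intro: times_hom)
  have "rx (pr a b) (rx (times D (fst X) (fst X) m m) (snd Y)) = rx (pr (cmp m a) (cmp m b)) (snd Y)"
    using rx_rx[OF ab tm sY] times_pr[OF mh mh a b] G X Y by simp
  thus ?thesis using rx_mono[OF le ab] sX sY G X Y tm rx_fib[OF tm sY] by simp
qed

lemma qpres_intro:
  assumes mh: "m \<in> hom (fst X) (fst Y)" and X: "fst X \<in> ob" and Y: "fst Y \<in> ob" and sY: "snd Y \<in> fib (prd (fst Y) (fst Y))"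
    and sX: "snd X \<in> fib (prd (fst X) (fst X))"
    and H: "le (prd (fst X) (fst X)) (rx (pr (p1 (fst X) (fst X)) (p2 (fst X) (fst X))) (snd X))
              (rx (pr (cmp m (p1 (fst X) (fst X))) (cmp m (p2 (fst X) (fst X)))) (snd Y))"
  shows "q_pres D X Y m"
  using H mh X sX unfolding q_pres_def times_def by simp

lemma req_post: "q_pres D X Y m \<Longrightarrow> teq (fst X) (snd X) \<Longrightarrow> teq (fst Y) (snd Y) \<Longrightarrow> G \<in> ob \<Longrightarrow>
   req G (fst X) (snd X) f g \<Longrightarrow> req G (fst Y) (snd Y) (cmp m f) (cmp m g)"
proof -
  assume m: "q_pres D X Y m" and tx: "teq (fst X) (snd X)" and ty: "teq (fst Y) (snd Y)" and G: "G \<in> ob"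
    and fg: "req G (fst X) (snd X) f g"
  have h: "f \<in> hom G (fst X)" "g \<in> hom G (fst X)" "m \<in> hom (fst X) (fst Y)"
    using fg m unfolding req_def q_pres_def by auto
  have ob: "fst X \<in> ob" "fst Y \<in> ob" using tx ty teq_ob by auto
  have f: "snd X \<in> fib (prd (fst X) (fst X))" "snd Y \<in> fib (prd (fst Y) (fst Y))" using tx ty teq_fib by auto
  have "le G (rx (pr f g) (snd X)) (rx (pr (cmp m f) (cmp m g)) (snd Y))"
    using qpres_term[OF m ob(1) ob(2) f(2) f(1) G h(1) h(2)] .
  moreover have "cmp m f \<in> hom G (fst Y)" "cmp m g \<in> hom G (fst Y)" using h G ob by (blast intro: ty0)+
  ultimately show ?thesis using fg G le_trans ob f h unfolding req_def
    by (metis pr_hom prd_ob rx_fib tp_fib)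
qed

subsection \<open>Product relations\<close>

lemma fst_qprd[simp]: "fst (q_prd D X Y) = prd (fst X) (fst Y)" unfolding q_prd_def Let_def by simp

lemma snd_qprd: "snd (q_prd D X Y) = mt (prd (prd (fst X) (fst Y)) (prd (fst X) (fst Y)))
   (rx (times D (prd (fst X) (fst Y)) (prd (fst X) (fst Y)) (p1 (fst X) (fst Y)) (p1 (fst X) (fst Y))) (snd X))
   (rx (times D (prd (fst X) (fst Y)) (prd (fst X) (fst Y)) (p2 (fst X) (fst Y)) (p2 (fst X) (fst Y))) (snd Y))"
  unfolding q_prd_def Let_def by simp

lemma qprd_fib: "fst X \<in> ob \<Longrightarrow> fst Y \<in> ob \<Longrightarrow> snd X \<in> fib (prd (fst X) (fst X)) \<Longrightarrow> snd Y \<in> fib (prd (fst Y) (fst Y)) \<Longrightarrow>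
   snd (q_prd D X Y) \<in> fib (prd (prd (fst X) (fst Y)) (prd (fst X) (fst Y)))"
proof -
  assume a: "fst X \<in> ob" "fst Y \<in> ob" "snd X \<in> fib (prd (fst X) (fst X))" "snd Y \<in> fib (prd (fst Y) (fst Y))"
  let ?AB = "prd (fst X) (fst Y)"
  have t: "times D ?AB ?AB (p1 (fst X) (fst Y)) (p1 (fst X) (fst Y)) \<in> hom (prd ?AB ?AB) (prd (fst X) (fst X))"
    "times D ?AB ?AB (p2 (fst X) (fst Y)) (p2 (fst X) (fst Y)) \<in> hom (prd ?AB ?AB) (prd (fst Y) (fst Y))"
    using a by (blast intro: times_hom ty0)+
  show ?thesis unfolding snd_qprd using rx_fib[OF t(1) a(3)] rx_fib[OF t(2) a(4)] a by simp
qed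

lemma rx_qprd:
  assumes X: "fst X \<in> ob" and Y: "fst Y \<in> ob" and sX: "snd X \<in> fib (prd (fst X) (fst X))" and sY: "snd Y \<in> fib (prd (fst Y) (fst Y))"
    and G: "G \<in> ob" and f: "f \<in> hom G (prd (fst X) (fst Y))" and g: "g \<in> hom G (prd (fst X) (fst Y))"
  shows "rx (pr f g) (snd (q_prd D X Y)) = mt G (rx (pr (cmp (p1 (fst X) (fst Y)) f) (cmp (p1 (fst X) (fst Y)) g)) (snd X))
                                             (rx (pr (cmp (p2 (fst X) (fst Y)) f) (cmp (p2 (fst X) (fst Y)) g)) (snd Y))"
proof -
  define A where "A = fst X"
  define B where "B = fst Y"
  define AB where "AB = prd A B"
  have ob: "A \<in> ob" "B \<in> ob" "AB \<in> ob" using X Y unfolding A_def B_def AB_def by auto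
  have t1: "times D AB AB (p1 A B) (p1 A B) \<in> hom (prd AB AB) (prd A A)" "times D AB AB (p2 A B) (p2 A B) \<in> hom (prd AB AB) (prd B B)"
    using ob unfolding AB_def by (blast intro: times_hom ty0)+
  have fg: "pr f g \<in> hom G (prd AB AB)" using f g G ob unfolding AB_def A_def B_def by (blast intro: ty0)
  have p: "p1 (fst X) (fst Y) \<in> hom (prd (fst X) (fst Y)) (fst X)" "p2 (fst X) (fst Y) \<in> hom (prd (fst X) (fst Y)) (fst Y)" using X Y by auto
  show ?thesis unfolding snd_qprd A_def[symmetric] B_def[symmetric] AB_def[symmetric]
    apply (subst rx_mt[OF fg])
    using t1 sX sY ob G apply (auto intro: rx_fib simp: A_def B_def)[4]
    apply (subst rx_rx[OF fg t1(1)], (use sX ob G A_def in auto)[4])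
    apply (subst rx_rx[OF fg t1(2)], (use sY ob G B_def in auto)[4])
    using times_pr[OF p(1) p(1) f g] times_pr[OF p(2) p(2) f g] ob G unfolding A_def B_def AB_def by simp
qed


lemma mt_mono: "le A x x' \<Longrightarrow> le A y y' \<Longrightarrow> A \<in> ob \<Longrightarrow> x \<in> fib A \<Longrightarrow> x' \<in> fib A \<Longrightarrow> y \<in> fib A \<Longrightarrow> y' \<in> fib A
  \<Longrightarrow> le A (mt A x y) (mt A x' y')"
  by (meson le_mt le_trans mt_fib mt_le1 mt_le2)

lemma mt4: "A \<in> ob \<Longrightarrow> a \<in> fib A \<Longrightarrow> b \<in> fib A \<Longrightarrow> c \<in> fib A \<Longrightarrow> d \<in> fib A \<Longrightarrow>
   le A (mt A (mt A a b) (mt A c d)) (mt A (mt A a c) (mt A b d))"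
  by (meson le_mt le_trans mt_fib mt_le1 mt_le2)

lemma teq_prd:
  assumes tx: "teq (fst X) (snd X)" and ty: "teq (fst Y) (snd Y)"
  shows "teq (prd (fst X) (fst Y)) (snd (q_prd D X Y))"
proof -
  define A where "A = fst X"
  define B where "B = fst Y"
  have ob: "A \<in> ob" "B \<in> ob" using tx ty teq_ob unfolding A_def B_def by auto
  have fs: "snd X \<in> fib (prd A A)" "snd Y \<in> fib (prd B B)" using tx ty teq_fib unfolding A_def B_def by auto
  have tx': "teq A (snd X)" and ty': "teq B (snd Y)" using tx ty unfolding A_def B_def by auto
  have "le G (tp G) (rx (pr a a) (snd (q_prd D X Y))) \<and> le G (rx (pr a b) (snd (q_prd D X Y))) (rx (pr b a) (snd (q_prd D X Y))) \<and>
     le G (mt G (rx (pr a b) (snd (q_prd D X Y))) (rx (pr b c) (snd (q_prd D X Y)))) (rx (pr a c) (snd (q_prd D X Y)))"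
    if G: "G \<in> ob" and a: "a \<in> hom G (prd A B)" and b: "b \<in> hom G (prd A B)" and c: "c \<in> hom G (prd A B)" for G a b c
  proof -
    have h1: "cmp (p1 A B) a \<in> hom G A" "cmp (p1 A B) b \<in> hom G A" "cmp (p1 A B) c \<in> hom G A"
      "cmp (p2 A B) a \<in> hom G B" "cmp (p2 A B) b \<in> hom G B" "cmp (p2 A B) c \<in> hom G B"
      using a b c G ob by (blast intro: ty0)+
    let ?a1 = "cmp (p1 A B) a" and ?b1 = "cmp (p1 A B) b" and ?c1 = "cmp (p1 A B) c"
    let ?a2 = "cmp (p2 A B) a" and ?b2 = "cmp (p2 A B) b" and ?c2 = "cmp (p2 A B) c"
    have R: "rx (pr u v) (snd (q_prd D X Y)) = mt G (rx (pr (cmp (p1 A B) u) (cmp (p1 A B) v)) (snd X)) (rx (pr (cmp (p2 A B) u) (cmp (p2 A B) v)) (snd Y))"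
      if "u \<in> hom G (prd A B)" "v \<in> hom G (prd A B)" for u v
      using rx_qprd[of X Y G u v] that ob fs G unfolding A_def B_def by simp
    have F1: "rx (pr x y) (snd X) \<in> fib G" if "x \<in> hom G A" "y \<in> hom G A" for x y
      using rx_fib[OF pr_hom[OF that G ob(1) ob(1)] fs(1)] G ob by simp
    have F2: "rx (pr x y) (snd Y) \<in> fib G" if "x \<in> hom G B" "y \<in> hom G B" for x y
      using rx_fib[OF pr_hom[OF that G ob(2) ob(2)] fs(2)] G ob by simp
    show ?thesis
    proof (intro conjI)
      show "le G (tp G) (rx (pr a a) (snd (q_prd D X Y)))" unfolding R[OF a a]
        using teq_refl[OF tx' G h1(1)] teq_refl[OF ty' G h1(4)] F1 F2 h1 G by (intro le_mt) auto
      show "le G (rx (pr a b) (snd (q_prd D X Y))) (rx (pr b a) (snd (q_prd D X Y)))" unfolding R[OF a b] R[OF b a]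
        using teq_sym[OF tx' G h1(1) h1(2)] teq_sym[OF ty' G h1(4) h1(5)] F1 F2 h1 G by (intro mt_mono) auto
      have "le G (mt G (mt G (rx (pr ?a1 ?b1) (snd X)) (rx (pr ?a2 ?b2) (snd Y))) (mt G (rx (pr ?b1 ?c1) (snd X)) (rx (pr ?b2 ?c2) (snd Y))))
             (mt G (mt G (rx (pr ?a1 ?b1) (snd X)) (rx (pr ?b1 ?c1) (snd X))) (mt G (rx (pr ?a2 ?b2) (snd Y)) (rx (pr ?b2 ?c2) (snd Y))))"
        using F1 F2 h1 G by (intro mt4) auto
      moreover have "le G (mt G (mt G (rx (pr ?a1 ?b1) (snd X)) (rx (pr ?b1 ?c1) (snd X))) (mt G (rx (pr ?a2 ?b2) (snd Y)) (rx (pr ?b2 ?c2) (snd Y))))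
             (mt G (rx (pr ?a1 ?c1) (snd X)) (rx (pr ?a2 ?c2) (snd Y)))"
        using teq_trans[OF tx' G h1(1-3)] teq_trans[OF ty' G h1(4-6)] F1 F2 h1 G by (intro mt_mono) auto
      ultimately show "le G (mt G (rx (pr a b) (snd (q_prd D X Y))) (rx (pr b c) (snd (q_prd D X Y)))) (rx (pr a c) (snd (q_prd D X Y)))"
        unfolding R[OF a b] R[OF b c] R[OF a c] using F1 F2 h1 G by (meson le_trans mt_fib)
    qed
  qed
  moreover have "snd (q_prd D X Y) \<in> fib (prd (prd A B) (prd A B))" using qprd_fib[of X Y] ob fs unfolding A_def B_def by simp
  ultimately show ?thesis unfolding teq_def A_def B_def using ob unfolding A_def B_def by auto
qed

lemma req_prd:
  assumes tx: "teq (fst X) (snd X)" and ty: "teq (fst Y) (snd Y)" and G: "G \<in> ob"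
    and f: "f \<in> hom G (prd (fst X) (fst Y))" and g: "g \<in> hom G (prd (fst X) (fst Y))"
  shows "req G (prd (fst X) (fst Y)) (snd (q_prd D X Y)) f g \<longleftrightarrow>
     req G (fst X) (snd X) (cmp (p1 (fst X) (fst Y)) f) (cmp (p1 (fst X) (fst Y)) g) \<and>
     req G (fst Y) (snd Y) (cmp (p2 (fst X) (fst Y)) f) (cmp (p2 (fst X) (fst Y)) g)"
proof -
  have ob: "fst X \<in> ob" "fst Y \<in> ob" using tx ty teq_ob by auto
  have fs: "snd X \<in> fib (prd (fst X) (fst X))" "snd Y \<in> fib (prd (fst Y) (fst Y))" using tx ty teq_fib by auto
  have h: "cmp (p1 (fst X) (fst Y)) f \<in> hom G (fst X)" "cmp (p1 (fst X) (fst Y)) g \<in> hom G (fst X)"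
    "cmp (p2 (fst X) (fst Y)) f \<in> hom G (fst Y)" "cmp (p2 (fst X) (fst Y)) g \<in> hom G (fst Y)"
    using f g G ob by (blast intro: ty0)+
  have F: "rx (pr (cmp (p1 (fst X) (fst Y)) f) (cmp (p1 (fst X) (fst Y)) g)) (snd X) \<in> fib G"
     "rx (pr (cmp (p2 (fst X) (fst Y)) f) (cmp (p2 (fst X) (fst Y)) g)) (snd Y) \<in> fib G"
    using rx_fib[OF pr_hom[OF h(1) h(2) G ob(1) ob(1)] fs(1)] rx_fib[OF pr_hom[OF h(3) h(4) G ob(2) ob(2)] fs(2)] G ob by auto
  show ?thesis unfolding req_def rx_qprd[OF ob fs G f g] using tp_le_mt[OF G F] f g h by auto
qed

subsection \<open>Descent-closed predicates\<close>

definition qfib :: "'o \<times> 'p \<Rightarrow> 'p \<Rightarrow> bool" where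
  "qfib X \<alpha> \<longleftrightarrow> \<alpha> \<in> fib (fst X) \<and> le (prd (fst X) (fst X))
      (mt (prd (fst X) (fst X)) (rx (p1 (fst X) (fst X)) \<alpha>) (snd X)) (rx (p2 (fst X) (fst X)) \<alpha>)"

lemma qfib_fib: "qfib X \<alpha> \<Longrightarrow> \<alpha> \<in> fib (fst X)" unfolding qfib_def by auto

lemma qfib_term:
  assumes q: "qfib X \<alpha>" and t: "teq (fst X) (snd X)" and G: "G \<in> ob" and a: "a \<in> hom G (fst X)" and b: "b \<in> hom G (fst X)"
  shows "le G (mt G (rx a \<alpha>) (rx (pr a b) (snd X))) (rx b \<alpha>)"
proof -
  define A where "A = fst X"
  have A: "A \<in> ob" and r: "snd X \<in> fib (prd A A)" using t teq_ob teq_fib unfolding A_def by auto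
  have al: "\<alpha> \<in> fib A" using q unfolding qfib_def A_def by auto
  have L: "le (prd A A) (mt (prd A A) (rx (p1 A A) \<alpha>) (snd X)) (rx (p2 A A) \<alpha>)" using q unfolding qfib_def A_def by auto
  have ab: "pr a b \<in> hom G (prd A A)" using a b G A unfolding A_def by (blast intro: ty0)
  have f: "rx (p1 A A) \<alpha> \<in> fib (prd A A)" "rx (p2 A A) \<alpha> \<in> fib (prd A A)" using al A by (blast intro: ty0 rx_fib)+
  have e: "rx (pr a b) (rx (p1 A A) \<alpha>) = rx a \<alpha>" "rx (pr a b) (rx (p2 A A) \<alpha>) = rx b \<alpha>"
    using rx_rx[OF ab _ al] G A a b unfolding A_def by (simp_all add: p1_pr[of _ G] p2_pr[of _ G])
  show ?thesis using rx_mono[OF L ab] f r e A G ab by simp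
qed

lemma qfib_intro:
  assumes al: "\<alpha> \<in> fib (fst X)" and A: "fst X \<in> ob" and r: "snd X \<in> fib (prd (fst X) (fst X))"
    and H: "le (prd (fst X) (fst X)) (mt (prd (fst X) (fst X)) (rx (p1 (fst X) (fst X)) \<alpha>) (rx (pr (p1 (fst X) (fst X)) (p2 (fst X) (fst X))) (snd X))) (rx (p2 (fst X) (fst X)) \<alpha>)"
  shows "qfib X \<alpha>"
  using al H A r unfolding qfib_def by simp

lemma req_rx:
  assumes q: "qfib X \<alpha>" and t: "teq (fst X) (snd X)" and G: "G \<in> ob" and fg: "req G (fst X) (snd X) f g"
  shows "rx f \<alpha> = rx g \<alpha>"
proof -
  have gf: "req G (fst X) (snd X) g f" using req_sym[OF t G fg] .
  have A: "fst X \<in> ob" and r: "snd X \<in> fib (prd (fst X) (fst X))" using t teq_ob teq_fib by auto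
  have h: "f \<in> hom G (fst X)" "g \<in> hom G (fst X)" using fg unfolding req_def by auto
  have al: "\<alpha> \<in> fib (fst X)" using q qfib_fib by auto
  have F: "rx f \<alpha> \<in> fib G" "rx g \<alpha> \<in> fib G" "rx (pr f g) (snd X) \<in> fib G" "rx (pr g f) (snd X) \<in> fib G"
    using h al G A r by (blast intro: ty0 rx_fib)+
  have "le G (rx f \<alpha>) (mt G (rx f \<alpha>) (rx (pr f g) (snd X)))" using fg F G unfolding req_def
    by (intro le_mt) (auto intro: le_trans)
  hence 1: "le G (rx f \<alpha>) (rx g \<alpha>)" using qfib_term[OF q t G h(1) h(2)] F G le_trans by (meson mt_fib)
  have "le G (rx g \<alpha>) (mt G (rx g \<alpha>) (rx (pr g f) (snd X)))" using gf F G unfolding req_def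
    by (intro le_mt) (auto intro: le_trans)
  hence 2: "le G (rx g \<alpha>) (rx f \<alpha>)" using qfib_term[OF q t G h(2) h(1)] F G le_trans by (meson mt_fib)
  show ?thesis using le_antisym[OF 1 2 G F(1,2)] .
qed

lemma qfib_rx:
  assumes m: "q_pres D X Y m" and tx: "teq (fst X) (snd X)" and ty: "teq (fst Y) (snd Y)" and q: "qfib Y \<alpha>"
  shows "qfib X (rx m \<alpha>)"
proof -
  define A where "A = fst X"
  have A: "A \<in> ob" "fst Y \<in> ob" and r: "snd X \<in> fib (prd A A)" "snd Y \<in> fib (prd (fst Y) (fst Y))"
    using tx ty teq_ob teq_fib unfolding A_def by auto
  have mh: "m \<in> hom A (fst Y)" using m unfolding q_pres_def A_def by auto
  have al: "\<alpha> \<in> fib (fst Y)" using q qfib_fib by auto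
  have p: "p1 A A \<in> hom (prd A A) A" "p2 A A \<in> hom (prd A A) A" using A by auto
  have mp: "cmp m (p1 A A) \<in> hom (prd A A) (fst Y)" "cmp m (p2 A A) \<in> hom (prd A A) (fst Y)" using mh A p by (blast intro: ty0)+
  have e: "rx (p1 A A) (rx m \<alpha>) = rx (cmp m (p1 A A)) \<alpha>" "rx (p2 A A) (rx m \<alpha>) = rx (cmp m (p2 A A)) \<alpha>"
    using rx_rx[OF p(1) mh al] rx_rx[OF p(2) mh al] A by auto
  have F: "rx (cmp m (p1 A A)) \<alpha> \<in> fib (prd A A)" "rx (cmp m (p2 A A)) \<alpha> \<in> fib (prd A A)"
    "rx (pr (p1 A A) (p2 A A)) (snd X) \<in> fib (prd A A)" "rx (pr (cmp m (p1 A A)) (cmp m (p2 A A))) (snd Y) \<in> fib (prd A A)"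
    using mp al A r p by (blast intro: ty0 rx_fib)+
  have "le (prd A A) (rx (pr (p1 A A) (p2 A A)) (snd X)) (rx (pr (cmp m (p1 A A)) (cmp m (p2 A A))) (snd Y))"
    using qpres_term[OF m _ A(2) r(2) _ _ p[unfolded A_def]] A r unfolding A_def by auto
  hence "le (prd A A) (mt (prd A A) (rx (p1 A A) (rx m \<alpha>)) (rx (pr (p1 A A) (p2 A A)) (snd X)))
                       (mt (prd A A) (rx (cmp m (p1 A A)) \<alpha>) (rx (pr (cmp m (p1 A A)) (cmp m (p2 A A))) (snd Y)))"
    unfolding e using F A by (intro mt_mono) auto
  moreover have "le (prd A A) (mt (prd A A) (rx (cmp m (p1 A A)) \<alpha>) (rx (pr (cmp m (p1 A A)) (cmp m (p2 A A))) (snd Y)))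
     (rx (cmp m (p2 A A)) \<alpha>)" using qfib_term[OF q ty _ mp] A by simp
  ultimately show ?thesis unfolding A_def[symmetric]
    using F A e rx_fib[OF mh al] r by (intro qfib_intro) (auto simp: A_def[symmetric] intro: le_trans)
qed

lemma qfib_eq: "A \<in> ob \<Longrightarrow> \<alpha> \<in> fib A \<Longrightarrow> qfib (A, eq A) \<alpha>"
  using eq_closed[of "prd A A" A "p1 A A" "p2 A A" \<alpha>] by (intro qfib_intro) auto

end

context actx begin

abbreviation "qobj X \<equiv> teq (fst X) (snd X)"

lemma qobj_ob: "qobj X \<Longrightarrow> fst X \<in> ob" using teq_ob by blast
lemma qobj_fib: "qobj X \<Longrightarrow> snd X \<in> fib (prd (fst X) (fst X))" using teq_fib by blast

lemma cls_self: "q_pres D X Y f \<Longrightarrow> f \<in> q_cls D X Y f"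
  unfolding q_cls_def q_pres_def by auto

lemma cls_pres: "g \<in> q_cls D X Y f \<Longrightarrow> q_pres D X Y g" unfolding q_cls_def by auto

lemma cls_req:
  assumes X: "qobj X" and Y: "qobj Y" and g: "g \<in> q_cls D X Y f" and f: "f \<in> hom (fst X) (fst Y)"
  shows "req (fst X) (fst Y) (snd Y) f g"
proof -
  define A where "A = fst X"
  define B where "B = fst Y"
  have ob: "A \<in> ob" "B \<in> ob" using X Y qobj_ob unfolding A_def B_def by auto
  have fs: "snd X \<in> fib (prd A A)" "snd Y \<in> fib (prd B B)" using X Y qobj_fib unfolding A_def B_def by auto
  have gh: "g \<in> hom A B" and L: "le (prd A A) (snd X) (rx (times D A A f g) (snd Y))"
    using g unfolding q_cls_def q_pres_def A_def B_def by auto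
  have fh: "f \<in> hom A B" using f unfolding A_def B_def .
  have tm: "times D A A f g \<in> hom (prd A A) (prd B B)" using fh gh ob by (blast intro: times_hom)
  have d: "diag D A \<in> hom A (prd A A)" using ob by simp
  have "le A (rx (diag D A) (snd X)) (rx (diag D A) (rx (times D A A f g) (snd Y)))"
    using rx_mono[OF L d] fs ob rx_fib[OF tm fs(2)] by simp
  moreover have "rx (diag D A) (rx (times D A A f g) (snd Y)) = rx (pr f g) (snd Y)"
    using rx_rx[OF d tm fs(2)] times_pr[OF fh gh idt_hom[OF ob(1)] idt_hom[OF ob(1)]] ob fh gh unfolding diag_def by simp
  moreover have "le A (tp A) (rx (diag D A) (snd X))" unfolding diag_def
    using teq_refl[OF X, of A "idt A"] ob unfolding A_def by simp
  moreover have "rx (diag D A) (snd X) \<in> fib A" "rx (pr f g) (snd Y) \<in> fib A"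
    using rx_fib[OF d fs(1)] rx_fib[OF pr_hom[OF fh gh] fs(2)] ob by auto
  ultimately show ?thesis unfolding req_def A_def[symmetric] B_def[symmetric] using fh gh ob
    le_trans[of A "tp A" "rx (diag D A) (snd X)" "rx (pr f g) (snd Y)"] by auto
qed

lemma cls_sub:
  assumes X: "qobj X" and Y: "qobj Y" and ff: "req (fst X) (fst Y) (snd Y) f f'"
  shows "q_cls D X Y f \<subseteq> q_cls D X Y f'"
proof
  fix g assume g: "g \<in> q_cls D X Y f"
  define A where "A = fst X"
  define B where "B = fst Y"
  have ob: "A \<in> ob" "B \<in> ob" "prd A A \<in> ob" using X Y qobj_ob unfolding A_def B_def by auto
  have fs: "snd X \<in> fib (prd A A)" "snd Y \<in> fib (prd B B)" using X Y qobj_fib unfolding A_def B_def by auto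
  have gh: "g \<in> hom A B" and L: "le (prd A A) (snd X) (rx (times D A A f g) (snd Y))" and gp: "q_pres D X Y g"
    using g unfolding q_cls_def q_pres_def A_def B_def by auto
  have fh: "f \<in> hom A B" "f' \<in> hom A B" using ff unfolding req_def A_def B_def by auto
  have Y': "teq B (snd Y)" using Y unfolding B_def .
  let ?x = "p1 A A" and ?y = "p2 A A"
  have xy: "?x \<in> hom (prd A A) A" "?y \<in> hom (prd A A) A" using ob by auto
  have h: "cmp f ?x \<in> hom (prd A A) B" "cmp f' ?x \<in> hom (prd A A) B" "cmp g ?y \<in> hom (prd A A) B"
    using fh gh xy ob by (blast intro: ty0)+
  have r: "req (prd A A) B (snd Y) (cmp f' ?x) (cmp f ?x)"
    using req_sym[OF Y' ob(3) req_pre[OF Y' _ ob(3) ff[unfolded A_def[symmetric] B_def[symmetric]] xy(1)]] ob by simp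
  have F: "rx (pr (cmp f' ?x) (cmp f ?x)) (snd Y) \<in> fib (prd A A)" "rx (pr (cmp f ?x) (cmp g ?y)) (snd Y) \<in> fib (prd A A)"
    "rx (pr (cmp f' ?x) (cmp g ?y)) (snd Y) \<in> fib (prd A A)"
    using h fs ob by (blast intro: ty0 rx_fib)+
  have "le (prd A A) (snd X) (mt (prd A A) (rx (pr (cmp f' ?x) (cmp f ?x)) (snd Y)) (rx (pr (cmp f ?x) (cmp g ?y)) (snd Y)))"
    using L le_trans[OF le_tp[OF ob(3) fs(1)] _ ob(3) fs(1) tp_fib[OF ob(3)] F(1)] r F fs ob unfolding times_def req_def
    by (intro le_mt) auto
  hence "le (prd A A) (snd X) (rx (pr (cmp f' ?x) (cmp g ?y)) (snd Y))"
    using teq_trans[OF Y' ob(3) h(2) h(1) h(3)] F fs ob by (meson le_trans mt_fib)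
  thus "g \<in> q_cls D X Y f'" using gp unfolding q_cls_def times_def A_def B_def by simp
qed

lemma cls_eq: "qobj X \<Longrightarrow> qobj Y \<Longrightarrow> req (fst X) (fst Y) (snd Y) f f' \<Longrightarrow> q_cls D X Y f = q_cls D X Y f'"
  using cls_sub req_sym qobj_ob by (metis subset_antisym)

lemma rep_mem: "q_pres D X Y f \<Longrightarrow> q_rep (X, Y, q_cls D X Y f) \<in> q_cls D X Y f"
  unfolding q_rep_def using cls_self by (metis someI_ex snd_conv)

lemma rep_req: "qobj X \<Longrightarrow> qobj Y \<Longrightarrow> q_pres D X Y f \<Longrightarrow> req (fst X) (fst Y) (snd Y) f (q_rep (X, Y, q_cls D X Y f))"
  using cls_req rep_mem qpres_hom by blast

lemma rep_pres: "q_pres D X Y f \<Longrightarrow> q_pres D X Y (q_rep (X, Y, q_cls D X Y f))"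
  using rep_mem cls_pres by blast


lemma cmp_assoc': "f \<in> hom A B \<Longrightarrow> g \<in> hom B C \<Longrightarrow> h \<in> hom C E \<Longrightarrow> A \<in> ob \<Longrightarrow> B \<in> ob \<Longrightarrow> C \<in> ob \<Longrightarrow> E \<in> ob
   \<Longrightarrow> cmp (cmp h g) f = cmp h (cmp g f)"
  using cmp_assoc by metis

lemma qpres_id: "qobj X \<Longrightarrow> q_pres D X X (idt (fst X))"
  using qobj_ob qobj_fib by (intro qpres_intro) (auto intro: rx_fib pr_hom)

lemma qpres_cmp:
  assumes X: "qobj X" and Y: "qobj Y" and Z: "qobj Z" and f: "q_pres D X Y f" and g: "q_pres D Y Z g"
  shows "q_pres D X Z (cmp g f)"
proof -
  define A where "A = fst X"
  have ob: "A \<in> ob" "fst Y \<in> ob" "fst Z \<in> ob" "prd A A \<in> ob" using X Y Z qobj_ob unfolding A_def by auto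
  have fs: "snd X \<in> fib (prd A A)" "snd Y \<in> fib (prd (fst Y) (fst Y))" "snd Z \<in> fib (prd (fst Z) (fst Z))"
    using X Y Z qobj_fib unfolding A_def by auto
  have fh: "f \<in> hom A (fst Y)" "g \<in> hom (fst Y) (fst Z)" using f g qpres_hom unfolding A_def by auto
  have p: "p1 A A \<in> hom (prd A A) A" "p2 A A \<in> hom (prd A A) A" using ob by auto
  have fp: "cmp f (p1 A A) \<in> hom (prd A A) (fst Y)" "cmp f (p2 A A) \<in> hom (prd A A) (fst Y)" using fh p ob by (blast intro: ty0)+
  have 1: "le (prd A A) (rx (pr (p1 A A) (p2 A A)) (snd X)) (rx (pr (cmp f (p1 A A)) (cmp f (p2 A A))) (snd Y))"
    unfolding A_def by (rule qpres_term[OF f _ ob(2) fs(2) _ _ p[unfolded A_def]]) (use ob fs A_def in auto)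
  have 2: "le (prd A A) (rx (pr (cmp f (p1 A A)) (cmp f (p2 A A))) (snd Y)) (rx (pr (cmp g (cmp f (p1 A A))) (cmp g (cmp f (p2 A A)))) (snd Z))"
    using qpres_term[OF g ob(2) ob(3) fs(3) fs(2) ob(4) fp] .
  have e: "cmp (cmp g f) (p1 A A) = cmp g (cmp f (p1 A A))" "cmp (cmp g f) (p2 A A) = cmp g (cmp f (p2 A A))"
    using cmp_assoc'[OF p(1) fh] cmp_assoc'[OF p(2) fh] ob by auto
  have F: "rx (pr (p1 A A) (p2 A A)) (snd X) \<in> fib (prd A A)" "rx (pr (cmp f (p1 A A)) (cmp f (p2 A A))) (snd Y) \<in> fib (prd A A)"
    "rx (pr (cmp g (cmp f (p1 A A))) (cmp g (cmp f (p2 A A)))) (snd Z) \<in> fib (prd A A)"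
    using p fp fh fs ob by (blast intro: ty0 rx_fib)+
  have "le (prd A A) (rx (pr (p1 A A) (p2 A A)) (snd X)) (rx (pr (cmp (cmp g f) (p1 A A)) (cmp (cmp g f) (p2 A A))) (snd Z))"
    unfolding e using le_trans[OF 1 2 ob(4) F] .
  moreover have "cmp g f \<in> hom A (fst Z)" using fh ob by (blast intro: ty0)
  ultimately show ?thesis using ob fs unfolding A_def by (intro qpres_intro) auto
qed

lemma qpres_p1:
  assumes X: "qobj X" and Y: "qobj Y"
  shows "q_pres D (q_prd D X Y) X (p1 (fst X) (fst Y))"
proof -
  define AB where "AB = prd (fst X) (fst Y)"
  have ob: "fst X \<in> ob" "fst Y \<in> ob" "AB \<in> ob" "prd AB AB \<in> ob" using X Y qobj_ob unfolding AB_def by auto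
  have fs: "snd X \<in> fib (prd (fst X) (fst X))" "snd Y \<in> fib (prd (fst Y) (fst Y))" using X Y qobj_fib by auto
  have p: "p1 AB AB \<in> hom (prd AB AB) (prd (fst X) (fst Y))" "p2 AB AB \<in> hom (prd AB AB) (prd (fst X) (fst Y))"
    using ob unfolding AB_def by auto
  have h: "cmp (p1 (fst X) (fst Y)) (p1 AB AB) \<in> hom (prd AB AB) (fst X)" "cmp (p1 (fst X) (fst Y)) (p2 AB AB) \<in> hom (prd AB AB) (fst X)"
    "cmp (p2 (fst X) (fst Y)) (p1 AB AB) \<in> hom (prd AB AB) (fst Y)" "cmp (p2 (fst X) (fst Y)) (p2 AB AB) \<in> hom (prd AB AB) (fst Y)"
    using p ob by (blast intro: ty0)+
  have F: "rx (pr (cmp (p1 (fst X) (fst Y)) (p1 AB AB)) (cmp (p1 (fst X) (fst Y)) (p2 AB AB))) (snd X) \<in> fib (prd AB AB)"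
    "rx (pr (cmp (p2 (fst X) (fst Y)) (p1 AB AB)) (cmp (p2 (fst X) (fst Y)) (p2 AB AB))) (snd Y) \<in> fib (prd AB AB)"
    using h fs ob by (blast intro: ty0 rx_fib)+
  have pp: "p1 (fst X) (fst Y) \<in> hom AB (fst X)" "p2 (fst X) (fst Y) \<in> hom AB (fst Y)" using ob unfolding AB_def by auto
  show ?thesis using rx_qprd[OF ob(1,2) fs ob(4) p] F ob fs qprd_fib[OF ob(1,2) fs] pp
    by (intro qpres_intro) (auto simp: AB_def[symmetric])
qed

lemma qpres_p2:
  assumes X: "qobj X" and Y: "qobj Y"
  shows "q_pres D (q_prd D X Y) Y (p2 (fst X) (fst Y))"
proof -
  define AB where "AB = prd (fst X) (fst Y)"
  have ob: "fst X \<in> ob" "fst Y \<in> ob" "AB \<in> ob" "prd AB AB \<in> ob" using X Y qobj_ob unfolding AB_def by auto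
  have fs: "snd X \<in> fib (prd (fst X) (fst X))" "snd Y \<in> fib (prd (fst Y) (fst Y))" using X Y qobj_fib by auto
  have p: "p1 AB AB \<in> hom (prd AB AB) (prd (fst X) (fst Y))" "p2 AB AB \<in> hom (prd AB AB) (prd (fst X) (fst Y))"
    using ob unfolding AB_def by auto
  have h: "cmp (p1 (fst X) (fst Y)) (p1 AB AB) \<in> hom (prd AB AB) (fst X)" "cmp (p1 (fst X) (fst Y)) (p2 AB AB) \<in> hom (prd AB AB) (fst X)"
    "cmp (p2 (fst X) (fst Y)) (p1 AB AB) \<in> hom (prd AB AB) (fst Y)" "cmp (p2 (fst X) (fst Y)) (p2 AB AB) \<in> hom (prd AB AB) (fst Y)"
    using p ob by (blast intro: ty0)+
  have F: "rx (pr (cmp (p1 (fst X) (fst Y)) (p1 AB AB)) (cmp (p1 (fst X) (fst Y)) (p2 AB AB))) (snd X) \<in> fib (prd AB AB)"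
    "rx (pr (cmp (p2 (fst X) (fst Y)) (p1 AB AB)) (cmp (p2 (fst X) (fst Y)) (p2 AB AB))) (snd Y) \<in> fib (prd AB AB)"
    using h fs ob by (blast intro: ty0 rx_fib)+
  have pp: "p1 (fst X) (fst Y) \<in> hom AB (fst X)" "p2 (fst X) (fst Y) \<in> hom AB (fst Y)" using ob unfolding AB_def by auto
  show ?thesis using rx_qprd[OF ob(1,2) fs ob(4) p] F ob fs qprd_fib[OF ob(1,2) fs] pp
    by (intro qpres_intro) (auto simp: AB_def[symmetric])
qed

lemma qpres_pr:
  assumes X: "qobj X" and Y1: "qobj Y1" and Y2: "qobj Y2" and f: "q_pres D X Y1 f" and g: "q_pres D X Y2 g"
  shows "q_pres D X (q_prd D Y1 Y2) (pr f g)"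
proof -
  define A where "A = fst X"
  have ob: "A \<in> ob" "fst Y1 \<in> ob" "fst Y2 \<in> ob" "prd A A \<in> ob" using X Y1 Y2 qobj_ob unfolding A_def by auto
  have fs: "snd X \<in> fib (prd A A)" "snd Y1 \<in> fib (prd (fst Y1) (fst Y1))" "snd Y2 \<in> fib (prd (fst Y2) (fst Y2))"
    using X Y1 Y2 qobj_fib unfolding A_def by auto
  have fh: "f \<in> hom A (fst Y1)" "g \<in> hom A (fst Y2)" using f g qpres_hom unfolding A_def by auto
  have p: "p1 A A \<in> hom (prd A A) A" "p2 A A \<in> hom (prd A A) A" using ob by auto
  have fgh: "pr f g \<in> hom A (prd (fst Y1) (fst Y2))" using fh ob by (blast intro: ty0)
  have q: "cmp (pr f g) (p1 A A) \<in> hom (prd A A) (prd (fst Y1) (fst Y2))" "cmp (pr f g) (p2 A A) \<in> hom (prd A A) (prd (fst Y1) (fst Y2))"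
    using fgh p ob by (blast intro: ty0)+
  have e: "cmp (p1 (fst Y1) (fst Y2)) (cmp (pr f g) (p1 A A)) = cmp f (p1 A A)" "cmp (p1 (fst Y1) (fst Y2)) (cmp (pr f g) (p2 A A)) = cmp f (p2 A A)"
    "cmp (p2 (fst Y1) (fst Y2)) (cmp (pr f g) (p1 A A)) = cmp g (p1 A A)" "cmp (p2 (fst Y1) (fst Y2)) (cmp (pr f g) (p2 A A)) = cmp g (p2 A A)"
    using cmp_assoc[OF p(1) fgh p1_hom] cmp_assoc[OF p(2) fgh p1_hom] cmp_assoc[OF p(1) fgh p2_hom] cmp_assoc[OF p(2) fgh p2_hom] ob fh
    by (auto simp: p1_pr[of _ A] p2_pr[of _ A])
  have 1: "le (prd A A) (rx (pr (p1 A A) (p2 A A)) (snd X)) (rx (pr (cmp f (p1 A A)) (cmp f (p2 A A))) (snd Y1))"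
    unfolding A_def by (rule qpres_term[OF f _ ob(2) fs(2) _ _ p[unfolded A_def]]) (use ob fs A_def in auto)
  have 2: "le (prd A A) (rx (pr (p1 A A) (p2 A A)) (snd X)) (rx (pr (cmp g (p1 A A)) (cmp g (p2 A A))) (snd Y2))"
    unfolding A_def by (rule qpres_term[OF g _ ob(3) fs(3) _ _ p[unfolded A_def]]) (use ob fs A_def in auto)
  have F: "rx (pr (cmp f (p1 A A)) (cmp f (p2 A A))) (snd Y1) \<in> fib (prd A A)" "rx (pr (cmp g (p1 A A)) (cmp g (p2 A A))) (snd Y2) \<in> fib (prd A A)"
    "rx (pr (p1 A A) (p2 A A)) (snd X) \<in> fib (prd A A)"
    using fh p fs ob by (blast intro: ty0 rx_fib)+
  have H: "le (prd A A) (rx (pr (p1 A A) (p2 A A)) (snd X)) (rx (pr (cmp (pr f g) (p1 A A)) (cmp (pr f g) (p2 A A))) (snd (q_prd D Y1 Y2)))"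
    apply (subst rx_qprd[OF ob(2,3) fs(2,3) ob(4) q])
    unfolding e using 1 2 F ob by (intro le_mt) auto
  show ?thesis using fgh ob fs qprd_fib[OF ob(2,3) fs(2,3)] H unfolding A_def by (intro qpres_intro) auto
qed

end

context actx begin

abbreviation "Q \<equiv> quotient_completion D"

lemma Q_simps:
  "d_ob Q = {X. p_equiv D (fst X) (snd X)}"
  "d_hom Q X Y = (if p_equiv D (fst X) (snd X) \<and> p_equiv D (fst Y) (snd Y) then {(X, Y, q_cls D X Y f) | f. q_pres D X Y f} else {})"
  "d_cmp Q G F = (fst F, fst (snd G), q_cls D (fst F) (fst (snd G)) (cmp (q_rep G) (q_rep F)))"
  "d_idt Q X = (X, X, q_cls D X X (idt (fst X)))"
  "d_trm Q = (trm, tp (prd trm trm))"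
  "d_prd Q = q_prd D"
  "d_pi1 Q X Y = (q_prd D X Y, X, q_cls D (q_prd D X Y) X (p1 (fst X) (fst Y)))"
  "d_pi2 Q X Y = (q_prd D X Y, Y, q_cls D (q_prd D X Y) Y (p2 (fst X) (fst Y)))"
  "d_pr Q F G = (fst F, q_prd D (fst (snd F)) (fst (snd G)), q_cls D (fst F) (q_prd D (fst (snd F)) (fst (snd G))) (pr (q_rep F) (q_rep G)))"
  "d_fib Q X = {\<alpha>. qfib X \<alpha>}"
  "d_le Q X = le (fst X)"
  "d_tp Q X = tp (fst X)"
  "d_mt Q X = mt (fst X)"
  "d_rx Q F = rx (q_rep F)"
  unfolding quotient_completion_def qfib_def by auto

lemma Qob: "X \<in> d_ob Q \<longleftrightarrow> qobj X" unfolding Q_simps pequiv_iff by simp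

lemma Qhom_char: "F \<in> d_hom Q X Y \<longleftrightarrow> qobj X \<and> qobj Y \<and> (\<exists>f. q_pres D X Y f \<and> F = (X, Y, q_cls D X Y f))"
  unfolding Q_simps pequiv_iff by auto

lemma Qhom_rep:
  assumes F: "F \<in> d_hom Q X Y"
  shows "qobj X" "qobj Y" "q_pres D X Y (q_rep F)" "F = (X, Y, q_cls D X Y (q_rep F))"
proof -
  obtain f where X: "qobj X" and Y: "qobj Y" and f: "q_pres D X Y f" and Fe: "F = (X, Y, q_cls D X Y f)"
    using F unfolding Qhom_char by blast
  have r: "q_rep F \<in> q_cls D X Y f" using rep_mem[OF f] Fe by simp
  show "qobj X" "qobj Y" using X Y by auto
  show "q_pres D X Y (q_rep F)" using r cls_pres by blast
  show "F = (X, Y, q_cls D X Y (q_rep F))" using Fe cls_eq[OF X Y cls_req[OF X Y r qpres_hom[OF f]]] by simp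
qed

lemma Qmk:
  assumes X: "qobj X" and Y: "qobj Y" and f: "q_pres D X Y f"
  shows "(X, Y, q_cls D X Y f) \<in> d_hom Q X Y" "req (fst X) (fst Y) (snd Y) f (q_rep (X, Y, q_cls D X Y f))"
  using X Y f rep_req[OF X Y f] unfolding Qhom_char by auto

lemma Qrep_hom: "F \<in> d_hom Q X Y \<Longrightarrow> q_rep F \<in> hom (fst X) (fst Y)"
  using Qhom_rep(3) qpres_hom by blast

lemma Qcmp:
  assumes F: "F \<in> d_hom Q X Y" and G: "G \<in> d_hom Q Y Z"
  shows "d_cmp Q G F = (X, Z, q_cls D X Z (cmp (q_rep G) (q_rep F)))"
    "d_cmp Q G F \<in> d_hom Q X Z"
    "req (fst X) (fst Z) (snd Z) (cmp (q_rep G) (q_rep F)) (q_rep (d_cmp Q G F))"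
proof -
  have X: "qobj X" and Y: "qobj Y" and Z: "qobj Z" using Qhom_rep[OF F] Qhom_rep[OF G] by auto
  have e: "d_cmp Q G F = (X, Z, q_cls D X Z (cmp (q_rep G) (q_rep F)))"
    using Qhom_rep(4)[OF F] Qhom_rep(4)[OF G] unfolding Q_simps by (metis fst_conv snd_conv)
  have p: "q_pres D X Z (cmp (q_rep G) (q_rep F))" using qpres_cmp[OF X Y Z Qhom_rep(3)[OF F] Qhom_rep(3)[OF G]] .
  show "d_cmp Q G F = (X, Z, q_cls D X Z (cmp (q_rep G) (q_rep F)))" by (rule e)
  show "d_cmp Q G F \<in> d_hom Q X Z" "req (fst X) (fst Z) (snd Z) (cmp (q_rep G) (q_rep F)) (q_rep (d_cmp Q G F))"
    unfolding e using Qmk[OF X Z p] by auto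
qed

lemma Qid:
  assumes X: "qobj X"
  shows "d_idt Q X \<in> d_hom Q X X" "req (fst X) (fst X) (snd X) (idt (fst X)) (q_rep (d_idt Q X))"
  unfolding Q_simps(4) using Qmk[OF X X qpres_id[OF X]] by auto

lemma Qp1:
  assumes X: "qobj X" and Y: "qobj Y"
  shows "d_pi1 Q X Y \<in> d_hom Q (q_prd D X Y) X" "req (prd (fst X) (fst Y)) (fst X) (snd X) (p1 (fst X) (fst Y)) (q_rep (d_pi1 Q X Y))"
  unfolding Q_simps(7) using Qmk[OF teq_prd[OF X Y, folded fst_qprd] X qpres_p1[OF X Y]] by auto

lemma Qp2:
  assumes X: "qobj X" and Y: "qobj Y"
  shows "d_pi2 Q X Y \<in> d_hom Q (q_prd D X Y) Y" "req (prd (fst X) (fst Y)) (fst Y) (snd Y) (p2 (fst X) (fst Y)) (q_rep (d_pi2 Q X Y))"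
  unfolding Q_simps(8) using Qmk[OF teq_prd[OF X Y, folded fst_qprd] Y qpres_p2[OF X Y]] by auto

lemma Qpr:
  assumes F: "F \<in> d_hom Q X Y1" and G: "G \<in> d_hom Q X Y2"
  shows "d_pr Q F G \<in> d_hom Q X (q_prd D Y1 Y2)"
    "req (fst X) (prd (fst Y1) (fst Y2)) (snd (q_prd D Y1 Y2)) (pr (q_rep F) (q_rep G)) (q_rep (d_pr Q F G))"
proof -
  have X: "qobj X" and Y1: "qobj Y1" and Y2: "qobj Y2" using Qhom_rep[OF F] Qhom_rep[OF G] by auto
  have e: "d_pr Q F G = (X, q_prd D Y1 Y2, q_cls D X (q_prd D Y1 Y2) (pr (q_rep F) (q_rep G)))"
    using Qhom_rep(4)[OF F] Qhom_rep(4)[OF G] unfolding Q_simps by (metis fst_conv snd_conv)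
  have p: "q_pres D X (q_prd D Y1 Y2) (pr (q_rep F) (q_rep G))" using qpres_pr[OF X Y1 Y2 Qhom_rep(3)[OF F] Qhom_rep(3)[OF G]] .
  show "d_pr Q F G \<in> d_hom Q X (q_prd D Y1 Y2)" "req (fst X) (prd (fst Y1) (fst Y2)) (snd (q_prd D Y1 Y2)) (pr (q_rep F) (q_rep G)) (q_rep (d_pr Q F G))"
    unfolding e using Qmk[OF X teq_prd[OF Y1 Y2, folded fst_qprd] p] by auto
qed

lemma teq_trm: "qobj (trm, tp (prd trm trm))"
  unfolding teq_def by (auto intro!: le_mt simp: rx_tp[OF pr_hom])

lemma Qbang:
  assumes X: "qobj X"
  shows "bang Q X \<in> d_hom Q X (d_trm Q)" "q_rep (bang Q X) = bang D (fst X)"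
proof -
  have p: "q_pres D X (trm, tp (prd trm trm)) (bang D (fst X))"
  proof -
    have A: "fst X \<in> ob" using qobj_ob[OF X] .
    have hb: "pr (cmp (bang D (fst X)) (p1 (fst X) (fst X))) (cmp (bang D (fst X)) (p2 (fst X) (fst X))) \<in> hom (prd (fst X) (fst X)) (prd trm trm)"
      using A by (blast intro: ty0 bang_hom)
    show ?thesis using X qobj_ob qobj_fib rx_tp[OF hb] A by (intro qpres_intro) auto
  qed
  have ex: "\<exists>t. t \<in> d_hom Q X (d_trm Q)" using Qmk(1)[OF X teq_trm p] unfolding Q_simps(5) by (rule exI)
  show b: "bang Q X \<in> d_hom Q X (d_trm Q)" unfolding bang_def using someI_ex[OF ex] .
  show "q_rep (bang Q X) = bang D (fst X)" using Qrep_hom[OF b] bang_uniq qobj_ob[OF X] unfolding Q_simps(5) by simp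
qed

end

context actx begin

lemma all_le:
  assumes e: "is_all D X Y f \<phi> e" and f: "f \<in> hom X Y" and X: "X \<in> ob" and Y: "Y \<in> ob" and ph: "\<phi> \<in> fib X" and ps: "\<psi> \<in> fib Y"
  shows "le Y \<psi> e \<longleftrightarrow> le X (rx f \<psi>) \<phi>"
proof
  have ef: "e \<in> fib Y" and c: "le X (rx f e) \<phi>" using e unfolding is_all_def by auto
  assume "le Y \<psi> e"
  hence "le X (rx f \<psi>) (rx f e)" using rx_mono f ps ef X Y by blast
  thus "le X (rx f \<psi>) \<phi>" using c le_trans X ph rx_fib[OF f ps X Y] rx_fib[OF f ef X Y] by blast
next
  assume "le X (rx f \<psi>) \<phi>" thus "le Y \<psi> e" using e ps unfolding is_all_def by auto
qed

lemma ex_le: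
  assumes e: "is_ex D X Y f \<phi> e" and f: "f \<in> hom X Y" and X: "X \<in> ob" and Y: "Y \<in> ob" and ph: "\<phi> \<in> fib X" and ps: "\<psi> \<in> fib Y"
  shows "le Y e \<psi> \<longleftrightarrow> le X \<phi> (rx f \<psi>)"
proof
  have ef: "e \<in> fib Y" and c: "le X \<phi> (rx f e)" using e unfolding is_ex_def by auto
  assume "le Y e \<psi>"
  hence "le X (rx f e) (rx f \<psi>)" using rx_mono f ps ef X Y by blast
  thus "le X \<phi> (rx f \<psi>)" using c le_trans X ph rx_fib[OF f ps X Y] rx_fib[OF f ef X Y] by blast
next
  assume "le X \<phi> (rx f \<psi>)" thus "le Y e \<psi>" using e ps unfolding is_ex_def by auto
qed

lemma all_fib: "is_all D X Y f \<phi> e \<Longrightarrow> e \<in> fib Y" unfolding is_all_def by auto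
lemma ex_fib: "is_ex D X Y f \<phi> e \<Longrightarrow> e \<in> fib Y" unfolding is_ex_def by auto

lemma quant_all: "A \<in> ob \<Longrightarrow> B \<in> ob \<Longrightarrow> \<phi> \<in> fib (prd A B) \<Longrightarrow> \<exists>e. is_all D (prd A B) A (p1 A B) \<phi> e"
  using quant unfolding quantifiers_def by blast
lemma quant_ex: "A \<in> ob \<Longrightarrow> B \<in> ob \<Longrightarrow> \<phi> \<in> fib (prd A B) \<Longrightarrow> \<exists>e. is_ex D (prd A B) A (p1 A B) \<phi> e"
  using quant unfolding quantifiers_def by blast

lemma bc_all: "is_all D (prd A B) A (p1 A B) \<phi> e \<Longrightarrow> f \<in> hom X A \<Longrightarrow> A \<in> ob \<Longrightarrow> B \<in> ob \<Longrightarrow> X \<in> ob \<Longrightarrow> \<phi> \<in> fib (prd A B) \<Longrightarrow>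
   is_all D (prd X B) X (p1 X B) (rx (times D X B f (idt B)) \<phi>) (rx f e)"
  using bc unfolding beck_chevalley_def by blast

lemma ex_bang:
  assumes A: "A \<in> ob" and ph: "\<phi> \<in> fib A"
  shows "\<exists>e. is_ex D A trm (bang D A) \<phi> e"
proof -
  have p: "p1 trm A \<in> hom (prd trm A) trm" "p2 trm A \<in> hom (prd trm A) A" using A by auto
  have ph2: "rx (p2 trm A) \<phi> \<in> fib (prd trm A)" using rx_fib[OF p(2) ph] A by auto
  obtain e where e: "is_ex D (prd trm A) trm (p1 trm A) (rx (p2 trm A) \<phi>) e" using quant_ex[OF trm_ob A ph2] by blast
  have ef: "e \<in> fib trm" using e ex_fib by blast
  have j: "pr (bang D A) (idt A) \<in> hom A (prd trm A)" using A by (blast intro: ty0 bang_hom)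
  have bp: "cmp (bang D A) (p2 trm A) = p1 trm A" using bang_uniq[of "prd trm A" "cmp (bang D A) (p2 trm A)"] bang_uniq[of "prd trm A" "p1 trm A"] A p
    by (metis bang_hom cmp_hom prd_ob trm_ob)
  have ch: "le Y' e \<psi> \<longleftrightarrow> le A \<phi> (rx (bang D A) \<psi>)" if ps: "\<psi> \<in> fib trm" and "Y' = trm" for \<psi> Y'
  proof -
    have "le trm e \<psi> \<longleftrightarrow> le (prd trm A) (rx (p2 trm A) \<phi>) (rx (p1 trm A) \<psi>)"
      using ex_le[OF e p(1) _ trm_ob ph2 ps] A by simp
    also have "\<dots> \<longleftrightarrow> le A \<phi> (rx (bang D A) \<psi>)"
    proof
      assume L: "le (prd trm A) (rx (p2 trm A) \<phi>) (rx (p1 trm A) \<psi>)"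
      have "le A (rx (pr (bang D A) (idt A)) (rx (p2 trm A) \<phi>)) (rx (pr (bang D A) (idt A)) (rx (p1 trm A) \<psi>))"
        using rx_mono[OF L j] ph2 rx_fib[OF p(1) ps] A by simp
      thus "le A \<phi> (rx (bang D A) \<psi>)" using rx_rx[OF j p(2) ph] rx_rx[OF j p(1) ps] A ph
        by (simp add: p1_pr[of _ A] p2_pr[of _ A])
    next
      assume L: "le A \<phi> (rx (bang D A) \<psi>)"
      have "le (prd trm A) (rx (p2 trm A) \<phi>) (rx (p2 trm A) (rx (bang D A) \<psi>))"
        using rx_mono[OF L p(2)] ph rx_fib[OF bang_hom[OF A] ps] A by simp
      thus "le (prd trm A) (rx (p2 trm A) \<phi>) (rx (p1 trm A) \<psi>)" using rx_rx[OF p(2) bang_hom[OF A] ps] bp A by simp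
    qed
    finally show ?thesis using that by simp
  qed
  have "is_ex D A trm (bang D A) \<phi> e" unfolding is_ex_def using ef ch[OF ef] le_refl[OF trm_ob ef] ch by auto
  thus ?thesis by blast
qed


lemma eq_rel:
  assumes t: "teq B \<sigma>" and G: "G \<in> ob" and A: "A \<in> ob" and u: "u \<in> hom (prd G A) B" and s: "s \<in> hom G A" and tt: "t \<in> hom G A"
  shows "le G (rx (pr s t) (eq A)) (rx (pr (cmp u (pr (idt G) s)) (cmp u (pr (idt G) t))) \<sigma>)"
proof -
  have B: "B \<in> ob" and sf: "\<sigma> \<in> fib (prd B B)" using t teq_ob teq_fib by auto
  have js: "pr (idt G) s \<in> hom G (prd G A)" and jt: "pr (idt G) t \<in> hom G (prd G A)" using G A s tt by (blast intro: ty0)+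
  have us: "cmp u (pr (idt G) s) \<in> hom G B" and ut: "cmp u (pr (idt G) t) \<in> hom G B" using js jt u G A B by (blast intro: ty0)+
  have v: "cmp (cmp u (pr (idt G) s)) (p1 G A) \<in> hom (prd G A) B" using us G A B by (blast intro: ty0)
  define \<phi> where "\<phi> = rx (pr (cmp (cmp u (pr (idt G) s)) (p1 G A)) u) \<sigma>"
  have ph: "\<phi> \<in> fib (prd G A)" unfolding \<phi>_def using v u G A B sf by (blast intro: ty0 rx_fib)
  have 1: "rx (pr (idt G) s) \<phi> = rx (pr (cmp u (pr (idt G) s)) (cmp u (pr (idt G) s))) \<sigma>" unfolding \<phi>_def
    using subst_at[OF s v u sf G A B B] sp1[OF s us G A B] by simp
  have 2: "rx (pr (idt G) t) \<phi> = rx (pr (cmp u (pr (idt G) s)) (cmp u (pr (idt G) t))) \<sigma>" unfolding \<phi>_def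
    using subst_at[OF tt v u sf G A B B] sp1[OF tt us G A B] by simp
  have r: "le G (tp G) (rx (pr (idt G) s) \<phi>)" unfolding 1 using teq_refl[OF t G us] .
  have F: "rx (pr (idt G) s) \<phi> \<in> fib G" "rx (pr s t) (eq A) \<in> fib G" "rx (pr (idt G) t) \<phi> \<in> fib G"
    using rx_fib[OF js ph] rx_fib[OF pr_hom[OF s tt G A A] eq_fib[OF A]] rx_fib[OF jt ph] G A by auto
  have "le G (rx (pr s t) (eq A)) (mt G (rx (pr (idt G) s) \<phi>) (rx (pr s t) (eq A)))"
    using r F G le_trans[OF le_tp[OF G F(2)] r] by (intro le_mt) auto
  thus ?thesis using eq_subst[OF G A ph s tt] 2 F G le_trans by (metis mt_fib)
qed

end

locale omctx = actx D eq for D :: "('o,'m,'p) doctrine" and eq +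
  fixes W N B :: 'o and ev :: 'm and \<sigma> :: 'p
  assumes W: "W \<in> d_ob D" and N: "N \<in> d_ob D" and B: "B \<in> d_ob D" and ev: "ev \<in> d_hom D (d_prd D W N) B"
    and sig: "teq B \<sigma>"
begin

definition Ev :: "'o \<Rightarrow> 'm \<Rightarrow> 'm" where "Ev G c = cmp ev (pr (cmp c (p1 G N)) (p2 G N))"

lemma Ev_hom: "G \<in> ob \<Longrightarrow> c \<in> hom G W \<Longrightarrow> Ev G c \<in> hom (prd G N) B"
  unfolding Ev_def using W N B ev by (blast intro: ty0)

lemma Ev_pr: "G \<in> ob \<Longrightarrow> G' \<in> ob \<Longrightarrow> c \<in> hom G W \<Longrightarrow> u \<in> hom G' G \<Longrightarrow> v \<in> hom G' N \<Longrightarrow>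
  cmp (Ev G c) (pr u v) = cmp ev (pr (cmp c u) v)"
proof -
  assume a: "G \<in> ob" "G' \<in> ob" "c \<in> hom G W" "u \<in> hom G' G" "v \<in> hom G' N"
  have h: "pr (cmp c (p1 G N)) (p2 G N) \<in> hom (prd G N) (prd W N)" "pr u v \<in> hom G' (prd G N)" "cmp c (p1 G N) \<in> hom (prd G N) W"
    using a W N by (blast intro: ty0)+
  have "cmp (Ev G c) (pr u v) = cmp ev (cmp (pr (cmp c (p1 G N)) (p2 G N)) (pr u v))"
    unfolding Ev_def using cmp_assoc'[OF h(2) h(1) ev] a W N B by simp
  also have "\<dots> = cmp ev (pr (cmp c u) v)"
    using pr_cmp[OF h(3) p2_hom h(2)] a W N c_p1[OF a(4) a(5) a(3)] by (simp add: p2_pr[of _ G'])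
  finally show ?thesis .
qed

abbreviation "WW \<equiv> prd W W"
definition "psi = rx (pr (Ev WW (p1 W W)) (Ev WW (p2 W W))) \<sigma>"
definition "omega = (SOME e. is_all D (prd WW N) WW (p1 WW N) psi e)"

lemma sig_ob: "B \<in> ob" and sig_fib: "\<sigma> \<in> fib (prd B B)" using sig teq_ob teq_fib by auto

lemma psi_fib: "psi \<in> fib (prd WW N)"
  unfolding psi_def using Ev_hom[of WW "p1 W W"] Ev_hom[of WW "p2 W W"] W N B sig_fib by (blast intro: ty0 rx_fib)

lemma omega_is_all: "is_all D (prd WW N) WW (p1 WW N) psi omega"
  unfolding omega_def using quant_all[OF _ N psi_fib] W by (metis someI_ex prd_ob)

lemma omega_fib: "omega \<in> fib WW" using omega_is_all all_fib by blast

lemma omega_all: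
  assumes G: "G \<in> ob" and a: "a \<in> hom G W" and b: "b \<in> hom G W"
  shows "is_all D (prd G N) G (p1 G N) (rx (pr (Ev G a) (Ev G b)) \<sigma>) (rx (pr a b) omega)"
proof -
  have ab: "pr a b \<in> hom G WW" using a b G W by (blast intro: ty0)
  have tm: "times D G N (pr a b) (idt N) \<in> hom (prd G N) (prd WW N)" using ab G W N by (blast intro: times_hom ty0)
  have tme: "times D G N (pr a b) (idt N) = pr (cmp (pr a b) (p1 G N)) (p2 G N)" unfolding times_def using G N by simp
  have c1: "cmp (pr a b) (p1 G N) \<in> hom (prd G N) WW" using ab G N W by (blast intro: ty0)
  have e1: "cmp (p1 W W) (cmp (pr a b) (p1 G N)) = cmp a (p1 G N)" "cmp (p2 W W) (cmp (pr a b) (p1 G N)) = cmp b (p1 G N)"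
    using cmp_assoc[OF p1_hom ab p1_hom] cmp_assoc[OF p1_hom ab p2_hom] G N W a b by (auto simp: p1_pr[of _ G] p2_pr[of _ G])
  have "rx (times D G N (pr a b) (idt N)) psi = rx (pr (Ev G a) (Ev G b)) \<sigma>"
    unfolding psi_def
    apply (subst rx_rx_pr[OF Ev_hom[OF _ p1_hom] Ev_hom[OF _ p2_hom] tm sig_fib])
    using G W N B apply auto[6]
    unfolding tme using Ev_pr[OF _ _ _ c1 p2_hom] e1 G N W unfolding Ev_def by simp
  thus ?thesis using bc_all[OF omega_is_all ab _ N G psi_fib] W by simp
qed

lemma Evs_fib: "G \<in> ob \<Longrightarrow> a \<in> hom G W \<Longrightarrow> b \<in> hom G W \<Longrightarrow> rx (pr (Ev G a) (Ev G b)) \<sigma> \<in> fib (prd G N)"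
  using Ev_hom[of G a] Ev_hom[of G b] sig_fib N B by (blast intro: ty0 rx_fib)

lemma omega_le:
  assumes G: "G \<in> ob" and a: "a \<in> hom G W" and b: "b \<in> hom G W" and ch: "\<chi> \<in> fib G"
  shows "le G \<chi> (rx (pr a b) omega) \<longleftrightarrow> le (prd G N) (rx (p1 G N) \<chi>) (rx (pr (Ev G a) (Ev G b)) \<sigma>)"
  using all_le[OF omega_all[OF G a b] p1_hom _ G _ ch] G N Evs_fib[OF G a b] by auto

lemma omega_rx_fib: "G \<in> ob \<Longrightarrow> a \<in> hom G W \<Longrightarrow> b \<in> hom G W \<Longrightarrow> rx (pr a b) omega \<in> fib G"
  using omega_fib W by (blast intro: ty0 rx_fib)

lemma omega_counit:
  assumes G: "G \<in> ob" and a: "a \<in> hom G W" and b: "b \<in> hom G W"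
  shows "le (prd G N) (rx (p1 G N) (rx (pr a b) omega)) (rx (pr (Ev G a) (Ev G b)) \<sigma>)"
  using omega_le[OF G a b omega_rx_fib[OF G a b]] G omega_rx_fib[OF G a b] by simp

lemma omega_inst:
  assumes G: "G \<in> ob" and a: "a \<in> hom G W" and b: "b \<in> hom G W" and n: "n \<in> hom G N"
  shows "le G (rx (pr a b) omega) (rx (pr (cmp ev (pr a n)) (cmp ev (pr b n))) \<sigma>)"
proof -
  have j: "pr (idt G) n \<in> hom G (prd G N)" using G N n by (blast intro: ty0)
  have F: "rx (pr a b) omega \<in> fib G" using omega_rx_fib[OF G a b] .
  have "le G (rx (pr (idt G) n) (rx (p1 G N) (rx (pr a b) omega))) (rx (pr (idt G) n) (rx (pr (Ev G a) (Ev G b)) \<sigma>))"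
    using rx_mono[OF omega_counit[OF G a b] j] F G N Evs_fib[OF G a b] rx_fib[OF p1_hom F] by auto
  moreover have "rx (pr (idt G) n) (rx (p1 G N) (rx (pr a b) omega)) = rx (pr a b) omega"
    using rx_rx[OF j p1_hom F] G N n F by (simp add: p1_pr[of _ G])
  moreover have "rx (pr (idt G) n) (rx (pr (Ev G a) (Ev G b)) \<sigma>) = rx (pr (cmp ev (pr a n)) (cmp ev (pr b n))) \<sigma>"
    using rx_rx_pr[OF Ev_hom[OF G a] Ev_hom[OF G b] j sig_fib] Ev_pr[OF G G a idt_hom[OF G] n] Ev_pr[OF G G b idt_hom[OF G] n] G N B a b W
    by (simp add: cmp_idr[OF a] cmp_idr[OF b])
  ultimately show ?thesis by simp
qed


lemma teq_omega: "teq W omega"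
proof -
  have "le G (tp G) (rx (pr a a) omega) \<and> le G (rx (pr a b) omega) (rx (pr b a) omega) \<and>
     le G (mt G (rx (pr a b) omega) (rx (pr b c) omega)) (rx (pr a c) omega)"
    if G: "G \<in> ob" and a: "a \<in> hom G W" and b: "b \<in> hom G W" and c: "c \<in> hom G W" for G a b c
  proof (intro conjI)
    have GN: "prd G N \<in> ob" "p1 G N \<in> hom (prd G N) G" using G N by auto
    have E: "Ev G a \<in> hom (prd G N) B" "Ev G b \<in> hom (prd G N) B" "Ev G c \<in> hom (prd G N) B" using Ev_hom G a b c by auto
    have O: "rx (pr a b) omega \<in> fib G" "rx (pr b c) omega \<in> fib G" "rx (pr a a) omega \<in> fib G"
      using omega_rx_fib G a b c by auto
    have S: "rx (pr (Ev G a) (Ev G b)) \<sigma> \<in> fib (prd G N)" "rx (pr (Ev G b) (Ev G a)) \<sigma> \<in> fib (prd G N)"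
      "rx (pr (Ev G b) (Ev G c)) \<sigma> \<in> fib (prd G N)" "rx (pr (Ev G a) (Ev G c)) \<sigma> \<in> fib (prd G N)"
      using Evs_fib G a b c by auto
    have P: "rx (p1 G N) (rx (pr a b) omega) \<in> fib (prd G N)" "rx (p1 G N) (rx (pr b c) omega) \<in> fib (prd G N)"
      using rx_fib[OF GN(2) O(1)] rx_fib[OF GN(2) O(2)] G N by auto
    show "le G (tp G) (rx (pr a a) omega)" using omega_le[OF G a a tp_fib[OF G]] teq_refl[OF sig GN(1) E(1)] GN G by simp
    show "le G (rx (pr a b) omega) (rx (pr b a) omega)"
      using omega_le[OF G b a O(1)] omega_counit[OF G a b] teq_sym[OF sig GN(1) E(1) E(2)] le_trans GN S P by blast
    have MM: "le (prd G N) (rx (p1 G N) (mt G (rx (pr a b) omega) (rx (pr b c) omega)))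
       (mt (prd G N) (rx (pr (Ev G a) (Ev G b)) \<sigma>) (rx (pr (Ev G b) (Ev G c)) \<sigma>))"
      using rx_mt[OF GN(2) O(1) O(2)] G N omega_counit[OF G a b] omega_counit[OF G b c] S P by (auto intro: mt_mono)
    have "le (prd G N) (rx (p1 G N) (mt G (rx (pr a b) omega) (rx (pr b c) omega))) (rx (pr (Ev G a) (Ev G c)) \<sigma>)"
      by (rule le_trans[OF MM teq_trans[OF sig GN(1) E] GN(1) _ mt_fib[OF GN(1) S(1) S(3)] S(4)])
         (use rx_fib[OF GN(2) mt_fib[OF G O(1) O(2)]] G GN in simp)
    thus "le G (mt G (rx (pr a b) omega) (rx (pr b c) omega)) (rx (pr a c) omega)"
      using omega_le[OF G a c mt_fib[OF G O(1) O(2)]] by simp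
  qed
  thus ?thesis unfolding teq_def using W omega_fib by auto
qed


lemma ev_qpres: "q_pres D (q_prd D (W, omega) (N, eq N)) (B, \<sigma>) ev"
proof -
  define WN where "WN = prd W N"
  define G where "G = prd WN WN"
  define P1 where "P1 = p1 WN WN"
  define P2 where "P2 = p2 WN WN"
  have ob: "WN \<in> ob" "G \<in> ob" using W N unfolding WN_def G_def by auto
  have P: "P1 \<in> hom G (prd W N)" "P2 \<in> hom G (prd W N)" unfolding P1_def P2_def G_def WN_def using W N by auto
  define w1 where "w1 = cmp (p1 W N) P1"
  define w2 where "w2 = cmp (p1 W N) P2"
  define n1 where "n1 = cmp (p2 W N) P1"
  define n2 where "n2 = cmp (p2 W N) P2"
  have h: "w1 \<in> hom G W" "w2 \<in> hom G W" "n1 \<in> hom G N" "n2 \<in> hom G N"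
    unfolding w1_def w2_def n1_def n2_def using P ob W N by (blast intro: ty0)+
  have e1: "pr w1 n1 = P1" "pr w2 n2 = P2" unfolding w1_def w2_def n1_def n2_def
    using pr_uniq[OF P(1)] pr_uniq[OF P(2)] ob W N by auto
  have R: "rx (pr P1 P2) (snd (q_prd D (W, omega) (N, eq N))) = mt G (rx (pr w1 w2) omega) (rx (pr n1 n2) (eq N))"
    using rx_qprd[of "(W,omega)" "(N, eq N)" G P1 P2] W N omega_fib ob P unfolding w1_def w2_def n1_def n2_def by simp
  have u: "Ev G w2 \<in> hom (prd G N) B" using Ev_hom[OF ob(2) h(2)] .
  have e2: "cmp (Ev G w2) (pr (idt G) n1) = cmp ev (pr w2 n1)" "cmp (Ev G w2) (pr (idt G) n2) = cmp ev (pr w2 n2)"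
    using Ev_pr[OF ob(2) ob(2) h(2) idt_hom[OF ob(2)] h(3)] Ev_pr[OF ob(2) ob(2) h(2) idt_hom[OF ob(2)] h(4)] cmp_idr[OF h(2)] ob W by auto
  have 1: "le G (rx (pr w1 w2) omega) (rx (pr (cmp ev P1) (cmp ev (pr w2 n1))) \<sigma>)"
    using omega_inst[OF ob(2) h(1) h(2) h(3)] e1 by simp
  have 2: "le G (rx (pr n1 n2) (eq N)) (rx (pr (cmp ev (pr w2 n1)) (cmp ev P2)) \<sigma>)"
    using eq_rel[OF sig ob(2) N u h(3) h(4)] e1 e2 by simp
  have c: "cmp ev P1 \<in> hom G B" "cmp ev (pr w2 n1) \<in> hom G B" "cmp ev P2 \<in> hom G B"
    using P h ev ob W N B by (blast intro: ty0)+
  have F: "rx (pr w1 w2) omega \<in> fib G" "rx (pr n1 n2) (eq N) \<in> fib G"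
    "rx (pr (cmp ev P1) (cmp ev (pr w2 n1))) \<sigma> \<in> fib G" "rx (pr (cmp ev (pr w2 n1)) (cmp ev P2)) \<sigma> \<in> fib G"
    "rx (pr (cmp ev P1) (cmp ev P2)) \<sigma> \<in> fib G"
    using omega_rx_fib[OF ob(2) h(1,2)] h c ob N B sig_fib by (blast intro: ty0 rx_fib eq_fib)+
  have "le G (mt G (rx (pr w1 w2) omega) (rx (pr n1 n2) (eq N))) (rx (pr (cmp ev P1) (cmp ev P2)) \<sigma>)"
    using le_trans[OF mt_mono[OF 1 2 ob(2) F(1) F(3) F(2) F(4)] teq_trans[OF sig ob(2) c] ob(2) _ _ F(5)] F ob by simp
  thus ?thesis using R ev W N B sig_fib omega_fib qprd_fib[of "(W,omega)" "(N, eq N)"]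
    unfolding G_def P1_def P2_def WN_def by (intro qpres_intro) auto
qed

end

context actx begin

lemma Qtimes:
  assumes H: "H \<in> d_hom Q X Y" and A: "qobj A"
  defines "T \<equiv> Defs.times Q X A H (d_idt Q A)"
  shows "T \<in> d_hom Q (q_prd D X A) (q_prd D Y A)"
    "req (prd (fst X) (fst A)) (prd (fst Y) (fst A)) (snd (q_prd D Y A)) (Defs.times D (fst X) (fst A) (q_rep H) (idt (fst A))) (q_rep T)"
proof -
  have X: "qobj X" and Y: "qobj Y" using Qhom_rep[OF H] by auto
  have ob: "fst X \<in> ob" "fst Y \<in> ob" "fst A \<in> ob" using X Y A qobj_ob by auto
  let ?XA = "prd (fst X) (fst A)"
  have XA: "?XA \<in> ob" using ob by simp
  have XAo: "qobj (q_prd D X A)" using teq_prd[OF X A] by simp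
  let ?r = "q_rep H"
  have rp: "q_pres D X Y ?r" and rh: "?r \<in> hom (fst X) (fst Y)" using Qhom_rep[OF H] qpres_hom by auto
  define C1 where "C1 = d_cmp Q H (d_pi1 Q X A)"
  define C2 where "C2 = d_cmp Q (d_idt Q A) (d_pi2 Q X A)"
  have P1: "d_pi1 Q X A \<in> d_hom Q (q_prd D X A) X" and P1r: "req ?XA (fst X) (snd X) (p1 (fst X) (fst A)) (q_rep (d_pi1 Q X A))"
    using Qp1[OF X A] by auto
  have P2: "d_pi2 Q X A \<in> d_hom Q (q_prd D X A) A" and P2r: "req ?XA (fst A) (snd A) (p2 (fst X) (fst A)) (q_rep (d_pi2 Q X A))"
    using Qp2[OF X A] by auto
  have I: "d_idt Q A \<in> d_hom Q A A" and Ir: "req (fst A) (fst A) (snd A) (idt (fst A)) (q_rep (d_idt Q A))" using Qid[OF A] by auto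
  have C1h: "C1 \<in> d_hom Q (q_prd D X A) Y" and C1r: "req ?XA (fst Y) (snd Y) (cmp ?r (q_rep (d_pi1 Q X A))) (q_rep C1)"
    using Qcmp[OF P1 H] unfolding C1_def by auto
  have C2h: "C2 \<in> d_hom Q (q_prd D X A) A" and C2r: "req ?XA (fst A) (snd A) (cmp (q_rep (d_idt Q A)) (q_rep (d_pi2 Q X A))) (q_rep C2)"
    using Qcmp[OF P2 I] unfolding C2_def by auto
  have p1r: "q_rep (d_pi1 Q X A) \<in> hom ?XA (fst X)" and p2r: "q_rep (d_pi2 Q X A) \<in> hom ?XA (fst A)"
    using P1r P2r unfolding req_def by auto
  have a1: "req ?XA (fst Y) (snd Y) (cmp ?r (p1 (fst X) (fst A))) (q_rep C1)"
    using req_trans[OF Y XA req_post[OF rp X Y XA P1r] C1r] .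
  have "req ?XA (fst A) (snd A) (cmp (idt (fst A)) (q_rep (d_pi2 Q X A))) (cmp (q_rep (d_idt Q A)) (q_rep (d_pi2 Q X A)))"
    using req_pre[OF A ob(3) XA Ir p2r] .
  hence a2: "req ?XA (fst A) (snd A) (p2 (fst X) (fst A)) (q_rep C2)"
    using req_trans[OF A XA P2r] req_trans[OF A XA _ C2r] cmp_idl[OF p2r XA ob(3)] by simp
  have Th: "T = d_pr Q C1 C2" unfolding T_def times_def C1_def C2_def by simp
  show "T \<in> d_hom Q (q_prd D X A) (q_prd D Y A)" unfolding Th using Qpr[OF C1h C2h] by simp
  have Tr: "req ?XA (prd (fst Y) (fst A)) (snd (q_prd D Y A)) (pr (q_rep C1) (q_rep C2)) (q_rep T)"
    unfolding Th using Qpr[OF C1h C2h] by simp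
  have rc: "q_rep C1 \<in> hom ?XA (fst Y)" "q_rep C2 \<in> hom ?XA (fst A)" using C1r C2r unfolding req_def by auto
  have tm: "Defs.times D (fst X) (fst A) ?r (idt (fst A)) = pr (cmp ?r (p1 (fst X) (fst A))) (p2 (fst X) (fst A))"
    unfolding times_def using ob by simp
  have rp1: "cmp ?r (p1 (fst X) (fst A)) \<in> hom ?XA (fst Y)" using rh ob by (blast intro: ty0)
  have "req ?XA (prd (fst Y) (fst A)) (snd (q_prd D Y A)) (pr (cmp ?r (p1 (fst X) (fst A))) (p2 (fst X) (fst A))) (pr (q_rep C1) (q_rep C2))"
    using req_prd[OF Y A XA pr_hom[OF rp1 p2_hom] pr_hom[OF rc]] a1 a2 ob rp1 rc
    by (simp add: p1_pr[of _ ?XA] p2_pr[of _ ?XA])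
  thus "req (prd (fst X) (fst A)) (prd (fst Y) (fst A)) (snd (q_prd D Y A)) (Defs.times D (fst X) (fst A) (q_rep H) (idt (fst A))) (q_rep T)"
    unfolding tm using req_trans[OF teq_prd[OF Y A] XA _ Tr] by simp
qed


lemma req_times_id:
  assumes X: "qobj X" and A: "qobj A" and G: "G \<in> ob" and r: "req G (fst X) (snd X) f g"
  shows "req (prd G (fst A)) (prd (fst X) (fst A)) (snd (q_prd D X A)) (Defs.times D G (fst A) f (idt (fst A))) (Defs.times D G (fst A) g (idt (fst A)))"
proof -
  have ob: "fst X \<in> ob" "fst A \<in> ob" using X A qobj_ob by auto
  have h: "f \<in> hom G (fst X)" "g \<in> hom G (fst X)" using r unfolding req_def by auto
  have GA: "prd G (fst A) \<in> ob" using G ob by simp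
  have t: "Defs.times D G (fst A) f (idt (fst A)) = pr (cmp f (p1 G (fst A))) (p2 G (fst A))"
    "Defs.times D G (fst A) g (idt (fst A)) = pr (cmp g (p1 G (fst A))) (p2 G (fst A))" unfolding times_def using G ob by auto
  have c: "cmp f (p1 G (fst A)) \<in> hom (prd G (fst A)) (fst X)" "cmp g (p1 G (fst A)) \<in> hom (prd G (fst A)) (fst X)"
    using h G ob by (blast intro: ty0)+
  have 1: "req (prd G (fst A)) (fst X) (snd X) (cmp f (p1 G (fst A))) (cmp g (p1 G (fst A)))"
    using req_pre[OF X G GA r p1_hom[OF G ob(2)]] .
  have 2: "req (prd G (fst A)) (fst A) (snd A) (p2 G (fst A)) (p2 G (fst A))" using req_refl[OF A GA p2_hom[OF G ob(2)]] .
  show ?thesis unfolding t using req_prd[OF X A GA pr_hom[OF c(1) p2_hom] pr_hom[OF c(2) p2_hom]] 1 2 G ob c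
    by (simp add: p1_pr[of _ "prd G (fst A)"] p2_pr[of _ "prd G (fst A)"])
qed

end

context omctx begin

lemma h_pres:
  assumes X: "qobj X" and g0: "q_pres D (q_prd D X (N, eq N)) (B, \<sigma>) g0" and h0: "h0 \<in> hom (fst X) W"
    and eqn: "cmp ev (Defs.times D (fst X) N h0 (idt N)) = g0"
  shows "q_pres D X (W, omega) h0"
proof -
  define X0 where "X0 = fst X"
  have X0: "X0 \<in> ob" and rf: "snd X \<in> fib (prd X0 X0)" using X qobj_ob qobj_fib unfolding X0_def by auto
  define G where "G = prd X0 X0"
  have Gob: "G \<in> ob" "prd G N \<in> ob" unfolding G_def using X0 N by auto
  define q1 where "q1 = p1 X0 X0"
  define q2 where "q2 = p2 X0 X0"
  have q: "q1 \<in> hom G X0" "q2 \<in> hom G X0" unfolding q1_def q2_def G_def using X0 by auto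
  have h0': "h0 \<in> hom X0 W" using h0 unfolding X0_def .
  define a where "a = cmp h0 q1"
  define b where "b = cmp h0 q2"
  have ab: "a \<in> hom G W" "b \<in> hom G W" unfolding a_def b_def using q h0' X0 Gob W by (blast intro: ty0)+
  define \<chi> where "\<chi> = rx (pr q1 q2) (snd X)"
  have ch: "\<chi> \<in> fib G" unfolding \<chi>_def using q X0 rf Gob by (blast intro: ty0 rx_fib)
  define pp where "pp = p1 G N"
  define n where "n = p2 G N"
  have ppn: "pp \<in> hom (prd G N) G" "n \<in> hom (prd G N) N" unfolding pp_def n_def using Gob N by auto
  define x1 where "x1 = cmp q1 pp"
  define x2 where "x2 = cmp q2 pp"
  have x: "x1 \<in> hom (prd G N) X0" "x2 \<in> hom (prd G N) X0" unfolding x1_def x2_def using q ppn Gob X0 by (blast intro: ty0)+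
  have xn: "pr x1 n \<in> hom (prd G N) (prd X0 N)" "pr x2 n \<in> hom (prd G N) (prd X0 N)" using x ppn Gob X0 N by (blast intro: ty0)+
  have tmh: "Defs.times D X0 N h0 (idt N) \<in> hom (prd X0 N) (prd W N)" using h0' X0 N W by (blast intro: times_hom ty0)
  have gx: "cmp g0 (pr x1 n) = cmp ev (pr (cmp h0 x1) n)" "cmp g0 (pr x2 n) = cmp ev (pr (cmp h0 x2) n)"
    unfolding eqn[symmetric] X0_def[symmetric]
    using cmp_assoc'[OF xn(1) tmh ev] cmp_assoc'[OF xn(2) tmh ev] times_pr[OF h0' idt_hom[OF N] x(1) ppn(2)]
      times_pr[OF h0' idt_hom[OF N] x(2) ppn(2)] Gob X0 N W B ppn by auto
  have Ea0: "Ev G a = cmp ev (pr (cmp h0 x1) n)" "Ev G b = cmp ev (pr (cmp h0 x2) n)" unfolding Ev_def a_def b_def x1_def x2_def pp_def[symmetric] n_def[symmetric]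
    using cmp_assoc'[OF ppn(1) q(1) h0'] cmp_assoc'[OF ppn(1) q(2) h0'] Gob X0 W by auto
  have Ea: "Ev G a = cmp g0 (pr x1 n)" "Ev G b = cmp g0 (pr x2 n)" using Ea0 gx by auto
  have e1: "rx pp \<chi> = rx (pr x1 x2) (snd X)" unfolding \<chi>_def x1_def x2_def using rx_rx_pr[OF q ppn(1) rf] Gob X0 by simp
  have XN: "qobj (N, eq N)" using teq_eq[OF N] by simp
  have Bs: "qobj (B, \<sigma>)" using sig by simp
  have "le (prd G N) (rx (pr (pr x1 n) (pr x2 n)) (snd (q_prd D X (N, eq N)))) (rx (pr (cmp g0 (pr x1 n)) (cmp g0 (pr x2 n))) \<sigma>)"
    using qpres_term[OF g0 _ _ _ _ Gob(2)] xn X0 N B sig_fib qprd_fib[of X "(N, eq N)"] rf unfolding X0_def by auto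
  moreover have "rx (pr (pr x1 n) (pr x2 n)) (snd (q_prd D X (N, eq N))) = mt (prd G N) (rx (pr x1 x2) (snd X)) (tp (prd G N))"
    using rx_qprd[of X "(N, eq N)" "prd G N" "pr x1 n" "pr x2 n"] X0 N rf Gob xn x ppn eq_refl[OF Gob(2) N ppn(2)] unfolding X0_def
    by (simp add: p1_pr[of _ "prd G N"] p2_pr[of _ "prd G N"])
  moreover have "le (prd G N) (rx (pr x1 x2) (snd X)) (mt (prd G N) (rx (pr x1 x2) (snd X)) (tp (prd G N)))"
    using rx_fib[OF pr_hom[OF x] rf] Gob X0 by (intro le_mt) auto
  moreover have "rx (pr x1 x2) (snd X) \<in> fib (prd G N)" "rx (pr (cmp g0 (pr x1 n)) (cmp g0 (pr x2 n))) \<sigma> \<in> fib (prd G N)"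
    using rx_fib[OF pr_hom[OF x] rf] Gob X0 apply simp
    using Evs_fib[OF Gob(1) ab] Ea by simp
  ultimately have "le (prd G N) (rx pp \<chi>) (rx (pr (Ev G a) (Ev G b)) \<sigma>)" unfolding e1 Ea
    by (metis Gob(2) le_trans mt_fib tp_fib)
  hence "le G \<chi> (rx (pr a b) omega)" using omega_le[OF Gob(1) ab ch] unfolding pp_def by simp
  thus ?thesis unfolding \<chi>_def a_def b_def q1_def q2_def G_def
    using h0' X0 rf W omega_fib unfolding X0_def by (intro qpres_intro) auto
qed


definition "evQ = (q_prd D (W, omega) (N, eq N), (B, \<sigma>), q_cls D (q_prd D (W, omega) (N, eq N)) (B, \<sigma>) ev)"

lemma WO: "qobj (W, omega)" using teq_omega by simp
lemma NE: "qobj (N, eq N)" using teq_eq[OF N] by simp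
lemma BS: "qobj (B, \<sigma>)" using sig by simp
lemma WNo: "qobj (q_prd D (W, omega) (N, eq N))" using teq_prd[OF WO NE] by simp

lemma evQ_hom: "evQ \<in> d_hom Q (q_prd D (W, omega) (N, eq N)) (B, \<sigma>)"
  and evQ_req: "req (prd W N) B \<sigma> ev (q_rep evQ)"
  using Qmk[OF WNo BS ev_qpres] unfolding evQ_def by auto

lemma Qweak:
  assumes we: "weak_eval D W N B ev"
  shows "weak_eval Q (W, omega) (N, eq N) (B, \<sigma>) evQ"
  unfolding weak_eval_def Q_simps(6)
proof (intro conjI ballI)
  show "(W, omega) \<in> d_ob Q" using WO Qob by simp
  show "evQ \<in> d_hom Q (q_prd D (W, omega) (N, eq N)) (B, \<sigma>)" by (rule evQ_hom)
  fix X g assume Xo: "X \<in> d_ob Q" and g: "g \<in> d_hom Q (q_prd D X (N, eq N)) (B, \<sigma>)"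
  have X: "qobj X" using Xo Qob by simp
  have X0: "fst X \<in> ob" using qobj_ob[OF X] .
  let ?A = "(N, eq N)"
  define g0 where "g0 = q_rep g"
  have g0p: "q_pres D (q_prd D X ?A) (B, \<sigma>) g0" and ge: "g = (q_prd D X ?A, (B, \<sigma>), q_cls D (q_prd D X ?A) (B, \<sigma>) g0)"
    using Qhom_rep[OF g] unfolding g0_def by auto
  have g0h: "g0 \<in> hom (prd (fst X) N) B" using qpres_hom[OF g0p] by simp
  obtain h0 where h0: "h0 \<in> hom (fst X) W" and eqn: "cmp ev (Defs.times D (fst X) N h0 (idt N)) = g0"
    using we X0 g0h unfolding weak_eval_def by blast
  have hp: "q_pres D X (W, omega) h0" using h_pres[OF X g0p h0 eqn] .
  define hQ where "hQ = (X, (W, omega), q_cls D X (W, omega) h0)"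
  have hQ: "hQ \<in> d_hom Q X (W, omega)" and hQr: "req (fst X) W omega h0 (q_rep hQ)"
    using Qmk[OF X WO hp] unfolding hQ_def by auto
  define T where "T = Defs.times Q X ?A hQ (d_idt Q ?A)"
  have T: "T \<in> d_hom Q (q_prd D X ?A) (q_prd D (W, omega) ?A)"
    and Tr: "req (prd (fst X) N) (prd W N) (snd (q_prd D (W, omega) ?A)) (Defs.times D (fst X) N (q_rep hQ) (idt N)) (q_rep T)"
    using Qtimes[OF hQ NE] unfolding T_def by auto
  have XN: "prd (fst X) N \<in> ob" using X0 N by simp
  have Tr2: "req (prd (fst X) N) (prd W N) (snd (q_prd D (W, omega) ?A)) (Defs.times D (fst X) N h0 (idt N)) (q_rep T)"
    using req_trans[OF teq_prd[OF WO NE, simplified] XN req_times_id[OF WO NE X0, of h0 "q_rep hQ", simplified, OF hQr] Tr] .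
  have c1: "req (prd (fst X) N) B \<sigma> g0 (cmp ev (q_rep T))"
    using req_post[OF ev_qpres WNo BS XN, simplified, OF Tr2] eqn by simp
  have rT: "q_rep T \<in> hom (prd (fst X) N) (prd W N)" using Tr unfolding req_def by auto
  have c2: "req (prd (fst X) N) B \<sigma> (cmp ev (q_rep T)) (cmp (q_rep evQ) (q_rep T))"
    using req_pre[OF sig _ XN evQ_req rT] W N by simp
  have "q_cls D (q_prd D X ?A) (B, \<sigma>) g0 = q_cls D (q_prd D X ?A) (B, \<sigma>) (cmp (q_rep evQ) (q_rep T))"
    using cls_eq[OF teq_prd[OF X NE, folded fst_qprd] BS] req_trans[OF sig XN c1 c2] by simp
  hence "d_cmp Q evQ T = g" unfolding Qcmp(1)[OF T evQ_hom] ge by simp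
  thus "\<exists>h\<in>d_hom Q X (W, omega). d_cmp Q evQ (Defs.times Q X ?A h (d_idt Q ?A)) = g"
    using hQ unfolding T_def by blast
qed

end

context actx begin

lemma prod_eq_closed:
  assumes G: "G \<in> ob" and A: "A \<in> ob" and B: "B \<in> ob" and al: "\<alpha> \<in> fib (prd A B)"
    and x: "x \<in> hom G (prd A B)" and y: "y \<in> hom G (prd A B)"
  shows "le G (mt G (rx x \<alpha>) (mt G (rx (pr (cmp (p1 A B) x) (cmp (p1 A B) y)) (eq A)) (rx (pr (cmp (p2 A B) x) (cmp (p2 A B) y)) (eq B)))) (rx y \<alpha>)"
proof -
  define a1 where "a1 = cmp (p1 A B) x"
  define a2 where "a2 = cmp (p1 A B) y"
  define b1 where "b1 = cmp (p2 A B) x"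
  define b2 where "b2 = cmp (p2 A B) y"
  have h: "a1 \<in> hom G A" "a2 \<in> hom G A" "b1 \<in> hom G B" "b2 \<in> hom G B"
    unfolding a1_def a2_def b1_def b2_def using x y G A B by (blast intro: ty0)+
  have xe: "x = pr a1 b1" "y = pr a2 b2" unfolding a1_def a2_def b1_def b2_def using pr_uniq x y G A B by auto
  have GA: "prd G A \<in> ob" "prd G B \<in> ob" using G A B by auto
  have u1: "pr (p2 G A) (cmp b1 (p1 G A)) \<in> hom (prd G A) (prd A B)" using h G A B by (blast intro: ty0)
  have u2: "pr (cmp a2 (p1 G B)) (p2 G B) \<in> hom (prd G B) (prd A B)" using h G A B by (blast intro: ty0)
  define \<phi>1 where "\<phi>1 = rx (pr (p2 G A) (cmp b1 (p1 G A))) \<alpha>"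
  define \<phi>2 where "\<phi>2 = rx (pr (cmp a2 (p1 G B)) (p2 G B)) \<alpha>"
  have ph: "\<phi>1 \<in> fib (prd G A)" "\<phi>2 \<in> fib (prd G B)" unfolding \<phi>1_def \<phi>2_def using rx_fib[OF u1 al] rx_fib[OF u2 al] GA A B by auto
  have r1: "rx (pr (idt G) a1) \<phi>1 = rx (pr a1 b1) \<alpha>" "rx (pr (idt G) a2) \<phi>1 = rx (pr a2 b1) \<alpha>"
    unfolding \<phi>1_def using subst_at[OF h(1) p2_hom _ al] subst_at[OF h(2) p2_hom _ al] sp1[OF h(1) h(3)] sp1[OF h(2) h(3)] sp2'[OF h(1)] sp2'[OF h(2)] G A B h
      cmp_hom[OF p1_hom h(3)] by auto
  have r2: "rx (pr (idt G) b1) \<phi>2 = rx (pr a2 b1) \<alpha>" "rx (pr (idt G) b2) \<phi>2 = rx (pr a2 b2) \<alpha>"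
    unfolding \<phi>2_def using subst_at[OF h(3) _ p2_hom al] subst_at[OF h(4) _ p2_hom al] sp1[OF h(3) h(2)] sp1[OF h(4) h(2)] sp2'[OF h(3)] sp2'[OF h(4)] G A B h
      cmp_hom[OF p1_hom h(2)] by auto
  have s1: "le G (mt G (rx (pr a1 b1) \<alpha>) (rx (pr a1 a2) (eq A))) (rx (pr a2 b1) \<alpha>)"
    using eq_subst[OF G A ph(1) h(1) h(2)] r1 by simp
  have s2: "le G (mt G (rx (pr a2 b1) \<alpha>) (rx (pr b1 b2) (eq B))) (rx (pr a2 b2) \<alpha>)"
    using eq_subst[OF G B ph(2) h(3) h(4)] r2 by simp
  have F: "rx (pr a1 b1) \<alpha> \<in> fib G" "rx (pr a2 b1) \<alpha> \<in> fib G" "rx (pr a2 b2) \<alpha> \<in> fib G"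
    "rx (pr a1 a2) (eq A) \<in> fib G" "rx (pr b1 b2) (eq B) \<in> fib G"
    using h G A B al by (blast intro: ty0 rx_fib eq_fib)+
  have "le G (mt G (rx (pr a1 b1) \<alpha>) (mt G (rx (pr a1 a2) (eq A)) (rx (pr b1 b2) (eq B))))
            (mt G (mt G (rx (pr a1 b1) \<alpha>) (rx (pr a1 a2) (eq A))) (rx (pr b1 b2) (eq B)))"
    using F G by (meson le_mt le_trans mt_fib mt_le1 mt_le2)
  moreover have "le G (mt G (mt G (rx (pr a1 b1) \<alpha>) (rx (pr a1 a2) (eq A))) (rx (pr b1 b2) (eq B)))
                      (mt G (rx (pr a2 b1) \<alpha>) (rx (pr b1 b2) (eq B)))"
    using mt_mono[OF s1 le_refl[OF G F(5)]] F G by auto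
  ultimately have fin: "le G (mt G (rx (pr a1 b1) \<alpha>) (mt G (rx (pr a1 a2) (eq A)) (rx (pr b1 b2) (eq B)))) (rx (pr a2 b2) \<alpha>)"
    using s2 F G by (meson le_trans mt_fib)
  show ?thesis using fin by (simp only: xe[symmetric] a1_def[symmetric] a2_def[symmetric] b1_def[symmetric] b2_def[symmetric])
qed

lemma qfib_prd_eq:
  assumes A: "A \<in> ob" and B: "B \<in> ob" and R: "R \<in> fib (prd A B)"
  shows "qfib (q_prd D (A, eq A) (B, eq B)) R"
proof -
  define AB where "AB = prd A B"
  have ob: "AB \<in> ob" "prd AB AB \<in> ob" using A B unfolding AB_def by auto
  have P: "p1 AB AB \<in> hom (prd AB AB) (prd A B)" "p2 AB AB \<in> hom (prd AB AB) (prd A B)" using ob unfolding AB_def by auto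
  have "rx (pr (p1 AB AB) (p2 AB AB)) (snd (q_prd D (A, eq A) (B, eq B))) =
     mt (prd AB AB) (rx (pr (cmp (p1 A B) (p1 AB AB)) (cmp (p1 A B) (p2 AB AB))) (eq A)) (rx (pr (cmp (p2 A B) (p1 AB AB)) (cmp (p2 A B) (p2 AB AB))) (eq B))"
    using rx_qprd[of "(A, eq A)" "(B, eq B)" "prd AB AB" "p1 AB AB" "p2 AB AB"] A B P ob by simp
  thus ?thesis using prod_eq_closed[OF ob(2) A B R P] R A B qprd_fib[of "(A, eq A)" "(B, eq B)"] unfolding AB_def by (intro qfib_intro) auto
qed

lemma qfib_trm: "\<alpha> \<in> fib trm \<Longrightarrow> qfib (trm, tp (prd trm trm)) \<alpha>"
proof -
  assume al: "\<alpha> \<in> fib trm"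
  have e: "p1 trm trm = p2 trm trm" using bang_uniq[of "prd trm trm" "p1 trm trm"] bang_uniq[of "prd trm trm" "p2 trm trm"] by simp
  have f: "rx (p2 trm trm) \<alpha> \<in> fib (prd trm trm)" using al by (blast intro: ty0 rx_fib)
  show ?thesis unfolding qfib_def using al e f by auto
qed

lemma ex_DQ:
  assumes e: "is_ex D (fst X) (fst Y) f \<phi> e" and q: "qfib Y e" and r: "\<And>\<psi>. qfib Y \<psi> \<Longrightarrow> rx (q_rep F) \<psi> = rx f \<psi>"
  shows "is_ex Q X Y F \<phi> e"
  using e q r qfib_fib unfolding is_ex_def Q_simps by auto

lemma all_DQ:
  assumes e: "is_all D (fst X) (fst Y) f \<phi> e" and q: "qfib Y e" and r: "\<And>\<psi>. qfib Y \<psi> \<Longrightarrow> rx (q_rep F) \<psi> = rx f \<psi>"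
  shows "is_all Q X Y F \<phi> e"
  using e q r qfib_fib unfolding is_all_def Q_simps by auto

lemma ex_QD:
  assumes e: "is_ex Q X Y F \<phi> e" and q: "\<And>\<psi>. \<psi> \<in> fib (fst Y) \<Longrightarrow> qfib Y \<psi>" and r: "\<And>\<psi>. qfib Y \<psi> \<Longrightarrow> rx (q_rep F) \<psi> = rx f \<psi>"
  shows "is_ex D (fst X) (fst Y) f \<phi> e"
  using e q r qfib_fib unfolding is_ex_def Q_simps by auto

lemma all_QD:
  assumes e: "is_all Q X Y F \<phi> e" and q: "\<And>\<psi>. \<psi> \<in> fib (fst Y) \<Longrightarrow> qfib Y \<psi>" and r: "\<And>\<psi>. qfib Y \<psi> \<Longrightarrow> rx (q_rep F) \<psi> = rx f \<psi>"
  shows "is_all D (fst X) (fst Y) f \<phi> e"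
  using e q r qfib_fib unfolding is_all_def Q_simps by auto


lemma all_closed:
  assumes X: "qobj X" and A: "A \<in> ob" and ph: "qfib (q_prd D X (A, eq A)) \<phi>"
    and e: "is_all D (prd (fst X) A) (fst X) (p1 (fst X) A) \<phi> e"
  shows "qfib X e"
proof -
  define W where "W = fst X"
  have W: "W \<in> ob" and wf: "snd X \<in> fib (prd W W)" using X qobj_ob qobj_fib unfolding W_def by auto
  have XA: "qobj (q_prd D X (A, eq A))" using teq_prd[OF X, of "(A, eq A)"] teq_eq[OF A] by simp
  have phf: "\<phi> \<in> fib (prd W A)" using qfib_fib[OF ph] unfolding W_def by simp
  have e': "is_all D (prd W A) W (p1 W A) \<phi> e" using e unfolding W_def .
  have ef: "e \<in> fib W" using all_fib[OF e'] .
  define WW where "WW = prd W W"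
  have ob: "WW \<in> ob" "prd WW A \<in> ob" "prd W A \<in> ob" using W A unfolding WW_def by auto
  define P1 where "P1 = p1 W W"
  define P2 where "P2 = p2 W W"
  have P: "P1 \<in> hom WW W" "P2 \<in> hom WW W" unfolding P1_def P2_def WW_def using W by auto
  define q where "q = p1 WW A"
  define n where "n = p2 WW A"
  have qn: "q \<in> hom (prd WW A) WW" "n \<in> hom (prd WW A) A" unfolding q_def n_def using ob A by auto
  define w where "w = cmp P1 q"
  define w' where "w' = cmp P2 q"
  have ww: "w \<in> hom (prd WW A) W" "w' \<in> hom (prd WW A) W" unfolding w_def w'_def using P qn ob W by (blast intro: ty0)+
  have bc1: "is_all D (prd WW A) WW (p1 WW A) (rx (Defs.times D WW A P2 (idt A)) \<phi>) (rx P2 e)"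
    using bc_all[OF e' P(2) W A ob(1) phf] .
  have tm: "Defs.times D WW A P2 (idt A) = pr w' n" unfolding times_def w'_def q_def n_def using ob A by simp
  define \<chi> where "\<chi> = mt WW (rx P1 e) (rx (pr P1 P2) (snd X))"
  have F0: "rx P1 e \<in> fib WW" "rx (pr P1 P2) (snd X) \<in> fib WW" using P ef wf ob W by (blast intro: ty0 rx_fib)+
  have chf: "\<chi> \<in> fib WW" unfolding \<chi>_def using F0 ob by simp
  have rq: "rx q \<chi> = mt (prd WW A) (rx w e) (rx (pr w w') (snd X))" unfolding \<chi>_def
    using rx_mt[OF qn(1) F0 ob(2) ob(1)] rx_rx[OF qn(1) P(1) ef] rx_rx_pr[OF P qn(1) wf] ob W unfolding w_def w'_def by simp
  have wn: "pr w n \<in> hom (prd WW A) (prd W A)" "pr w' n \<in> hom (prd WW A) (prd W A)" using ww qn ob W A by (blast intro: ty0)+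
  have c1: "le (prd W A) (rx (p1 W A) e) \<phi>" using e' unfolding is_all_def by auto
  have "le (prd WW A) (rx (pr w n) (rx (p1 W A) e)) (rx (pr w n) \<phi>)"
    using rx_mono[OF c1 wn(1)] rx_fib[OF p1_hom ef] phf ob W A by auto
  hence c2: "le (prd WW A) (rx w e) (rx (pr w n) \<phi>)" using rx_rx[OF wn(1) p1_hom ef] ob W A ww qn by (simp add: p1_pr[of _ "prd WW A"])
  have "rx (pr (pr w n) (pr w' n)) (snd (q_prd D X (A, eq A))) = mt (prd WW A) (rx (pr w w') (snd X)) (tp (prd WW A))"
    using rx_qprd[of X "(A, eq A)" "prd WW A" "pr w n" "pr w' n"] W A wf wn ww qn eq_refl[OF ob(2) A qn(2)] ob(2) unfolding W_def
    by (simp add: p1_pr[of _ "prd WW A"] p2_pr[of _ "prd WW A"])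
  hence c3: "le (prd WW A) (mt (prd WW A) (rx (pr w n) \<phi>) (mt (prd WW A) (rx (pr w w') (snd X)) (tp (prd WW A)))) (rx (pr w' n) \<phi>)"
    using qfib_term[OF ph XA ob(2), simplified, OF wn[unfolded W_def]] by simp
  have F: "rx w e \<in> fib (prd WW A)" "rx (pr w w') (snd X) \<in> fib (prd WW A)" "rx (pr w n) \<phi> \<in> fib (prd WW A)" "rx (pr w' n) \<phi> \<in> fib (prd WW A)"
    using ww wn ef wf phf ob W A by (blast intro: ty0 rx_fib)+
  have "le (prd WW A) (mt (prd WW A) (rx w e) (rx (pr w w') (snd X))) (mt (prd WW A) (rx (pr w n) \<phi>) (mt (prd WW A) (rx (pr w w') (snd X)) (tp (prd WW A))))"
    using c2 F ob by (intro mt_mono le_mt) auto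
  hence "le (prd WW A) (rx q \<chi>) (rx (Defs.times D WW A P2 (idt A)) \<phi>)" unfolding rq tm using c3 F ob
    by (meson le_trans mt_fib tp_fib)
  hence "le WW \<chi> (rx P2 e)" using all_le[OF bc1 p1_hom _ ob(1) _ chf] ob A W rx_fib[OF pr_hom[OF ww(2) qn(2)] phf] unfolding q_def tm by simp
  thus ?thesis unfolding \<chi>_def P1_def P2_def WW_def using ef W wf unfolding W_def by (intro qfib_intro) auto
qed

end

context actx begin

lemma QtoP:
  assumes A: "A \<in> ob" and acq: "AC_on Q (A, eq A)"
  shows "AC_on D A"
  unfolding AC_on_def
proof (intro ballI allI impI)
  fix B W ev R e1 e2 e3 e4
  assume B: "B \<in> ob" and we: "weak_eval D W A B ev" and R: "R \<in> fib (prd A B)"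
    and h1: "is_ex D (prd A B) A (p1 A B) R e1" and h2: "is_all D A trm (bang D A) e1 e2"
    and h3: "is_all D (prd W A) W (p1 W A) (rx (pr (p2 W A) ev) R) e3"
    and h4: "is_ex D W trm (bang D W) e3 e4"
  have W: "W \<in> ob" and ev: "ev \<in> hom (prd W A) B" using we unfolding weak_eval_def by auto
  interpret O: omctx D eq W A B ev "eq B"
    by unfold_locales (use W A B ev teq_eq[OF B] in auto)
  let ?A = "(A, eq A)" and ?B = "(B, eq B)" and ?W = "(W, O.omega)"
  have Ao: "qobj ?A" using teq_eq[OF A] by simp
  have Bo: "qobj ?B" using teq_eq[OF B] by simp
  have Wo: "qobj ?W" using O.WO .
  have ABo: "qobj (q_prd D ?A ?B)" using teq_prd[OF Ao Bo] by simp
  have WAo: "qobj (q_prd D ?W ?A)" using teq_prd[OF Wo Ao] by simp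
  have tro: "qobj (trm, tp (prd trm trm))" using teq_trm .
  have Rq: "qfib (q_prd D ?A ?B) R" using qfib_prd_eq[OF A B R] .
  have P1: "d_pi1 Q ?A ?B \<in> d_hom Q (q_prd D ?A ?B) ?A" and P1r: "req (prd A B) A (eq A) (p1 A B) (q_rep (d_pi1 Q ?A ?B))"
    using Qp1[OF Ao Bo] by auto
  have q1: "is_ex Q (d_prd Q ?A ?B) ?A (d_pi1 Q ?A ?B) R e1"
    unfolding Q_simps(6)
  proof (rule ex_DQ)
    show "is_ex D (fst (q_prd D ?A ?B)) (fst ?A) (p1 A B) R e1" using h1 by simp
    show "qfib ?A e1" using qfib_eq[OF A ex_fib[OF h1]] .
    fix \<psi> assume "qfib ?A \<psi>"
    thus "rx (q_rep (d_pi1 Q ?A ?B)) \<psi> = rx (p1 A B) \<psi>"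
      using req_rx[of ?A \<psi> "prd A B" "q_rep (d_pi1 Q ?A ?B)" "p1 A B"] req_sym[OF teq_eq[OF A] _ P1r] Ao A B by simp
  qed
  have q2: "is_all Q ?A (d_trm Q) (bang Q ?A) e1 e2"
    unfolding Q_simps(5)
  proof (rule all_DQ)
    show "is_all D (fst ?A) (fst (trm, tp (prd trm trm))) (bang D A) e1 e2" using h2 by simp
    show "qfib (trm, tp (prd trm trm)) e2" using qfib_trm[OF all_fib[OF h2]] .
    fix \<psi> show "rx (q_rep (bang Q ?A)) \<psi> = rx (bang D A) \<psi>" using Qbang(2)[OF Ao] by simp
  qed
  have P1W: "d_pi1 Q ?W ?A \<in> d_hom Q (q_prd D ?W ?A) ?W" and P1Wr: "req (prd W A) W O.omega (p1 W A) (q_rep (d_pi1 Q ?W ?A))"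
    using Qp1[OF Wo Ao] by auto
  have P2W: "d_pi2 Q ?W ?A \<in> d_hom Q (q_prd D ?W ?A) ?A" and P2Wr: "req (prd W A) A (eq A) (p2 W A) (q_rep (d_pi2 Q ?W ?A))"
    using Qp2[OF Wo Ao] by auto
  define PR where "PR = d_pr Q (d_pi2 Q ?W ?A) O.evQ"
  have PRh: "PR \<in> d_hom Q (q_prd D ?W ?A) (q_prd D ?A ?B)" and PRr: "req (prd W A) (prd A B) (snd (q_prd D ?A ?B)) (pr (q_rep (d_pi2 Q ?W ?A)) (q_rep O.evQ)) (q_rep PR)"
    using Qpr[OF P2W O.evQ_hom] unfolding PR_def by auto
  have WA: "prd W A \<in> ob" using W A by simp
  have rp2: "q_rep (d_pi2 Q ?W ?A) \<in> hom (prd W A) A" and rev: "q_rep O.evQ \<in> hom (prd W A) B"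
    using P2Wr O.evQ_req unfolding req_def by auto
  have "req (prd W A) (prd A B) (snd (q_prd D ?A ?B)) (pr (p2 W A) ev) (pr (q_rep (d_pi2 Q ?W ?A)) (q_rep O.evQ))"
    using req_prd[OF Ao Bo WA, simplified, OF pr_hom[OF p2_hom ev WA A B] pr_hom[OF rp2 rev WA A B]] P2Wr O.evQ_req W A B ev rp2 rev
    by (simp add: p1_pr[of _ "prd W A"] p2_pr[of _ "prd W A"])
  hence PRr2: "req (prd W A) (prd A B) (snd (q_prd D ?A ?B)) (pr (p2 W A) ev) (q_rep PR)"
    using req_trans[OF _ WA _ PRr] teq_prd[OF Ao Bo] by simp
  have phe: "rx (q_rep PR) R = rx (pr (p2 W A) ev) R"
    using req_rx[OF Rq ABo WA] PRr2 by simp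
  have q3: "is_all Q (d_prd Q ?W ?A) ?W (d_pi1 Q ?W ?A) (d_rx Q (d_pr Q (d_pi2 Q ?W ?A) O.evQ) R) e3"
    unfolding Q_simps(6) Q_simps(14) PR_def[symmetric] phe
  proof (rule all_DQ)
    show "is_all D (fst (q_prd D ?W ?A)) (fst ?W) (p1 W A) (rx (pr (p2 W A) ev) R) e3" using h3 by simp
    have "qfib (q_prd D ?W ?A) (rx (pr (p2 W A) ev) R)"
      using qfib_rx[OF qpres_pr[OF WAo Ao Bo qpres_p2[OF Wo Ao] O.ev_qpres] WAo ABo Rq] by simp
    thus "qfib ?W e3" using all_closed[OF Wo A] h3 by simp
    fix \<psi> assume "qfib ?W \<psi>"
    thus "rx (q_rep (d_pi1 Q ?W ?A)) \<psi> = rx (p1 W A) \<psi>"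
      using req_rx[of ?W \<psi> "prd W A" "q_rep (d_pi1 Q ?W ?A)" "p1 W A"] req_sym[OF O.teq_omega _ P1Wr] Wo WA by simp
  qed
  have q4: "is_ex Q ?W (d_trm Q) (bang Q ?W) e3 e4"
    unfolding Q_simps(5)
  proof (rule ex_DQ)
    show "is_ex D (fst ?W) (fst (trm, tp (prd trm trm))) (bang D W) e3 e4" using h4 by simp
    show "qfib (trm, tp (prd trm trm)) e4" using qfib_trm[OF ex_fib[OF h4]] .
    fix \<psi> show "rx (q_rep (bang Q ?W)) \<psi> = rx (bang D W) \<psi>" using Qbang(2)[OF Wo] by simp
  qed
  have Bq: "?B \<in> d_ob Q" using Bo Qob by simp
  have Rq': "R \<in> d_fib Q (d_prd Q ?A ?B)" using Rq unfolding Q_simps by simp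
  have "d_le Q (d_trm Q) e2 e4"
    using acq Bq O.Qweak[OF we] Rq' q1 q2 q3 q4 unfolding AC_on_def by blast
  thus "le trm e2 e4" unfolding Q_simps by simp
qed


lemma PtoQ:
  assumes A: "A \<in> ob" and acp: "AC_on D A"
  shows "AC_on Q (A, eq A)"
  unfolding AC_on_def
proof (intro ballI allI impI)
  fix B' W' ev' R e1 e2 e3 e4
  assume B'o: "B' \<in> d_ob Q" and we': "weak_eval Q W' (A, eq A) B' ev'" and Rq': "R \<in> d_fib Q (d_prd Q (A, eq A) B')"
    and h1: "is_ex Q (d_prd Q (A, eq A) B') (A, eq A) (d_pi1 Q (A, eq A) B') R e1"
    and h2: "is_all Q (A, eq A) (d_trm Q) (bang Q (A, eq A)) e1 e2"
    and h3: "is_all Q (d_prd Q W' (A, eq A)) W' (d_pi1 Q W' (A, eq A)) (d_rx Q (d_pr Q (d_pi2 Q W' (A, eq A)) ev') R) e3"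
    and h4: "is_ex Q W' (d_trm Q) (bang Q W') e3 e4"
  let ?A = "(A, eq A)"
  obtain B \<sigma> where B'e: "B' = (B, \<sigma>)" by (cases B')
  obtain W \<omega> where W'e: "W' = (W, \<omega>)" by (cases W')
  have Bo: "qobj B'" using B'o Qob by simp
  have B: "B \<in> ob" and sig: "teq B \<sigma>" using Bo qobj_ob unfolding B'e by auto
  have W'o: "qobj W'" and ev'h: "ev' \<in> d_hom Q (q_prd D W' ?A) B'"
    and weq: "\<And>X g. X \<in> d_ob Q \<Longrightarrow> g \<in> d_hom Q (q_prd D X ?A) B' \<Longrightarrow>
       \<exists>h\<in>d_hom Q X W'. d_cmp Q ev' (Defs.times Q X ?A h (d_idt Q ?A)) = g"
    using we' Qob unfolding weak_eval_def Q_simps(6) by auto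
  have W: "W \<in> ob" using qobj_ob[OF W'o] W'e by simp
  have Ao: "qobj ?A" using teq_eq[OF A] by simp
  have Rq: "qfib (q_prd D ?A B') R" using Rq' unfolding Q_simps by simp
  have Rf: "R \<in> fib (prd A B)" using qfib_fib[OF Rq] B'e by simp
  obtain W0 ev0 where we0: "weak_eval D W0 A B ev0" using wcc A B unfolding weakly_cc_def by blast
  have W0: "W0 \<in> ob" and ev0: "ev0 \<in> hom (prd W0 A) B" using we0 unfolding weak_eval_def by auto
  interpret O: omctx D eq W0 A B ev0 \<sigma>
    by unfold_locales (use W0 A B ev0 sig in auto)
  let ?X0 = "(W0, O.omega)"
  have X0o: "qobj ?X0" using O.WO .
  have B'e2: "B' = (B, \<sigma>)" by (rule B'e)
  have P1: "req (prd A B) A (eq A) (p1 A B) (q_rep (d_pi1 Q ?A B'))" using Qp1(2)[OF Ao Bo] B'e by simp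
  have "is_ex D (fst (q_prd D ?A B')) (fst ?A) (p1 A B) R e1"
    apply (rule ex_QD[OF h1[unfolded Q_simps(6)]])
    using qfib_eq[OF A] apply simp
    subgoal for \<psi> using req_rx[of ?A \<psi> "prd A B" "q_rep (d_pi1 Q ?A B')" "p1 A B"] req_sym[OF teq_eq[OF A] _ P1] Ao A B by simp
    done
  hence d1: "is_ex D (prd A B) A (p1 A B) R e1" using B'e by simp
  have d2: "is_all D A trm (bang D A) e1 e2"
    using all_QD[OF h2[unfolded Q_simps(5)], of "bang D A"] qfib_trm Qbang(2)[OF Ao] by simp
  have phf0: "rx (pr (p2 W0 A) ev0) R \<in> fib (prd W0 A)" using rx_fib[OF pr_hom[OF p2_hom ev0] Rf] W0 A B by auto
  obtain e3' where d3: "is_all D (prd W0 A) W0 (p1 W0 A) (rx (pr (p2 W0 A) ev0) R) e3'" using quant_all[OF W0 A phf0] by blast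
  obtain e4' where d4: "is_ex D W0 trm (bang D W0) e3' e4'" using ex_bang[OF W0 all_fib[OF d3]] by blast
  have ac: "le trm e2 e4'" using acp B we0 Rf d1 d2 d3 d4 unfolding AC_on_def by blast
  have gQ: "O.evQ \<in> d_hom Q (q_prd D ?X0 ?A) B'" using O.evQ_hom B'e by simp
  obtain hQ where hQ: "hQ \<in> d_hom Q ?X0 W'" and heq: "d_cmp Q ev' (Defs.times Q ?X0 ?A hQ (d_idt Q ?A)) = O.evQ"
    using weq[OF _ gQ] X0o Qob by blast
  define h where "h = q_rep hQ"
  have hp: "q_pres D ?X0 W' h" and hh: "h \<in> hom W0 W" using Qhom_rep(3)[OF hQ] qpres_hom W'e unfolding h_def by auto
  define TQ where "TQ = Defs.times Q ?X0 ?A hQ (d_idt Q ?A)"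
  have TQ: "TQ \<in> d_hom Q (q_prd D ?X0 ?A) (q_prd D W' ?A)"
    and TQr: "req (prd W0 A) (prd W A) (snd (q_prd D W' ?A)) (Defs.times D W0 A h (idt A)) (q_rep TQ)"
    using Qtimes[OF hQ Ao] W'e unfolding TQ_def h_def by auto
  have rev': "q_pres D (q_prd D W' ?A) B' (q_rep ev')" using Qhom_rep(3)[OF ev'h] .
  have WAo: "qobj (q_prd D W' ?A)" using teq_prd[OF W'o Ao] W'e by simp
  have X0Ao: "qobj (q_prd D ?X0 ?A)" using teq_prd[OF X0o Ao] by simp
  have W0A: "prd W0 A \<in> ob" "prd W A \<in> ob" using W0 W A by auto
  have "q_cls D (q_prd D ?X0 ?A) B' (cmp (q_rep ev') (q_rep TQ)) = q_cls D (q_prd D ?X0 ?A) B' ev0"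
    using heq Qcmp(1)[OF TQ ev'h] B'e unfolding TQ_def[symmetric] O.evQ_def by simp
  hence "ev0 \<in> q_cls D (q_prd D ?X0 ?A) B' (cmp (q_rep ev') (q_rep TQ))" using cls_self[OF O.ev_qpres] B'e by simp
  moreover have "cmp (q_rep ev') (q_rep TQ) \<in> hom (prd W0 A) B"
    using Qrep_hom[OF TQ] Qrep_hom[OF ev'h] W'e B'e W0A W A B by (auto intro: cmp_hom)
  ultimately have c1: "req (prd W0 A) B \<sigma> (cmp (q_rep ev') (q_rep TQ)) ev0"
    using cls_req[OF X0Ao Bo] B'e by simp
  have c2: "req (prd W0 A) B \<sigma> (cmp (q_rep ev') (Defs.times D W0 A h (idt A))) (cmp (q_rep ev') (q_rep TQ))"
    using req_post[OF rev' WAo Bo, simplified, OF W0A(1)] TQr B'e W'e by simp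
  have t: "Defs.times D W0 A h (idt A) \<in> hom (prd W0 A) (prd W A)" using hh W0 W A by (blast intro: times_hom ty0)
  have evc: "req (prd W0 A) B \<sigma> ev0 (cmp (q_rep ev') (Defs.times D W0 A h (idt A)))"
    using req_sym[OF sig W0A(1) req_trans[OF sig W0A(1) c2 c1]] .
  define PR where "PR = d_pr Q (d_pi2 Q W' ?A) ev'"
  have P2W: "d_pi2 Q W' ?A \<in> d_hom Q (q_prd D W' ?A) ?A" and P2Wr: "req (prd W A) A (eq A) (p2 W A) (q_rep (d_pi2 Q W' ?A))"
    using Qp2[OF W'o Ao] W'e by auto
  have PRh: "PR \<in> d_hom Q (q_prd D W' ?A) (q_prd D ?A B')" and PRr: "req (prd W A) (prd A B) (snd (q_prd D ?A B')) (pr (q_rep (d_pi2 Q W' ?A)) (q_rep ev')) (q_rep PR)"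
    using Qpr[OF P2W ev'h] W'e B'e unfolding PR_def by auto
  define r where "r = q_rep PR"
  have rp: "q_pres D (q_prd D W' ?A) (q_prd D ?A B') r" using Qhom_rep(3)[OF PRh] unfolding r_def .
  have rh: "r \<in> hom (prd W A) (prd A B)" using qpres_hom[OF rp] W'e B'e by simp
  define \<phi>3 where "\<phi>3 = rx r R"
  have ABo: "qobj (q_prd D ?A B')" using teq_prd[OF Ao Bo] by simp
  have ph3q: "qfib (q_prd D W' ?A) \<phi>3" unfolding \<phi>3_def using qfib_rx[OF rp WAo ABo Rq] .
  have ph3f: "\<phi>3 \<in> fib (prd W A)" using qfib_fib[OF ph3q] W'e by simp
  obtain A3 where a3: "is_all D (prd W A) W (p1 W A) \<phi>3 A3" using quant_all[OF W A ph3f] by blast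
  have a3q: "qfib W' A3" using all_closed[OF W'o A ph3q] a3 W'e by simp
  have P1W: "req (prd W A) W \<omega> (p1 W A) (q_rep (d_pi1 Q W' ?A))" using Qp1(2)[OF W'o Ao] W'e by simp
  have "rx (q_rep (d_pi1 Q W' ?A)) A3 = rx (p1 W A) A3"
    using req_rx[OF a3q W'o, of "prd W A"] req_sym[OF _ W0A(2) P1W] W'o W'e W0A(2) by simp
  hence "le (prd W A) (rx (q_rep (d_pi1 Q W' ?A)) A3) \<phi>3" using a3 unfolding is_all_def by simp
  hence A3e3: "le W A3 e3" using h3 a3q W'e unfolding is_all_def Q_simps PR_def r_def \<phi>3_def by simp
  have bca: "is_all D (prd W0 A) W0 (p1 W0 A) (rx (Defs.times D W0 A h (idt A)) \<phi>3) (rx h A3)"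
    using bc_all[OF a3 hh W A W0 ph3f] .
  have P2: "req (prd W0 A) A (eq A) (p2 W0 A) (cmp (q_rep (d_pi2 Q W' ?A)) (Defs.times D W0 A h (idt A)))"
  proof -
    have "req (prd W0 A) A (eq A) (cmp (p2 W A) (Defs.times D W0 A h (idt A))) (cmp (q_rep (d_pi2 Q W' ?A)) (Defs.times D W0 A h (idt A)))"
      using req_pre[OF teq_eq[OF A] W0A(2) W0A(1) P2Wr t] .
    moreover have "cmp (p2 W A) (Defs.times D W0 A h (idt A)) = p2 W0 A"
      unfolding times_def using hh W0 W A by (simp add: p2_pr[of _ "prd W0 A"] cmp_hom[of _ _ W0])
    ultimately show ?thesis by simp
  qed
  have rP: "q_rep (d_pi2 Q W' ?A) \<in> hom (prd W A) A" "q_rep ev' \<in> hom (prd W A) B" using P2Wr Qrep_hom[OF ev'h] W'e B'e unfolding req_def by auto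
  have ABt: "teq (prd A B) (snd (q_prd D ?A (B, \<sigma>)))" using teq_prd[OF Ao Bo] B'e by simp
  have pre: "req (prd W0 A) (prd A B) (snd (q_prd D ?A B')) (cmp (pr (q_rep (d_pi2 Q W' ?A)) (q_rep ev')) (Defs.times D W0 A h (idt A))) (cmp r (Defs.times D W0 A h (idt A)))"
    using req_pre[OF ABt W0A(2) W0A(1) PRr[unfolded B'e] t] B'e unfolding r_def by simp
  have pe: "cmp (pr (q_rep (d_pi2 Q W' ?A)) (q_rep ev')) (Defs.times D W0 A h (idt A)) =
      pr (cmp (q_rep (d_pi2 Q W' ?A)) (Defs.times D W0 A h (idt A))) (cmp (q_rep ev') (Defs.times D W0 A h (idt A)))"
    using pr_cmp[OF rP t] W0A A B by simp
  have ch: "cmp (q_rep (d_pi2 Q W' ?A)) (Defs.times D W0 A h (idt A)) \<in> hom (prd W0 A) A"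
     "cmp (q_rep ev') (Defs.times D W0 A h (idt A)) \<in> hom (prd W0 A) B" using rP t W0A A B by (blast intro: ty0)+
  have Bo': "qobj (B, \<sigma>)" using sig by simp
  have "req (prd W0 A) (prd A B) (snd (q_prd D ?A (B, \<sigma>))) (pr (p2 W0 A) ev0) (cmp (pr (q_rep (d_pi2 Q W' ?A)) (q_rep ev')) (Defs.times D W0 A h (idt A)))"
    unfolding pe using req_prd[OF Ao Bo' W0A(1), simplified, OF pr_hom[OF p2_hom ev0 W0A(1) A B] pr_hom[OF ch W0A(1) A B]] P2 evc W0 A B ev0 ch B'e
    by (simp add: p1_pr[of _ "prd W0 A"] p2_pr[of _ "prd W0 A"])
  hence rq: "req (prd W0 A) (prd A B) (snd (q_prd D ?A B')) (pr (p2 W0 A) ev0) (cmp r (Defs.times D W0 A h (idt A)))"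
    using req_trans[OF ABt W0A(1) _ pre[unfolded B'e]] B'e by simp
  have Req: "rx (pr (p2 W0 A) ev0) R = rx (cmp r (Defs.times D W0 A h (idt A))) R"
    using req_rx[OF Rq ABo W0A(1)] rq B'e by simp
  have "rx (Defs.times D W0 A h (idt A)) \<phi>3 = rx (pr (p2 W0 A) ev0) R"
    unfolding \<phi>3_def Req using rx_rx[OF t rh Rf] W0A A B by simp
  moreover have "le (prd W0 A) (rx (p1 W0 A) e3') (rx (pr (p2 W0 A) ev0) R)" using d3 unfolding is_all_def by simp
  ultimately have e3h: "le W0 e3' (rx h A3)"
    using all_le[OF bca p1_hom W0A(1) W0 _ all_fib[OF d3]] W0 A rx_fib[OF t ph3f] W0A by simp
  have A3f: "A3 \<in> fib W" and e3f: "e3 \<in> fib W" using all_fib[OF a3] h3 qfib_fib W'e unfolding is_all_def Q_simps by auto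
  have e4f: "e4 \<in> fib trm" using h4 qfib_fib unfolding is_ex_def Q_simps by auto
  have Wb: "le W e3 (rx (bang D W) e4)" using h4 Qbang(2)[OF W'o] W'e unfolding is_ex_def Q_simps by simp
  have "le W0 (rx h A3) (rx h e3)" using rx_mono[OF A3e3 hh A3f e3f W0 W] .
  moreover have "le W0 (rx h e3) (rx h (rx (bang D W) e4))" using rx_mono[OF Wb hh e3f rx_fib[OF bang_hom[OF W] e4f] W0 W] W by simp
  moreover have "rx h (rx (bang D W) e4) = rx (bang D W0) e4"
    using rx_rx[OF hh bang_hom[OF W] e4f] bang_uniq[OF W0 cmp_hom[OF hh bang_hom[OF W] W0 W trm_ob]] hh W W0 by simp
  ultimately have "le W0 e3' (rx (bang D W0) e4)"
    using e3h le_trans W0 all_fib[OF d3] rx_fib[OF hh A3f] rx_fib[OF hh e3f] rx_fib[OF bang_hom[OF W0] e4f]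
    by (metis rx_fib[OF hh rx_fib[OF bang_hom[OF W] e4f]] W trm_ob)
  hence "le trm e4' e4" using ex_le[OF d4 bang_hom[OF W0] W0 trm_ob all_fib[OF d3] e4f] by simp
  thus "d_le Q (d_trm Q) e2 e4" unfolding Q_simps using ac le_trans all_fib[OF d2] ex_fib[OF d4] e4f by auto
qed

end

theorem corollary3p13:
  fixes D :: "('o, 'm, 'p) doctrine"
    and eq :: "'o \<Rightarrow> 'p" and N :: 'o and z s :: 'm
  assumes "arithmetic D eq N z s"
    and "comprehensive_diagonals D eq"
  shows "AC_on D N \<longleftrightarrow> AC_on (quotient_completion D) (N, eq N)"
proof -
  have wh: "weak_hyperdoctrine D eq" and pn: "pnno D N z s" using assms(1) unfolding arithmetic_def by auto
  interpret actx D eq using wh assms(2) by unfold_locales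
  have N: "N \<in> d_ob D" using pn unfolding pnno_def by auto
  show ?thesis using PtoQ[OF N] QtoP[OF N] by blast
qed

end
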